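(* Let $T=\mathbb C/\Lambda$ with $\Lambda=\mathbb Z+\mathbb Z\tau$, let $N\ge3$, let $\alpha\in T$ be a point of exact order $N$, and define $P_j$ as in the context. Let $\mathbb T=T\setminus\{0,\alpha,\dots,(N-1)\alpha\}$. Then $\mathcal O_{\mathbb T}=\mathbb C[P_1,P_2,\dots,P_{N-1}]$. Furthermore, for every integer $j\not\equiv0\pmod N$, $\mathbb C[\wp_{\Lambda_{(\alpha)}}]=\mathbb C[P_{-j}P_j]$; that is, $P_{-j}P_j$ generates the algebra of even meromorphic functions on the torus $\mathbb C/\Lambda_{(\alpha)}$ that are holomorphic away from $0$.
   Context: $\mathcal O_{\mathbb T}$ is the $\mathbb C$-algebra of meromorphic functions on $T$ that are holomorphic on $\mathbb T$. For a lattice $L$, $\wp_L(z)=z^{-2}+\sum_{0\ne\omega\in L}((z-\omega)^{-2}-\omega^{-2})$; $\wp=\wp_\Lambda$. If $\alpha'\in\mathbb C$ is a lift of $\alpha$, then $\Lambda_{(\alpha)}=\mathbb Z+\mathbb Z\alpha'+\mathbb Z\tau$. Put $\omega_N=e^{2\pi i/N}$ and $\tilde\wp=\wp-\wp(\alpha)$. Let $r$ be the translation $z\mapsto z+\alpha$, acting on functions by $(r^kf)(z)=f(z-k\alpha)$, and for $j\in\mathbb Z$ let $P_j=\sum_{k=0}^{N-1}\dfrac{r^k\wp'}{\omega_N^{kj}\,r^k\tilde\wp}$ (indices of $P_j$ taken modulo $N$). *)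

theory Defs
  imports "HOL-Complex_Analysis.Complex_Analysis"
begin

definition lattice :: "complex \<Rightarrow> complex set" where
  "lattice \<tau> = {of_int m + of_int n * \<tau> | m n. True}"

definition lattice_alpha :: "complex \<Rightarrow> complex \<Rightarrow> complex set" where
  "lattice_alpha \<tau> \<alpha> = {of_int m + of_int n * \<alpha> + of_int k * \<tau> | m n k. True}"

text \<open>Weierstrass wp function of a lattice L (the infinite sum is absolutely convergent
  off L; values on L are irrelevant, being poles).\<close>
definition wp :: "complex set \<Rightarrow> complex \<Rightarrow> complex" where
  "wp L z = 1 / z ^ 2 + (\<Sum>\<^sub>\<infinity>\<omega>\<in>L - {0}. 1 / (z - \<omega>) ^ 2 - 1 / \<omega> ^ 2)"

definition root_unity :: "nat \<Rightarrow> complex" where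
  "root_unity N = exp (2 * of_real pi * \<i> / of_nat N)"

definition P :: "complex \<Rightarrow> complex \<Rightarrow> nat \<Rightarrow> int \<Rightarrow> complex \<Rightarrow> complex" where
  "P \<tau> \<alpha> N j z = (\<Sum>k<N. deriv (wp (lattice \<tau>)) (z - of_nat k * \<alpha>) /
      (root_unity N powi (int k * j) *
       (wp (lattice \<tau>) (z - of_nat k * \<alpha>) - wp (lattice \<tau>) \<alpha>)))"

text \<open>Exact order N of the point alpha (given by a lift) in C / Lambda.\<close>
definition exact_order :: "complex \<Rightarrow> complex \<Rightarrow> nat \<Rightarrow> bool" where
  "exact_order \<tau> \<alpha> N \<longleftrightarrow> 0 < N \<and> of_nat N * \<alpha> \<in> lattice \<tau> \<and>
     (\<forall>k::nat. 0 < k \<and> k < N \<longrightarrow> of_nat k * \<alpha> \<notin> lattice \<tau>)"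

text \<open>Preimage in C of the punctured torus T minus {0, alpha, ..., (N-1) alpha}.\<close>
definition punctured :: "complex \<Rightarrow> complex \<Rightarrow> nat \<Rightarrow> complex set" where
  "punctured \<tau> \<alpha> N = UNIV - {z. \<exists>k<N. z - of_nat k * \<alpha> \<in> lattice \<tau>}"

text \<open>O_T: meromorphic functions on the torus (Lambda-periodic meromorphic functions on C)
  that are holomorphic on the punctured torus.  Functions are regarded on the open set U.\<close>
definition O_T :: "complex \<Rightarrow> complex \<Rightarrow> nat \<Rightarrow> (complex \<Rightarrow> complex) set" where
  "O_T \<tau> \<alpha> N = {f. f meromorphic_on UNIV \<and> f holomorphic_on punctured \<tau> \<alpha> N \<and>
      (\<forall>z \<in> punctured \<tau> \<alpha> N. \<forall>\<omega> \<in> lattice \<tau>. f (z + \<omega>) = f z)}"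

inductive_set gen_alg :: "(complex \<Rightarrow> complex) set \<Rightarrow> (complex \<Rightarrow> complex) set"
  for G where
  const: "(\<lambda>_. c) \<in> gen_alg G"
| gen: "g \<in> G \<Longrightarrow> g \<in> gen_alg G"
| add: "f \<in> gen_alg G \<Longrightarrow> g \<in> gen_alg G \<Longrightarrow> (\<lambda>z. f z + g z) \<in> gen_alg G"
| mult: "f \<in> gen_alg G \<Longrightarrow> g \<in> gen_alg G \<Longrightarrow> (\<lambda>z. f z * g z) \<in> gen_alg G"

definition eq_on_sets :: "complex set \<Rightarrow> (complex \<Rightarrow> complex) set \<Rightarrow> (complex \<Rightarrow> complex) set \<Rightarrow> bool" where
  "eq_on_sets U A B \<longleftrightarrow> (\<forall>f\<in>A. \<exists>g\<in>B. \<forall>z\<in>U. f z = g z) \<and> (\<forall>g\<in>B. \<exists>f\<in>A. \<forall>z\<in>U. f z = g z)"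

end

theory Submission
  imports Defs
begin

locale ell =
  fixes \<tau> :: complex
  assumes Imt: "Im \<tau> > 0"
begin

abbreviation "Lat \<equiv> lattice \<tau>"

lemma lat_iff: "z \<in> Lat \<longleftrightarrow> (\<exists>m n::int. z = of_int m + of_int n * \<tau>)"
  by (auto simp: lattice_def)

lemma lat_0 [simp]: "0 \<in> Lat"
  unfolding lat_iff by (rule exI[of _ 0], rule exI[of _ 0]) simp

lemma lat_1 [simp]: "1 \<in> Lat"
  unfolding lat_iff by (rule exI[of _ 1], rule exI[of _ 0]) simp

lemma lat_tau [simp]: "\<tau> \<in> Lat"
  unfolding lat_iff by (rule exI[of _ 0], rule exI[of _ 1]) simp

lemma lat_add: "a \<in> Lat \<Longrightarrow> b \<in> Lat \<Longrightarrow> a + b \<in> Lat"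
  unfolding lat_iff
proof (elim exE)
  fix m n m' n' :: int
  assume "a = of_int m + of_int n * \<tau>" "b = of_int m' + of_int n' * \<tau>"
  then show "\<exists>m n::int. a + b = of_int m + of_int n * \<tau>"
    by (intro exI[of _ "m+m'"] exI[of _ "n+n'"]) (simp add: algebra_simps)
qed

lemma lat_uminus: "a \<in> Lat \<Longrightarrow> - a \<in> Lat"
  unfolding lat_iff
proof (elim exE)
  fix m n :: int
  assume "a = of_int m + of_int n * \<tau>"
  then show "\<exists>m n::int. - a = of_int m + of_int n * \<tau>"
    by (intro exI[of _ "-m"] exI[of _ "-n"]) (simp add: algebra_simps)
qed

lemma lat_uminus_iff [simp]: "- a \<in> Lat \<longleftrightarrow> a \<in> Lat"
  using lat_uminus[of a] lat_uminus[of "-a"] by auto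

lemma lat_diff: "a \<in> Lat \<Longrightarrow> b \<in> Lat \<Longrightarrow> a - b \<in> Lat"
  using lat_add[of a "-b"] lat_uminus[of b] by simp

lemma lat_add_iff1: "b \<in> Lat \<Longrightarrow> a + b \<in> Lat \<longleftrightarrow> a \<in> Lat"
  using lat_add[of a b] lat_diff[of "a+b" b] by auto

lemma lat_diff_iff1: "b \<in> Lat \<Longrightarrow> a - b \<in> Lat \<longleftrightarrow> a \<in> Lat"
  using lat_diff[of a b] lat_add[of "a-b" b] by auto

lemma lat_of_int_mult: "a \<in> Lat \<Longrightarrow> of_int k * a \<in> Lat"
  unfolding lat_iff
proof (elim exE)
  fix m n :: int
  assume "a = of_int m + of_int n * \<tau>"
  then show "\<exists>m n::int. of_int k * a = of_int m + of_int n * \<tau>"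
    by (intro exI[of _ "k*m"] exI[of _ "k*n"]) (simp add: algebra_simps)
qed

lemma lat_of_nat_mult: "a \<in> Lat \<Longrightarrow> of_nat k * a \<in> Lat"
  using lat_of_int_mult[of a "int k"] by simp

lemma lat_of_int [simp]: "of_int k \<in> Lat"
  using lat_of_int_mult[OF lat_1, of k] by simp

lemma lat_of_nat [simp]: "of_nat k \<in> Lat"
  using lat_of_int[of "int k"] by simp

lemma countable_lat: "countable Lat"
proof -
  have "Lat = (\<lambda>(m,n). of_int m + of_int n * \<tau>) ` (UNIV :: (int \<times> int) set)"
    by (auto simp: lattice_def)
  then show ?thesis by simp
qed

definition cy :: "complex \<Rightarrow> real" where "cy z = Im z / Im \<tau>"
definition cx :: "complex \<Rightarrow> real" where "cx z = Re z - cy z * Re \<tau>"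

lemma coords: "z = of_real (cx z) + of_real (cy z) * \<tau>"
  using Imt by (simp add: complex_eq_iff cx_def cy_def)

lemma coords_unique:
  assumes "of_real x + of_real y * \<tau> = of_real x' + of_real y' * \<tau>"
  shows "x = x'" "y = y'"
proof -
  from arg_cong[OF assms, of Im] have "y * Im \<tau> = y' * Im \<tau>" by simp
  then show "y = y'" using Imt by simp
  with arg_cong[OF assms, of Re] show "x = x'" by simp
qed

lemma cy_lin: "cy (of_real x + of_real y * \<tau>) = y"
  using Imt by (simp add: cy_def)
lemma cx_lin: "cx (of_real x + of_real y * \<tau>) = x"
  using Imt by (simp add: cx_def cy_def)

lemma cx_add: "cx (a + b) = cx a + cx b" and cy_add: "cy (a + b) = cy a + cy b"
  by (simp_all add: cx_def cy_def algebra_simps add_divide_distrib)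

lemma cx_diff: "cx (a - b) = cx a - cx b" and cy_diff: "cy (a - b) = cy a - cy b"
  by (simp_all add: cx_def cy_def algebra_simps diff_divide_distrib)

lemma lat_coords: "z \<in> Lat \<longleftrightarrow> cx z \<in> \<int> \<and> cy z \<in> \<int>"
proof
  assume "z \<in> Lat"
  then obtain m n :: int where z: "z = of_int m + of_int n * \<tau>" by (auto simp: lat_iff)
  have "z = of_real (of_int m) + of_real (of_int n) * \<tau>" using z by simp
  then show "cx z \<in> \<int> \<and> cy z \<in> \<int>" using cx_lin cy_lin by (metis Ints_of_int)
next
  assume "cx z \<in> \<int> \<and> cy z \<in> \<int>"
  then obtain m n where "cx z = of_int m" "cy z = of_int n" by (auto elim!: Ints_cases)
  then have "z = of_int m + of_int n * \<tau>" using coords[of z] by simp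
  then show "z \<in> Lat" by (auto simp: lat_iff)
qed

definition K0 :: real where "K0 = 1 + (1 + \<bar>Re \<tau>\<bar>) / Im \<tau>"

lemma K0_pos: "K0 > 0" using Imt by (simp add: K0_def add_pos_nonneg)

lemma coords_bound: "\<bar>cx z\<bar> + \<bar>cy z\<bar> \<le> K0 * norm z"
proof -
  have cyb: "\<bar>cy z\<bar> \<le> norm z / Im \<tau>"
    using Imt abs_Im_le_cmod[of z] by (simp add: cy_def abs_div divide_right_mono)
  have "\<bar>cx z\<bar> \<le> \<bar>Re z\<bar> + \<bar>cy z\<bar> * \<bar>Re \<tau>\<bar>"
    unfolding cx_def by (metis abs_mult abs_triangle_ineq4)
  also have "\<dots> \<le> norm z + norm z / Im \<tau> * \<bar>Re \<tau>\<bar>"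
    by (intro add_mono mult_right_mono cyb abs_Re_le_cmod) auto
  finally have "\<bar>cx z\<bar> + \<bar>cy z\<bar> \<le> norm z + norm z / Im \<tau> * \<bar>Re \<tau>\<bar> + norm z / Im \<tau>"
    using cyb by linarith
  also have "\<dots> = K0 * norm z" using Imt by (simp add: K0_def field_simps)
  finally show ?thesis .
qed

lemma lat_sep: "\<omega> \<in> Lat \<Longrightarrow> \<omega> \<noteq> 0 \<Longrightarrow> 1 \<le> K0 * norm \<omega>"
proof -
  assume w: "\<omega> \<in> Lat" "\<omega> \<noteq> 0"
  then obtain m n where mn: "cx \<omega> = of_int m" "cy \<omega> = of_int n"
    by (auto simp: lat_coords elim!: Ints_cases)
  have "m \<noteq> 0 \<or> n \<noteq> 0" using coords[of \<omega>] mn w by auto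
  then have "1 \<le> \<bar>cx \<omega>\<bar> + \<bar>cy \<omega>\<bar>" using mn by auto
  then show ?thesis using coords_bound[of \<omega>] by linarith
qed

lemma lat_ball_finite: "finite {\<omega>\<in>Lat. norm \<omega> \<le> R}"
proof -
  define M where "M = ceiling (K0 * R)"
  have "{\<omega>\<in>Lat. norm \<omega> \<le> R} \<subseteq> (\<lambda>(m,n). of_int m + of_int n * \<tau>) ` ({-M..M} \<times> {-M..M})"
  proof
    fix \<omega> assume "\<omega> \<in> {\<omega>\<in>Lat. norm \<omega> \<le> R}"
    then have w: "\<omega> \<in> Lat" "norm \<omega> \<le> R" by auto
    then obtain m n where mn: "cx \<omega> = of_int m" "cy \<omega> = of_int n"
      by (auto simp: lat_coords elim!: Ints_cases)
    have "\<bar>cx \<omega>\<bar> + \<bar>cy \<omega>\<bar> \<le> K0 * R"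
      using coords_bound[of \<omega>] w(2) K0_pos by (meson mult_left_mono less_imp_le order_trans)
    then have "\<bar>m\<bar> \<le> M" "\<bar>n\<bar> \<le> M" using mn unfolding M_def by linarith+
    moreover have "\<omega> = of_int m + of_int n * \<tau>" using coords[of \<omega>] mn by simp
    ultimately show "\<omega> \<in> (\<lambda>(m,n). of_int m + of_int n * \<tau>) ` ({-M..M} \<times> {-M..M})"
      by (intro image_eqI[of _ _ "(m,n)"]) auto
  qed
  then show ?thesis by (rule finite_subset) auto
qed

end

lemma summable_int_powr: "(\<lambda>m::int. (1 + \<bar>real_of_int m\<bar>) powr (-3/2)) summable_on UNIV"
proof -
  let ?a = "\<lambda>m::int. (1 + \<bar>real_of_int m\<bar>) powr (-3/2)"
  have s0: "summable (\<lambda>n. real n powr (-3/2))"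
    by (subst summable_real_powr_iff) simp
  have s1: "summable (\<lambda>n. real (Suc n) powr (-3/2))"
    using s0 by (subst summable_Suc_iff)
  have s2: "summable (\<lambda>n. real (Suc (Suc n)) powr (-3/2))"
    using s1 by (subst summable_Suc_iff[where f = "\<lambda>n. real (Suc n) powr (-3/2)"])
  have A: "?a summable_on range int"
  proof -
    have "(?a \<circ> int) summable_on UNIV"
      using s1 by (subst summable_on_UNIV_nonneg_real_iff) (auto simp: o_def add.commute)
    then show ?thesis by (subst summable_on_reindex) auto
  qed
  have B: "?a summable_on range (\<lambda>n. - int n - 1)"
  proof -
    have "(?a \<circ> (\<lambda>n. - int n - 1)) summable_on UNIV"
    proof (subst summable_on_UNIV_nonneg_real_iff)
      show "summable (?a \<circ> (\<lambda>n. - int n - 1))"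
        using s2 by (simp add: o_def)
    qed auto
    then show ?thesis by (subst summable_on_reindex) (auto simp: inj_on_def)
  qed
  have U: "(UNIV :: int set) = range int \<union> range (\<lambda>n. - int n - 1)"
  proof -
    { fix m :: int
      have "m \<in> range int \<union> range (\<lambda>n. - int n - 1)"
      proof (cases "m \<ge> 0")
        case True then show ?thesis by (auto intro: image_eqI[of _ _ "nat m"])
      next
        case False then show ?thesis by (auto intro!: image_eqI[of _ _ "nat (- m - 1)"])
      qed }
    then show ?thesis by auto
  qed
  have "?a summable_on (range int \<union> range (\<lambda>n. - int n - 1))"
    by (rule summable_on_Un_disjoint[OF A B]) auto
  then show ?thesis using U by simp
qed

context ell
begin

lemma lat_inj: "inj (\<lambda>(m::int, n::int). of_int m + of_int n * \<tau>)"
proof (rule injI, clarify)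
  fix m n m' n' :: int
  assume "of_int m + of_int n * \<tau> = of_int m' + of_int n' * \<tau>"
  then have "of_real (of_int m) + of_real (of_int n) * \<tau> = of_real (of_int m') + of_real (of_int n') * \<tau>"
    by simp
  from coords_unique[OF this] show "m = m' \<and> n = n'" by simp
qed

lemma lat_image: "Lat = (\<lambda>(m::int, n::int). of_int m + of_int n * \<tau>) ` UNIV"
  by (auto simp: lattice_def)

lemma cube_summable: "(\<lambda>\<omega>. 1 / norm \<omega> ^ 3) summable_on (Lat - {0})"
proof -
  define h where "h = (\<lambda>(m::int, n::int). of_int m + of_int n * \<tau>)"
  define a where "a = (\<lambda>m::int. (1 + \<bar>real_of_int m\<bar>) powr (-3/2))"
  have a_sum: "a summable_on UNIV" unfolding a_def by (rule summable_int_powr)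
  have prod: "(\<lambda>(m,n). a m * a n) summable_on (UNIV \<times> UNIV)"
  proof (rule summable_on_SigmaI[where g = "\<lambda>m. a m * infsum a UNIV"])
    fix m :: int
    show "((\<lambda>n. case (m, n) of (m, n) \<Rightarrow> a m * a n) has_sum a m * infsum a UNIV) UNIV"
      using has_sum_cmult_right[OF has_sum_infsum[OF a_sum], of "a m"] by (simp)
  next
    show "(\<lambda>m. a m * infsum a UNIV) summable_on UNIV"
      by (rule summable_on_cmult_left[OF a_sum])
  next
    fix m n :: int show "0 \<le> (case (m, n) of (m, n) \<Rightarrow> a m * a n)" by (simp add: a_def)
  qed
  have img: "Lat - {0} = h ` (UNIV - {(0,0)})"
  proof -
    have "h (0,0) = 0" by (simp add: h_def)
    moreover have "Lat = h ` UNIV" by (simp add: h_def lat_image)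
    ultimately show ?thesis using lat_inj unfolding h_def[symmetric]
      by (metis image_set_diff image_empty image_insert)
  qed
  have bound: "1 / norm (h p) ^ 3 \<le> 27 * K0^3 * (case p of (m,n) \<Rightarrow> a m * a n)"
    if "p \<in> UNIV - {(0,0)}" for p
  proof -
    obtain m n where p: "p = (m,n)" by (cases p)
    have mn: "m \<noteq> 0 \<or> n \<noteq> 0" using that p by (auto)
    define A where "A = 1 + \<bar>real_of_int m\<bar>"
    define B where "B = 1 + \<bar>real_of_int n\<bar>"
    have A1: "A \<ge> 1" and B1: "B \<ge> 1" by (auto simp: A_def B_def)
    have hc: "cx (h p) = m" "cy (h p) = n"
      using cx_lin[of m n] cy_lin[of m n] by (simp_all add: h_def p)
    have s1: "1 \<le> \<bar>real_of_int m\<bar> + \<bar>real_of_int n\<bar>" using mn by (auto)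
    have "(A + B) / 3 \<le> \<bar>real_of_int m\<bar> + \<bar>real_of_int n\<bar>" using s1 by (simp add: A_def B_def)
    also have "\<dots> \<le> K0 * norm (h p)" using coords_bound[of "h p"] hc by (simp)
    finally have nb: "(A + B) / (3 * K0) \<le> norm (h p)" using K0_pos by (simp add: field_simps)
    have pos: "0 < (A + B) / (3 * K0)" using A1 B1 K0_pos by (simp)
    have ABp: "(A * B) powr (3/2) \<le> (A + B) ^ 3"
    proof -
      have ab: "A * B \<le> (A + B)^2" using A1 B1 by (simp add: power2_eq_square algebra_simps)
      have e: "(A + B)^2 = (A + B) powr 2" using A1 B1 by (simp add: powr_numeral)
      have "(A * B) powr (3/2) \<le> ((A + B) powr 2) powr (3/2)"
        using ab A1 B1 unfolding e by (intro powr_mono2) auto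
      also have "\<dots> = (A + B) powr (2 * (3/2))" by (rule powr_powr)
      also have "\<dots> = (A + B) ^ 3" using A1 B1 by (simp add: powr_numeral)
      finally show ?thesis .
    qed
    have step1: "1 / norm (h p) ^ 3 \<le> 1 / ((A + B) / (3 * K0)) ^ 3"
      using nb pos by (intro divide_left_mono power_mono mult_pos_pos zero_less_power) auto
    have step2: "1 / ((A + B) / (3 * K0)) ^ 3 = 27 * K0^3 / (A + B)^3" by (simp add: power_divide)
    have step3: "27 * K0^3 / (A + B)^3 \<le> 27 * K0^3 / (A * B) powr (3/2)"
      using A1 B1 K0_pos ABp by (intro divide_left_mono) auto
    have step4: "27 * K0^3 / (A * B) powr (3/2) = 27 * K0^3 * (a m * a n)"
    proof -
      have am: "a m = inverse (A powr (3/2))" by (simp add: a_def A_def powr_minus)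
      have an: "a n = inverse (B powr (3/2))" by (simp add: a_def B_def powr_minus)
      have pm: "(A * B) powr (3/2) = A powr (3/2) * B powr (3/2)"
        using A1 B1 by (simp add: powr_mult)
      show ?thesis unfolding am an pm by (simp only: divide_inverse inverse_mult_distrib)
    qed
    have "1 / norm (h p) ^ 3 \<le> 27 * K0^3 * (a m * a n)"
      using step1 step2 step3 step4 by (linarith)
    then show ?thesis by (simp add: p)
  qed
  have "(\<lambda>p. 1 / norm (h p) ^ 3) summable_on (UNIV - {(0,0)})"
  proof (rule summable_on_comparison_test[OF _ bound])
    show "(\<lambda>p. 27 * K0 ^ 3 * (case p of (m, n) \<Rightarrow> a m * a n)) summable_on (UNIV - {(0,0)})"
      using summable_on_cmult_right[OF prod, of "27 * K0^3"]
      by (rule summable_on_subset) auto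
  qed auto
  then have "((\<lambda>\<omega>. 1 / norm \<omega> ^ 3) \<circ> h) summable_on (UNIV - {(0,0)})"
    by (simp add: o_def)
  then show ?thesis unfolding img
    by (subst summable_on_reindex) (use lat_inj in \<open>auto simp: h_def inj_on_def\<close>)
qed

end

lemma T_bound:
  fixes a b \<omega> :: complex
  assumes a: "norm a \<le> R" and b: "norm b \<le> R" and w: "2*R \<le> norm \<omega>" and R: "R > 0"
  shows "norm (1/(a-\<omega>)^2 - 1/(b-\<omega>)^2) \<le> 96 * R / norm \<omega> ^ 3"
proof -
  have da: "norm \<omega> / 2 \<le> norm (a - \<omega>)"
    using a w norm_triangle_ineq2[of \<omega> a] by (simp add: norm_minus_commute)
  have db: "norm \<omega> / 2 \<le> norm (b - \<omega>)"
    using b w norm_triangle_ineq2[of \<omega> b] by (simp add: norm_minus_commute)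
  have wpos: "norm \<omega> > 0" using w R by linarith
  have an: "a - \<omega> \<noteq> 0" using da wpos by auto
  have bn: "b - \<omega> \<noteq> 0" using db wpos by auto
  have eq0: "1/(a-\<omega>)^2 - 1/(b-\<omega>)^2 = ((b-\<omega>)^2 - (a-\<omega>)^2) / ((a-\<omega>)^2 * (b-\<omega>)^2)"
    using an bn by (simp add: divide_simps)
  have eq1: "(b-\<omega>)^2 - (a-\<omega>)^2 = (b - a) * (b + a - 2*\<omega>)"
    by (simp add: power2_eq_square algebra_simps)
  have eq: "1/(a-\<omega>)^2 - 1/(b-\<omega>)^2 = ((b - a) * (b + a - 2*\<omega>)) / ((a-\<omega>)^2 * (b-\<omega>)^2)"
    using eq0 unfolding eq1 .
  have n1: "norm (b - a) \<le> 2 * R" using a b norm_triangle_ineq4[of b a] by linarith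
  have n2: "norm (b + a - 2*\<omega>) \<le> 3 * norm \<omega>"
  proof -
    have "norm (b + a - 2*\<omega>) \<le> norm (b + a) + norm (2*\<omega>)" by (rule norm_triangle_ineq4)
    moreover have "norm (b + a) \<le> norm b + norm a" by (rule norm_triangle_ineq)
    ultimately have "norm (b + a - 2*\<omega>) \<le> norm b + norm a + norm (2*\<omega>)" by linarith
    then show ?thesis using a b w by (simp add: norm_mult)
  qed
  have den: "(norm \<omega> / 2)^2 * (norm \<omega> / 2)^2 \<le> norm (a-\<omega>)^2 * norm (b-\<omega>)^2"
    using da db wpos by (intro mult_mono power_mono) auto
  have "norm (1/(a-\<omega>)^2 - 1/(b-\<omega>)^2) = norm (b - a) * norm (b + a - 2*\<omega>) / (norm (a-\<omega>)^2 * norm (b-\<omega>)^2)"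
    unfolding eq by (simp add: norm_mult norm_divide norm_power)
  also have "\<dots> \<le> (2 * R) * (3 * norm \<omega>) / ((norm \<omega> / 2)^2 * (norm \<omega> / 2)^2)"
    using n1 n2 den wpos R da db by (intro frac_le mult_mono) auto
  also have "\<dots> = 96 * R / norm \<omega> ^ 3" using wpos by (simp add: field_simps power2_eq_square power3_eq_cube)
  finally show ?thesis .
qed

lemma cube_bound:
  fixes z \<omega> :: complex
  assumes a: "norm z \<le> R" and w: "2*R \<le> norm \<omega>" and R: "R > 0"
  shows "norm (1/(z-\<omega>)^3) \<le> 8 / norm \<omega> ^ 3"
proof -
  have da: "norm \<omega> / 2 \<le> norm (z - \<omega>)"
    using a w norm_triangle_ineq2[of \<omega> z] by (simp add: norm_minus_commute)
  have wpos: "norm \<omega> > 0" using w R by linarith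
  have "norm (1/(z-\<omega>)^3) = 1 / norm (z-\<omega>)^3" by (simp add: norm_divide norm_power)
  also have "\<dots> \<le> 1 / (norm \<omega> / 2)^3"
    using da wpos by (intro divide_left_mono power_mono mult_pos_pos zero_less_power) auto
  also have "\<dots> = 8 / norm \<omega> ^ 3" by (simp add: power_divide)
  finally show ?thesis .
qed

lemma inv_sq_simp: fixes a :: complex assumes "a \<noteq> 0"
  shows "-(2*a * inverse ((a^2)^Suc (Suc 0))) = -2/a^3"
  using assms by (simp add: field_simps power2_eq_square power3_eq_cube)

lemma deriv_inv_sq:
  fixes w \<omega> c :: complex
  assumes "w - \<omega> \<noteq> 0"
  shows "((\<lambda>z. 1/(z-\<omega>)^2 - c) has_field_derivative -2/(w-\<omega>)^3) (at w)"
proof -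
  have d1: "((\<lambda>z. (z-\<omega>)^2) has_field_derivative 2*(w-\<omega>)) (at w)"
    by (auto intro!: derivative_eq_intros)
  have d2: "((\<lambda>z. inverse ((z-\<omega>)^2)) has_field_derivative -(2*(w-\<omega>) * inverse (((w-\<omega>)^2)^Suc (Suc 0)))) (at w)"
    using DERIV_inverse_fun[OF d1] assms by simp
  have e: "-(2*(w-\<omega>) * inverse (((w-\<omega>)^2)^Suc (Suc 0))) = -2/(w-\<omega>)^3"
    by (rule inv_sq_simp[OF assms])
  have "((\<lambda>z. inverse ((z-\<omega>)^2) - c) has_field_derivative -2/(w-\<omega>)^3 - 0) (at w)"
    by (rule DERIV_diff[OF d2[unfolded e] DERIV_const])
  then show ?thesis by (simp add: inverse_eq_divide)
qed

context ell
begin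

lemma lat_not_limpt: "\<not> z islimpt Lat"
proof
  assume "z islimpt Lat"
  then have "infinite (Lat \<inter> cball z 1)" by (auto simp: islimpt_eq_infinite_cball)
  moreover have "Lat \<inter> cball z 1 \<subseteq> {\<omega>\<in>Lat. norm \<omega> \<le> norm z + 1}"
    using norm_triangle_ineq2[of _ z] by (auto simp: dist_norm norm_minus_commute)
       (smt (verit, best) norm_triangle_ineq2 norm_minus_commute)
  ultimately show False using lat_ball_finite finite_subset by blast
qed

lemma lat_subset_closed: "S \<subseteq> Lat \<Longrightarrow> closed S"
  unfolding closed_limpt using lat_not_limpt islimpt_subset by blast

lemma lat_summable_bound:
  fixes f :: "complex \<Rightarrow> 'a::banach"
  assumes R: "R > 0" and b: "\<And>\<omega>. \<omega> \<in> Lat \<Longrightarrow> R \<le> norm \<omega> \<Longrightarrow> norm (f \<omega>) \<le> C / norm \<omega> ^ 3"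
  shows "f summable_on Lat"
proof -
  have fin: "finite (Lat \<inter> {\<omega>. norm \<omega> < R})"
    by (rule finite_subset[OF _ lat_ball_finite[of R]]) auto
  have "(\<lambda>\<omega>. norm (f \<omega>)) summable_on (Lat \<inter> {\<omega>. R \<le> norm \<omega>})"
  proof (rule Infinite_Sum.abs_summable_on_comparison_test')
    show "(\<lambda>\<omega>. C * (1 / norm \<omega> ^ 3)) summable_on (Lat \<inter> {\<omega>. R \<le> norm \<omega>})"
      using R by (intro summable_on_subset[OF summable_on_cmult_right[OF cube_summable, of C]]) auto
  qed (use b in auto)
  then have s2: "f summable_on (Lat \<inter> {\<omega>. R \<le> norm \<omega>})" by (rule Infinite_Sum.abs_summable_summable)
  have "f summable_on ((Lat \<inter> {\<omega>. norm \<omega> < R}) \<union> (Lat \<inter> {\<omega>. R \<le> norm \<omega>}))"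
    by (rule summable_on_Un_disjoint[OF summable_on_finite[OF fin] s2]) auto
  moreover have "(Lat \<inter> {\<omega>. norm \<omega> < R}) \<union> (Lat \<inter> {\<omega>. R \<le> norm \<omega>}) = Lat" by auto
  ultimately show ?thesis by simp
qed

lemma T_summable: "(\<lambda>\<omega>. 1/(a-\<omega>)^2 - 1/(b-\<omega>)^2) summable_on Lat"
proof -
  define R where "R = norm a + norm b + 1"
  have R: "R > 0" "norm a \<le> R" "norm b \<le> R" unfolding R_def using norm_ge_zero[of a] norm_ge_zero[of b] by linarith+
  show ?thesis
    by (rule lat_summable_bound[of "2*R" _ "96*R"]) (use R T_bound in auto)
qed

lemma wpT_summable: "(\<lambda>\<omega>. 1/(z-\<omega>)^2 - 1/\<omega>^2) summable_on Lat"
  using T_summable[of z 0] by simp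

lemma cube_summable': "(\<lambda>\<omega>. 1/(z-\<omega>)^3) summable_on Lat"
proof -
  define R where "R = norm z + 1"
  have R: "R > 0" "norm z \<le> R" unfolding R_def using norm_ge_zero[of z] by linarith+
  show ?thesis
    by (rule lat_summable_bound[of "2*R" _ "8"]) (use R cube_bound in auto)
qed

lemma cube2_summable: "(\<lambda>\<omega>. -2/(z-\<omega>)^3) summable_on S" if "S \<subseteq> Lat"
proof -
  have "(\<lambda>\<omega>. -2 * (1/(z-\<omega>)^3)) summable_on Lat"
    by (rule summable_on_cmult_right[OF cube_summable'])
  then show ?thesis using that by (simp add: summable_on_subset)
qed

lemma F_deriv:
  assumes S: "S \<subseteq> Lat" and z0: "z0 \<notin> S"
  shows "((\<lambda>z. \<Sum>\<^sub>\<infinity>\<omega>\<in>S. 1/(z-\<omega>)^2 - 1/\<omega>^2) has_field_derivative (\<Sum>\<^sub>\<infinity>\<omega>\<in>S. -2/(z0-\<omega>)^3)) (at z0)"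
proof -
  have "open (- S)" using lat_subset_closed[OF S] by auto
  then obtain e where e: "e > 0" "ball z0 e \<subseteq> - S" using z0 by (meson ComplI open_contains_ball)
  define r where "r = e / 2"
  have r: "r > 0" using e by (simp add: r_def)
  have far: "r \<le> norm (z - \<omega>)" if "z \<in> cball z0 r" "\<omega> \<in> S" for z \<omega>
  proof -
    have "\<omega> \<notin> ball z0 e" using e that(2) by auto
    then have "e \<le> norm (\<omega> - z0)" by (simp add: dist_norm norm_minus_commute)
    moreover have "norm (z - z0) \<le> r" using that(1) by (simp add: dist_norm norm_minus_commute)
    ultimately show ?thesis using norm_triangle_ineq2[of "\<omega> - z0" "z - z0"] unfolding r_def
      by (simp add: norm_minus_commute)
  qed
  define R where "R = norm z0 + r + 1"
  have R: "R > 0" using r norm_ge_zero[of z0] unfolding R_def by linarith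
  have zR: "norm z \<le> R" if "z \<in> cball z0 r" for z
    using that norm_triangle_ineq2[of z z0] by (simp add: R_def dist_norm norm_minus_commute)
  define f :: "complex \<Rightarrow> complex \<Rightarrow> complex" where "f = (\<lambda>\<omega> z. 1/(z-\<omega>)^2 - 1/\<omega>^2)"
  define M :: "complex \<Rightarrow> real" where "M = (\<lambda>\<omega>. if 2*R \<le> norm \<omega> then 96*R/norm \<omega>^3 else 1/r^2 + 1/norm \<omega>^2)"
  have Mb: "norm (f \<omega> z) \<le> M \<omega>" if "\<omega> \<in> S" "z \<in> cball z0 r" for \<omega> z
  proof (cases "2*R \<le> norm \<omega>")
    case True
    have "norm (1/(z-\<omega>)^2 - 1/(0-\<omega>)^2) \<le> 96 * R / norm \<omega> ^ 3"
      by (rule T_bound) (use True zR[OF that(2)] R in auto)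
    then show ?thesis using True by (simp add: f_def M_def)
  next
    case False
    have "norm (f \<omega> z) \<le> norm (1/(z-\<omega>)^2) + norm (1/\<omega>^2)"
      unfolding f_def by (rule norm_triangle_ineq4)
    moreover have "norm (1/(z-\<omega>)^2) = 1 / norm (z-\<omega>)^2" by (simp add: norm_divide norm_power)
    moreover have "1 / norm (z-\<omega>)^2 \<le> 1/r^2"
      using far[OF that(2,1)] r by (intro divide_left_mono power_mono mult_pos_pos zero_less_power) auto
    ultimately show ?thesis using False by (simp add: M_def norm_divide norm_power)
  qed
  have Ms: "M summable_on S"
  proof -
    have "M summable_on Lat"
    proof (rule lat_summable_bound[of "2*R" _ "96*R"])
      fix \<omega> assume "\<omega> \<in> Lat" "2*R \<le> norm \<omega>"
      then show "norm (M \<omega>) \<le> 96*R / norm \<omega>^3" using R by (simp add: M_def)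
    qed (use R in auto)
    then show ?thesis using S by (rule summable_on_subset)
  qed
  have ulim: "uniform_limit (cball z0 r) (\<lambda>X z. \<Sum>\<omega>\<in>X. f \<omega> z) (\<lambda>z. \<Sum>\<^sub>\<infinity>\<omega>\<in>S. f \<omega> z) (finite_subsets_at_top S)"
    by (rule Weierstrass_m_test_general[OF Mb Ms])
  have ev: "eventually (\<lambda>X. continuous_on (cball z0 r) (\<lambda>z. \<Sum>\<omega>\<in>X. f \<omega> z) \<and>
        (\<forall>w \<in> ball z0 r. ((\<lambda>z. \<Sum>\<omega>\<in>X. f \<omega> z) has_field_derivative (\<Sum>\<omega>\<in>X. -2/(w-\<omega>)^3)) (at w)))
        (finite_subsets_at_top S)"
  proof (rule eventually_finite_subsets_at_top_weakI, intro conjI ballI)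
    fix X assume X: "finite X" "X \<subseteq> S"
    have nz: "z - \<omega> \<noteq> 0" if "z \<in> cball z0 r" "\<omega> \<in> X" for z \<omega>
      using far[OF that(1)] X that r by force
    show "continuous_on (cball z0 r) (\<lambda>z. \<Sum>\<omega>\<in>X. f \<omega> z)"
      unfolding f_def using nz by (intro continuous_intros) auto
    fix w assume w: "w \<in> ball z0 r"
    then have w': "w \<in> cball z0 r" by auto
    show "((\<lambda>z. \<Sum>\<omega>\<in>X. f \<omega> z) has_field_derivative (\<Sum>\<omega>\<in>X. -2/(w-\<omega>)^3)) (at w)"
      unfolding f_def
    proof (rule DERIV_sum)
      fix \<omega> assume "\<omega> \<in> X"
      then have n: "w - \<omega> \<noteq> 0" using nz[OF w'] by auto
      show "((\<lambda>z. 1/(z-\<omega>)^2 - 1/\<omega>^2) has_field_derivative -2/(w-\<omega>)^3) (at w)"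
        by (rule deriv_inv_sq[OF n])
    qed
  qed
  obtain g' where g': "\<And>w. w \<in> ball z0 r \<Longrightarrow>
      ((\<lambda>z. \<Sum>\<^sub>\<infinity>\<omega>\<in>S. f \<omega> z) has_field_derivative (g' w)) (at w) \<and>
      ((\<lambda>X. \<Sum>\<omega>\<in>X. -2/(w-\<omega>)^3) \<longlongrightarrow> g' w) (finite_subsets_at_top S)"
    using has_complex_derivative_uniform_limit[OF ev ulim _ r] by auto
  have z0b: "z0 \<in> ball z0 r" using r by simp
  have "((\<lambda>\<omega>. -2/(z0-\<omega>)^3) has_sum g' z0) S"
    using g'[OF z0b] by (simp add: has_sum_def)
  then have "g' z0 = (\<Sum>\<^sub>\<infinity>\<omega>\<in>S. -2/(z0-\<omega>)^3)" by (simp add: infsumI)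
  with g'[OF z0b] show ?thesis by (simp add: f_def)
qed

end

lemma half_not_Ints: "(1/2::real) \<notin> \<int>"
proof
  assume "(1/2::real) \<in> \<int>"
  then obtain k where k: "(1/2::real) = of_int k" by (auto elim!: Ints_cases)
  then have "(of_int (2*k) :: real) = of_int 1" by simp
  then have "2*k = 1" by (simp only: of_int_eq_iff)
  then show False by presburger
qed

context ell
begin

definition F0 :: "complex \<Rightarrow> complex" where "F0 z = (\<Sum>\<^sub>\<infinity>\<omega>\<in>Lat-{0}. 1/(z-\<omega>)^2 - 1/\<omega>^2)"
definition G0 :: "complex \<Rightarrow> complex" where "G0 z = (\<Sum>\<^sub>\<infinity>\<omega>\<in>Lat-{0}. -2/(z-\<omega>)^3)"
definition D :: "complex \<Rightarrow> complex" where "D z = (\<Sum>\<^sub>\<infinity>\<omega>\<in>Lat. -2/(z-\<omega>)^3)"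

lemma wp_F0: "wp Lat z = 1/z^2 + F0 z" by (simp add: wp_def F0_def)

lemma wp_all: "wp Lat z = (\<Sum>\<^sub>\<infinity>\<omega>\<in>Lat. 1/(z-\<omega>)^2 - 1/\<omega>^2)"
proof -
  have s: "(\<lambda>\<omega>. 1/(z-\<omega>)^2 - 1/\<omega>^2) summable_on (Lat - {0})"
    using wpT_summable by (rule summable_on_subset) auto
  have "(\<Sum>\<^sub>\<infinity>\<omega>\<in>insert 0 (Lat - {0}). 1/(z-\<omega>)^2 - 1/\<omega>^2) = (1/(z-0)^2 - 1/0^2) + F0 z"
    unfolding F0_def by (rule infsum_insert[OF s]) auto
  then show ?thesis by (simp add: wp_F0 insert_absorb)
qed

lemma D_alt: "D z = -2/z^3 + G0 z"
proof -
  have s: "(\<lambda>\<omega>. -2/(z-\<omega>)^3) summable_on (Lat - {0})" by (rule cube2_summable) auto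
  have "(\<Sum>\<^sub>\<infinity>\<omega>\<in>insert 0 (Lat - {0}). -2/(z-\<omega>)^3) = -2/(z-0)^3 + G0 z"
    unfolding G0_def by (rule infsum_insert[OF s]) auto
  then show ?thesis by (simp add: D_def insert_absorb)
qed

lemma F0_deriv: "z \<notin> Lat - {0} \<Longrightarrow> (F0 has_field_derivative G0 z) (at z)"
  using F_deriv[of "Lat - {0}" z] by (simp add: F0_def[abs_def] G0_def)

lemma wp_fun: "wp Lat = (\<lambda>z. 1/(z-0)^2 - 0 + F0 z)"
  by (simp add: fun_eq_iff wp_F0)

lemma wp_deriv: "z \<notin> Lat \<Longrightarrow> (wp Lat has_field_derivative D z) (at z)"
proof -
  assume z: "z \<notin> Lat"
  then have z0: "z - 0 \<noteq> 0" by auto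
  have "((\<lambda>z. 1/(z-0)^2 - 0 + F0 z) has_field_derivative (-2/(z-0)^3 + G0 z)) (at z)"
    by (rule DERIV_add[OF deriv_inv_sq[OF z0] F0_deriv]) (use z in auto)
  then show ?thesis by (simp add: wp_fun D_alt)
qed

lemma open_nlat: "open (- Lat)" using lat_subset_closed[of Lat] by auto

lemma open_nlat0: "open (- (Lat - {0}))" by (rule open_Compl[OF lat_subset_closed]) auto

lemma connected_nlat: "connected (- Lat)"
proof -
  have "connected (UNIV - Lat)"
    by (rule connected_open_diff_countable) (auto simp: countable_lat)
  then show ?thesis by (simp add: Compl_eq_Diff_UNIV)
qed

lemma wp_holo: "wp Lat holomorphic_on (- Lat)"
  using wp_deriv open_nlat by (auto simp: holomorphic_on_open)

lemma deriv_wp: "z \<notin> Lat \<Longrightarrow> deriv (wp Lat) z = D z"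
  by (rule DERIV_imp_deriv[OF wp_deriv])

lemma D_holo: "D holomorphic_on (- Lat)"
proof -
  have "deriv (wp Lat) holomorphic_on (- Lat)" by (rule holomorphic_deriv[OF wp_holo open_nlat])
  then show ?thesis by (rule holomorphic_transform) (simp add: deriv_wp)
qed

lemma bij_uminus_lat: "bij_betw uminus Lat Lat"
  by (rule bij_betwI[of _ _ _ uminus]) auto

lemma bij_shift_lat: "p \<in> Lat \<Longrightarrow> bij_betw (\<lambda>\<omega>. \<omega> - p) Lat Lat"
  by (rule bij_betwI[of _ _ _ "\<lambda>\<omega>. \<omega> + p"]) (auto simp: lat_diff lat_add)

lemma wp_even: "wp Lat (-z) = wp Lat z"
proof -
  define h where "h = (\<lambda>u. 1/(z-u)^2 - 1/u^2)"
  have "(\<lambda>\<omega>. 1/(-z-\<omega>)^2 - 1/\<omega>^2) = (\<lambda>\<omega>. h (-\<omega>))"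
    by (simp add: fun_eq_iff h_def power2_eq_square algebra_simps)
  then have "wp Lat (-z) = (\<Sum>\<^sub>\<infinity>\<omega>\<in>Lat. h (-\<omega>))" by (simp add: wp_all)
  also have "\<dots> = (\<Sum>\<^sub>\<infinity>\<omega>\<in>Lat. h \<omega>)" by (rule infsum_reindex_bij_betw[OF bij_uminus_lat])
  also have "\<dots> = wp Lat z" by (simp add: wp_all h_def)
  finally show ?thesis .
qed

lemma D_periodic: "p \<in> Lat \<Longrightarrow> D (z + p) = D z"
proof -
  assume p: "p \<in> Lat"
  define k where "k = (\<lambda>u. -2/(z-u)^3)"
  have "D (z + p) = (\<Sum>\<^sub>\<infinity>\<omega>\<in>Lat. k (\<omega> - p))" by (simp add: D_def k_def algebra_simps)
  also have "\<dots> = (\<Sum>\<^sub>\<infinity>\<omega>\<in>Lat. k \<omega>)" by (rule infsum_reindex_bij_betw[OF bij_shift_lat[OF p]])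
  also have "\<dots> = D z" by (simp add: D_def k_def)
  finally show ?thesis .
qed

lemma D_odd: "D (-z) = - D z"
proof -
  define k where "k = (\<lambda>u. - (-2/(z-u)^3))"
  have "(\<lambda>\<omega>. -2/(-z-\<omega>)^3) = (\<lambda>\<omega>. k (-\<omega>))"
  proof
    fix \<omega>
    have "(-z-\<omega>)^3 = - ((z - (-\<omega>))^3)" by (simp add: power3_eq_cube algebra_simps)
    then show "-2/(-z-\<omega>)^3 = k (-\<omega>)" by (simp add: k_def)
  qed
  then have "D (-z) = (\<Sum>\<^sub>\<infinity>\<omega>\<in>Lat. k (-\<omega>))" by (simp add: D_def)
  also have "\<dots> = (\<Sum>\<^sub>\<infinity>\<omega>\<in>Lat. k \<omega>)" by (rule infsum_reindex_bij_betw[OF bij_uminus_lat])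
  also have "\<dots> = - D z" unfolding k_def D_def by (rule infsum_uminus)
  finally show ?thesis .
qed

lemma half_1: "1/2 \<notin> Lat"
proof
  assume "1/2 \<in> Lat"
  then have "cx (1/2) \<in> \<int>" by (simp add: lat_coords)
  moreover have "cx (1/2) = 1/2" by (simp add: cx_def cy_def)
  ultimately show False using half_not_Ints by simp
qed

lemma half_tau: "\<tau>/2 \<notin> Lat"
proof
  assume "\<tau>/2 \<in> Lat"
  then have "cy (\<tau>/2) \<in> \<int>" by (simp add: lat_coords)
  moreover have "cy (\<tau>/2) = 1/2" using Imt by (simp add: cy_def)
  ultimately show False using half_not_Ints by simp
qed

lemma wp_shift_gen:
  assumes p: "p \<in> Lat" "p/2 \<notin> Lat"
  shows "\<forall>z\<in>-Lat. wp Lat (z + p) = wp Lat z"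
proof -
  define h where "h = (\<lambda>z. wp Lat (z + p) - wp Lat z)"
  have dh: "(h has_field_derivative 0) (at z)" if "z \<in> -Lat" for z
  proof -
    have zp: "z + p \<notin> Lat" using that p lat_add_iff1 by auto
    have "((\<lambda>z. wp Lat (z + p)) has_field_derivative D (z + p)) (at z)"
      using wp_deriv[OF zp] by (simp add: DERIV_shift)
    then have "(h has_field_derivative D (z + p) - D z) (at z)"
      unfolding h_def by (rule DERIV_diff) (use wp_deriv that in auto)
    then show ?thesis using D_periodic[OF p(1)] by simp
  qed
  have cont: "continuous_on (-Lat) h"
    using dh by (intro continuous_at_imp_continuous_on ballI DERIV_isCont) auto
  obtain c where c: "\<And>x. x \<in> -Lat \<Longrightarrow> h x = c"
    using DERIV_zero_connected_constant[OF connected_nlat open_nlat _ cont, of "{}"] dh by auto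
  have m: "- (p/2) \<in> -Lat" using p(2) by simp
  have "h (-(p/2)) = 0" unfolding h_def using wp_even[of "p/2"] by simp
  then have "c = 0" using c[OF m] by simp
  then show ?thesis using c by (simp add: h_def)
qed

definition Per :: "complex set" where "Per = {p\<in>Lat. \<forall>z\<in>-Lat. wp Lat (z + p) = wp Lat z}"

lemma Per_0: "0 \<in> Per" by (simp add: Per_def)

lemma Per_add: "p \<in> Per \<Longrightarrow> q \<in> Per \<Longrightarrow> p + q \<in> Per"
proof -
  assume P: "p \<in> Per" "q \<in> Per"
  then have p: "p \<in> Lat" "\<forall>z\<in>-Lat. wp Lat (z + p) = wp Lat z"
    and q: "q \<in> Lat" "\<forall>z\<in>-Lat. wp Lat (z + q) = wp Lat z" by (auto simp: Per_def)
  have "p + q \<in> Lat" using p q lat_add by auto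
  moreover have "\<forall>z\<in>-Lat. wp Lat (z + (p + q)) = wp Lat z"
  proof
    fix z assume z: "z \<in> -Lat"
    have zp: "z + p \<in> -Lat" using z p lat_add_iff1 by auto
    have "wp Lat (z + (p + q)) = wp Lat ((z + p) + q)" by (simp add: add.assoc)
    also have "\<dots> = wp Lat (z + p)" using q zp by blast
    also have "\<dots> = wp Lat z" using p z by blast
    finally show "wp Lat (z + (p + q)) = wp Lat z" .
  qed
  ultimately show ?thesis by (simp add: Per_def)
qed

lemma Per_uminus: "p \<in> Per \<Longrightarrow> -p \<in> Per"
proof -
  assume P: "p \<in> Per"
  then have p: "p \<in> Lat" "\<forall>z\<in>-Lat. wp Lat (z + p) = wp Lat z" by (auto simp: Per_def)
  have "\<forall>z\<in>-Lat. wp Lat (z + - p) = wp Lat z"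
  proof
    fix z assume z: "z \<in> -Lat"
    have zp: "z + - p \<in> -Lat" using z p lat_add_iff1[of "-p" z] by auto
    have "wp Lat z = wp Lat ((z + - p) + p)" by simp
    also have "\<dots> = wp Lat (z + - p)" using p zp by blast
    finally show "wp Lat (z + - p) = wp Lat z" by simp
  qed
  then show ?thesis using p by (simp add: Per_def)
qed

lemma Per_nat: "p \<in> Per \<Longrightarrow> of_nat n * p \<in> Per"
  by (induction n) (auto simp: Per_0 distrib_right intro: Per_add)

lemma Per_int: "p \<in> Per \<Longrightarrow> of_int k * p \<in> Per"
proof (cases "k \<ge> 0")
  case True
  assume p: "p \<in> Per"
  obtain n where "k = int n" using True nonneg_int_cases by blast
  then show ?thesis using Per_nat[OF p, of n] by simp
next
  case False
  assume p: "p \<in> Per"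
  obtain n where "k = - int n" using False by (intro that[of "nat (-k)"]) simp
  then show ?thesis using Per_uminus[OF Per_nat[OF p, of n]] by simp
qed

lemma Per_lat: "Per = Lat"
proof
  show "Per \<subseteq> Lat" by (auto simp: Per_def)
  have 1: "1 \<in> Per" using wp_shift_gen[of 1] half_1 by (simp add: Per_def)
  have t: "\<tau> \<in> Per" using wp_shift_gen[of \<tau>] half_tau by (simp add: Per_def)
  show "Lat \<subseteq> Per"
  proof
    fix \<omega> assume "\<omega> \<in> Lat"
    then obtain m n :: int where w: "\<omega> = of_int m + of_int n * \<tau>" by (auto simp: lat_iff)
    have "of_int m * 1 + of_int n * \<tau> \<in> Per" by (intro Per_add Per_int 1 t)
    then show "\<omega> \<in> Per" using w by simp
  qed
qed

lemma wp_periodic: "p \<in> Lat \<Longrightarrow> z \<notin> Lat \<Longrightarrow> wp Lat (z + p) = wp Lat z"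
  using Per_lat by (auto simp: Per_def)

lemma ev_ne0: "\<forall>\<^sub>F z in at (a::complex). z \<noteq> a"
  by (simp add: eventually_at_filter)

lemma wp_lim0: "((\<lambda>z. z^2 * wp Lat z) \<longlongrightarrow> 1) (at 0)"
proof -
  have "isCont F0 0" by (rule DERIV_isCont[OF F0_deriv]) auto
  then have F: "(F0 \<longlongrightarrow> F0 0) (at 0)" by (simp add: isCont_def)
  have "((\<lambda>z. 1 + z^2 * F0 z) \<longlongrightarrow> 1 + 0^2 * F0 0) (at 0)"
    by (intro tendsto_intros F)
  then have "((\<lambda>z. 1 + z^2 * F0 z) \<longlongrightarrow> 1) (at 0)" by simp
  moreover have "\<forall>\<^sub>F z in at 0. 1 + z^2 * F0 z = z^2 * wp Lat z"
    using ev_ne0[of 0] by eventually_elim (simp add: wp_F0 field_simps)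
  ultimately show ?thesis by (rule Lim_transform_eventually)
qed

lemma G0_cont0: "isCont G0 0"
proof -
  have h: "F0 holomorphic_on (- (Lat - {0}))"
    using F0_deriv open_nlat0 by (auto simp: holomorphic_on_open)
  have "deriv F0 holomorphic_on (- (Lat - {0}))" by (rule holomorphic_deriv[OF h open_nlat0])
  then have "G0 holomorphic_on (- (Lat - {0}))"
    by (rule holomorphic_transform) (use F0_deriv DERIV_imp_deriv in auto)
  then have "continuous_on (- (Lat - {0})) G0" by (rule holomorphic_on_imp_continuous_on)
  then show ?thesis using open_nlat0 continuous_on_eq_continuous_at by blast
qed

lemma D_lim0: "((\<lambda>z. z^3 * D z) \<longlongrightarrow> -2) (at 0)"
proof -
  have G: "(G0 \<longlongrightarrow> G0 0) (at 0)" using G0_cont0 by (simp add: isCont_def)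
  have "((\<lambda>z. -2 + z^3 * G0 z) \<longlongrightarrow> -2 + 0^3 * G0 0) (at 0)"
    by (intro tendsto_intros G)
  then have "((\<lambda>z. -2 + z^3 * G0 z) \<longlongrightarrow> -2) (at 0)" by simp
  moreover have "\<forall>\<^sub>F z in at 0. -2 + z^3 * G0 z = z^3 * D z"
    using ev_ne0[of 0] by eventually_elim (simp add: D_alt field_simps)
  ultimately show ?thesis by (rule Lim_transform_eventually)
qed

end

lemma ci_shift: "contour_integral (linepath (a + c) (b + c)) f = contour_integral (linepath a b) (\<lambda>z. f (z + c))"
proof -
  have l: "\<And>x. linepath (a + c) (b + c) x = linepath a b x + c"
    by (simp add: linepath_def scaleR_add_right algebra_simps)
  show ?thesis unfolding contour_integral_integral vector_derivative_linepath_at l by simp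
qed

lemma seg_line:
  fixes u :: complex and s c t :: real
  assumes "s \<le> c" "c \<le> t"
  shows "u + of_real c \<in> closed_segment (u + of_real s) (u + of_real t)"
proof (cases "s = t")
  case True then show ?thesis using assms by simp
next
  case False
  then have st: "s < t" using assms by simp
  define \<theta> where "\<theta> = (c - s) / (t - s)"
  have th: "0 \<le> \<theta>" "\<theta> \<le> 1" using assms st by (auto simp: \<theta>_def field_simps)
  have "(1 - \<theta>) *\<^sub>R (u + of_real s) + \<theta> *\<^sub>R (u + of_real t) = u + of_real (s + \<theta> * (t - s))"
    by (simp add: scaleR_conv_of_real algebra_simps)
  also have "s + \<theta> * (t - s) = c" using st by (simp add: \<theta>_def)
  finally have eq: "u + of_real c = (1 - \<theta>) *\<^sub>R (u + of_real s) + \<theta> *\<^sub>R (u + of_real t)" by simp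
  show ?thesis unfolding closed_segment_def by (rule CollectI, rule exI[of _ \<theta>]) (use th eq in auto)
qed

lemma horiz_invariance:
  fixes f :: "complex \<Rightarrow> complex" and u :: complex
  assumes cont: "continuous_on {z. Im z = Im u} f"
    and per: "\<And>z. Im z = Im u \<Longrightarrow> f (z + 1) = f z"
  shows "contour_integral (linepath (u + of_real s) (u + of_real s + 1)) f = contour_integral (linepath u (u + 1)) f"
proof -
  define J where "J = (\<lambda>s t. contour_integral (linepath (u + of_real s) (u + of_real t)) f)"
  have segsub: "closed_segment (u + of_real s) (u + of_real t) \<subseteq> {z. Im z = Im u}" for s t
    by (subst closed_segment_same_Im) auto
  have split: "J s t = J s c + J c t" if "s \<le> c" "c \<le> t" for s c t
    unfolding J_def
    by (rule contour_integral_split_linepath[OF continuous_on_subset[OF cont segsub] seg_line[OF that]])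
  have trans: "J (s + 1) (t + 1) = J s t" for s t
  proof -
    have "J (s + 1) (t + 1) = contour_integral (linepath ((u + of_real s) + 1) ((u + of_real t) + 1)) f"
      by (simp add: J_def add.assoc)
    also have "\<dots> = contour_integral (linepath (u + of_real s) (u + of_real t)) (\<lambda>z. f (z + 1))"
      by (rule ci_shift)
    also have "\<dots> = J s t" unfolding J_def
      by (rule contour_integral_cong) (use segsub per in auto)
    finally show ?thesis .
  qed
  have int: "J (of_int k) (of_int k + 1) = J 0 1" for k :: int
  proof (induction k rule: int_induct[where k = 0])
    case base then show ?case by simp
  next
    case (step1 i) then show ?case using trans[of "of_int i" "of_int i + 1"] by (simp add: add.commute)
  next
    case (step2 i) then show ?case using trans[of "of_int i - 1" "of_int i"] by simp
  qed
  define n where "n = ceiling s"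
  have n: "s \<le> of_int n" "of_int n \<le> s + 1" "of_int n - 1 \<le> s" unfolding n_def by linarith+
  have "J s (s + 1) = J s (of_int n) + J (of_int n) (s + 1)" using n by (intro split) auto
  also have "J (of_int n) (s + 1) = J (of_int n - 1) s" using trans[of "of_int n - 1" s] by simp
  also have "J s (of_int n) + J (of_int n - 1) s = J (of_int n - 1) (of_int n)"
    using split[of "of_int n - 1" s "of_int n"] n by simp
  also have "\<dots> = J (of_int (n - 1)) (of_int (n - 1) + 1)" by simp
  also have "\<dots> = J 0 1" by (rule int)
  finally show ?thesis by (simp add: J_def add.assoc)
qed

context ell
begin

lemma rect_integral_zero:
  fixes f :: "complex \<Rightarrow> complex"
  assumes U: "open U" and holo: "f holomorphic_on U"
    and per: "\<And>z. z \<in> U \<Longrightarrow> z + 1 \<in> U \<and> z + \<tau> \<in> U \<and> f (z + 1) = f z \<and> f (z + \<tau>) = f z"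
    and L1: "\<And>z. Im z = ay \<Longrightarrow> z \<in> U" and L2: "\<And>z. Im z = ay + Im \<tau> \<Longrightarrow> z \<in> U"
    and L3: "\<And>z. Re z = ax \<Longrightarrow> z \<in> U" and L4: "\<And>z. Re z = ax + 1 \<Longrightarrow> z \<in> U"
  shows "contour_integral (rectpath (Complex ax ay) (Complex (ax + 1) (ay + Im \<tau>))) f = 0"
proof -
  define H where "H = Im \<tau>"
  define a1 a2 a3 a4 where "a1 = Complex ax ay" and "a2 = Complex (ax + 1) ay"
    and "a3 = Complex (ax + 1) (ay + H)" and "a4 = Complex ax (ay + H)"
  have cU: "continuous_on U f" by (rule holomorphic_on_imp_continuous_on[OF holo])
  have seg12: "closed_segment a1 a2 \<subseteq> U" using L1 by (subst closed_segment_same_Im) (auto simp: a1_def a2_def)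
  have seg23: "closed_segment a2 a3 \<subseteq> U" using L4 by (subst closed_segment_same_Re) (auto simp: a3_def a2_def)
  have seg34: "closed_segment a3 a4 \<subseteq> U" using L2 by (subst closed_segment_same_Im) (auto simp: a3_def a4_def H_def)
  have seg41: "closed_segment a4 a1 \<subseteq> U" using L3 by (subst closed_segment_same_Re) (auto simp: a1_def a4_def)
  have seg14: "closed_segment a1 a4 \<subseteq> U" using seg41 by (simp add: closed_segment_commute)
  have i12: "f contour_integrable_on linepath a1 a2" by (rule contour_integrable_continuous_linepath[OF continuous_on_subset[OF cU seg12]])
  have i23: "f contour_integrable_on linepath a2 a3" by (rule contour_integrable_continuous_linepath[OF continuous_on_subset[OF cU seg23]])
  have i34: "f contour_integrable_on linepath a3 a4" by (rule contour_integrable_continuous_linepath[OF continuous_on_subset[OF cU seg34]])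
  have i41: "f contour_integrable_on linepath a4 a1" by (rule contour_integrable_continuous_linepath[OF continuous_on_subset[OF cU seg41]])
  have rp: "rectpath a1 a3 = linepath a1 a2 +++ linepath a2 a3 +++ linepath a3 a4 +++ linepath a4 a1"
    by (simp add: rectpath_def Let_def a1_def a2_def a3_def a4_def)
  have sum: "contour_integral (rectpath a1 a3) f =
      contour_integral (linepath a1 a2) f + (contour_integral (linepath a2 a3) f +
      (contour_integral (linepath a3 a4) f + contour_integral (linepath a4 a1) f))"
    unfolding rp using i12 i23 i34 i41 by (simp add: contour_integrable_joinI)
  have e2: "a2 = a1 + 1" "a3 = a4 + 1" by (simp_all add: a1_def a2_def a3_def a4_def complex_eq_iff)
  have "contour_integral (linepath a2 a3) f = contour_integral (linepath (a1 + 1) (a4 + 1)) f"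
    by (simp only: e2)
  also have "\<dots> = contour_integral (linepath a1 a4) (\<lambda>z. f (z + 1))" by (rule ci_shift)
  also have "\<dots> = contour_integral (linepath a1 a4) f"
    by (rule contour_integral_cong) (use seg14 per in auto)
  also have "\<dots> = - contour_integral (linepath a4 a1) f"
    using contour_integral_reversepath[of "linepath a4 a1" f] by simp
  finally have I24: "contour_integral (linepath a2 a3) f + contour_integral (linepath a4 a1) f = 0" by simp
  define b where "b = a1 + of_real (- Re \<tau>)"
  have Ib: "Im b = ay" by (simp add: b_def a1_def)
  have segb: "closed_segment (b + 1) b \<subseteq> {z. Im z = ay}"
    by (subst closed_segment_same_Im) (auto simp: Ib)
  have e3: "a3 = (b + 1) + \<tau>" "a4 = b + \<tau>" by (simp_all add: a3_def a4_def b_def a1_def H_def complex_eq_iff)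
  have "contour_integral (linepath a3 a4) f = contour_integral (linepath ((b + 1) + \<tau>) (b + \<tau>)) f"
    by (simp only: e3)
  also have "\<dots> = contour_integral (linepath (b + 1) b) (\<lambda>z. f (z + \<tau>))" by (rule ci_shift)
  also have "\<dots> = contour_integral (linepath (b + 1) b) f"
    by (rule contour_integral_cong) (use segb per L1 in auto)
  also have "\<dots> = - contour_integral (linepath b (b + 1)) f"
    using contour_integral_reversepath[of "linepath b (b + 1)" f] by simp
  also have "contour_integral (linepath b (b + 1)) f = contour_integral (linepath a1 (a1 + 1)) f"
    unfolding b_def
  proof (rule horiz_invariance)
    show "continuous_on {z. Im z = Im a1} f"
      by (rule continuous_on_subset[OF cU]) (use L1 in \<open>auto simp: a1_def\<close>)
    show "\<And>z. Im z = Im a1 \<Longrightarrow> f (z + 1) = f z" using per L1 by (auto simp: a1_def)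
  qed
  also have "a1 + 1 = a2" by (simp add: a1_def a2_def complex_eq_iff)
  finally have I13: "contour_integral (linepath a1 a2) f + contour_integral (linepath a3 a4) f = 0" by simp
  have "contour_integral (rectpath a1 a3) f =
     (contour_integral (linepath a1 a2) f + contour_integral (linepath a3 a4) f) +
     (contour_integral (linepath a2 a3) f + contour_integral (linepath a4 a1) f)"
    unfolding sum by (simp add: algebra_simps)
  then have "contour_integral (rectpath a1 a3) f = 0" by (simp only: I13 I24) simp
  then show ?thesis by (simp add: a1_def a3_def H_def)
qed

end

context ell
begin

definition good :: "complex set \<Rightarrow> bool" where
  "good B \<longleftrightarrow> (\<forall>z. \<not> z islimpt B) \<and> countable B \<and> (\<forall>z\<in>B. \<forall>p\<in>Lat. z + p \<in> B)"

lemma good_closed: "good B \<Longrightarrow> closed B"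
  unfolding good_def closed_limpt by blast

lemma good_open: "good B \<Longrightarrow> open (- B)"
  using good_closed by auto

lemma good_conn: "good B \<Longrightarrow> connected (- B)"
proof -
  assume g: "good B"
  have "connected (UNIV - B)"
    by (rule connected_open_diff_countable) (use g in \<open>auto simp: good_def\<close>)
  then show ?thesis by (simp add: Compl_eq_Diff_UNIV)
qed

lemma good_shift: "good B \<Longrightarrow> p \<in> Lat \<Longrightarrow> z + p \<in> B \<longleftrightarrow> z \<in> B"
proof -
  assume g: "good B" and p: "p \<in> Lat"
  show ?thesis
  proof
    assume "z + p \<in> B"
    then have "(z + p) + - p \<in> B" using g lat_uminus[OF p] unfolding good_def by blast
    then show "z \<in> B" by simp
  next
    assume "z \<in> B"
    then show "z + p \<in> B" using g p unfolding good_def by blast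
  qed
qed

lemma good_ev: "good B \<Longrightarrow> \<forall>\<^sub>F w in at z. w \<notin> B"
  unfolding good_def using islimpt_iff_eventually by blast

lemma good_ball: "good B \<Longrightarrow> \<exists>r>0. \<forall>w\<in>ball z r. w \<noteq> z \<longrightarrow> w \<notin> B"
proof -
  assume "good B"
  then have "\<forall>\<^sub>F w in at z. w \<notin> B" by (rule good_ev)
  then obtain d where "d > 0" "\<forall>w. w \<noteq> z \<and> dist w z < d \<longrightarrow> w \<notin> B"
    unfolding eventually_at by auto
  then show ?thesis by (intro exI[of _ d]) (auto simp: dist_commute)
qed

definition rep0 :: "complex \<Rightarrow> complex" where
  "rep0 z = z - (of_int \<lfloor>cx z\<rfloor> + of_int \<lfloor>cy z\<rfloor> * \<tau>)"

definition Kf :: "complex set" where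
  "Kf = (\<lambda>(x,y). of_real x + of_real y * \<tau>) ` ({0..1} \<times> {0..1})"

lemma rep0_lat: "z - rep0 z \<in> Lat"
  by (auto simp: rep0_def lat_iff)

lemma rep0_K: "rep0 z \<in> Kf"
proof -
  have e: "of_int \<lfloor>cx z\<rfloor> + of_int \<lfloor>cy z\<rfloor> * \<tau> = of_real (of_int \<lfloor>cx z\<rfloor>) + of_real (of_int \<lfloor>cy z\<rfloor>) * \<tau>"
    by simp
  have cxr: "cx (rep0 z) = cx z - of_int \<lfloor>cx z\<rfloor>"
    unfolding rep0_def cx_diff e cx_lin ..
  have cyr: "cy (rep0 z) = cy z - of_int \<lfloor>cy z\<rfloor>"
    unfolding rep0_def cy_diff e cy_lin ..
  have "cx (rep0 z) \<in> {0..1}" "cy (rep0 z) \<in> {0..1}"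
    unfolding cxr cyr by (auto, linarith+)
  then show ?thesis unfolding Kf_def using coords[of "rep0 z"]
    by (intro image_eqI[of _ _ "(cx (rep0 z), cy (rep0 z))"]) auto
qed

lemma Kf_compact: "compact Kf"
  unfolding Kf_def
  by (intro compact_continuous_image compact_Times compact_Icc)
     (auto intro!: continuous_intros simp: case_prod_unfold)

lemma per_const:
  assumes g: "good B" and h: "f holomorphic_on -B"
    and per: "\<And>z p. z \<notin> B \<Longrightarrow> p \<in> Lat \<Longrightarrow> f (z + p) = f z"
    and lim: "\<And>b. b \<in> B \<Longrightarrow> \<exists>c. (f \<longlongrightarrow> c) (at b)"
  shows "\<exists>c. \<forall>z. z \<notin> B \<longrightarrow> f z = c"
proof -
  define g where "g = (\<lambda>z. if z \<in> B then Lim (at z) f else f z)"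
  have gb: "(f \<longlongrightarrow> g b) (at b)" if bB: "b \<in> B" for b
  proof -
    obtain c where c: "(f \<longlongrightarrow> c) (at b)" using lim[OF bB] by blast
    then have "Lim (at b) f = c" by (intro tendsto_Lim) auto
    then show ?thesis using c bB by (simp add: g_def)
  qed
  have evfg: "\<forall>\<^sub>F w in at z. f w = g w" for z
    using good_ev[OF g, of z] by eventually_elim (simp add: g_def)
  have opB: "open (-B)" by (rule good_open[OF g])
  have contg: "isCont g z" for z
  proof (cases "z \<in> B")
    case True
    then show ?thesis unfolding isCont_def
      by (rule Lim_transform_eventually[OF gb evfg])
  next
    case False
    have "isCont f z" using h opB False
      by (meson ComplI continuous_on_eq_continuous_at holomorphic_on_imp_continuous_on)
    moreover have "eventually (\<lambda>w. f w = g w) (nhds z)"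
      using opB False by (intro eventually_nhds_in_open[THEN eventually_mono]) (auto simp: g_def)
    ultimately show ?thesis using isCont_cong by blast
  qed
  have diffg: "g field_differentiable (at z)" for z
  proof (cases "z \<in> B")
    case False
    obtain r where r: "r > 0" "ball z r \<subseteq> -B" using opB False by (meson ComplI open_contains_ball)
    have "g holomorphic_on ball z r"
      by (rule holomorphic_transform[OF holomorphic_on_subset[OF h r(2)]]) (use r in \<open>auto simp: g_def\<close>)
    then show ?thesis using r by (intro holomorphic_on_imp_differentiable_at) auto
  next
    case True
    obtain r where r: "r > 0" "\<forall>w\<in>ball z r. w \<noteq> z \<longrightarrow> w \<notin> B" using good_ball[OF g] by blast
    have "g holomorphic_on ball z r"
    proof (rule no_isolated_singularity[where K = "{z}"])
      show "continuous_on (ball z r) g" using contg by (intro continuous_at_imp_continuous_on) auto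
      have "f holomorphic_on ball z r - {z}" by (rule holomorphic_on_subset[OF h]) (use r in auto)
      then show "g holomorphic_on ball z r - {z}"
        by (rule holomorphic_transform) (use r in \<open>auto simp: g_def\<close>)
    qed auto
    then show ?thesis using r by (intro holomorphic_on_imp_differentiable_at) auto
  qed
  have holg: "g holomorphic_on UNIV" using diffg by (simp add: holomorphic_on_def)
  have gper: "g (z + p) = g z" if p: "p \<in> Lat" for z p
  proof -
    have "isCont (\<lambda>w. g (w + p)) z"
      by (rule isCont_o2[OF _ contg]) simp
    then have t1: "((\<lambda>w. g (w + p)) \<longlongrightarrow> g (z + p)) (at z)" by (simp add: isCont_def)
    have "\<forall>\<^sub>F w in at z. g (w + p) = g w"
      using good_ev[OF g, of z]
    proof eventually_elim
      case (elim w)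
      then have "w + p \<notin> B" using good_shift[OF g p] by simp
      then show ?case using elim per[OF elim p] by (simp add: g_def)
    qed
    then have "(g \<longlongrightarrow> g (z + p)) (at z)" by (rule Lim_transform_eventually[OF t1])
    moreover have "(g \<longlongrightarrow> g z) (at z)" using contg[of z] by (simp add: isCont_def)
    ultimately show ?thesis by (intro tendsto_unique[of "at z" g]) auto
  qed
  have "compact (g ` Kf)"
    by (rule compact_continuous_image[OF _ Kf_compact]) (use contg in \<open>auto intro!: continuous_at_imp_continuous_on\<close>)
  then have bK: "bounded (g ` Kf)" by (rule compact_imp_bounded)
  have "range g \<subseteq> g ` Kf"
  proof
    fix y assume "y \<in> range g"
    then obtain z where z: "y = g z" by auto
    have "g z = g (rep0 z + (z - rep0 z))" by simp
    also have "\<dots> = g (rep0 z)" by (rule gper[OF rep0_lat])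
    finally show "y \<in> g ` Kf" using z rep0_K by auto
  qed
  then have "bounded (range g)" using bK bounded_subset by blast
  then have "g constant_on UNIV" by (rule Liouville_theorem[OF holg])
  then obtain c where c: "\<And>x. g x = c" by (auto simp: constant_on_def)
  have "f z = c" if "z \<notin> B" for z using c[of z] that by (simp add: g_def)
  then show ?thesis by blast
qed

end

context ell
begin

lemma avoid_real: "countable (A :: real set) \<Longrightarrow> \<exists>x. x \<notin> A"
  using uncountable_UNIV_real by (metis UNIV_eq_I countable_subset subset_UNIV)

lemma rect_unique:
  assumes w: "Re w \<in> {ax..<ax+1}" "Im w \<in> {ay..<ay + Im \<tau>}"
    and w': "Re w' \<in> {ax..<ax+1}" "Im w' \<in> {ay..<ay + Im \<tau>}"
    and d: "w - w' \<in> Lat"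
  shows "w = w'"
proof -
  obtain m n :: int where mn: "w - w' = of_int m + of_int n * \<tau>" using d by (auto simp: lat_iff)
  have "Im (w - w') = of_int n * Im \<tau>" using mn by simp
  then have i: "Im w - Im w' = of_int n * Im \<tau>" by simp
  have "n < 1"
  proof (rule ccontr)
    assume "\<not> n < 1"
    then have "(1::real) \<le> of_int n" by simp
    then have "1 * Im \<tau> \<le> of_int n * Im \<tau>" using Imt by (intro mult_right_mono) auto
    then show False using i w w' by simp
  qed
  moreover have "n > -1"
  proof (rule ccontr)
    assume "\<not> n > -1"
    then have "of_int n \<le> (-1::real)" by simp
    then have "of_int n * Im \<tau> \<le> -1 * Im \<tau>" using Imt by (intro mult_right_mono) auto
    then show False using i w w' by simp
  qed
  ultimately have n0: "n = 0" by simp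
  have "Re (w - w') = of_int m" using mn n0 by simp
  then have "of_int m < (1::real)" "-1 < (of_int m :: real)" using w w' by auto
  then have m0: "m = 0" by linarith
  show ?thesis using mn n0 m0 by simp
qed

lemma rect_rep:
  "\<exists>p\<in>Lat. Re (z - p) \<in> {ax..<ax+1} \<and> Im (z - p) \<in> {ay..<ay + Im \<tau>}"
proof -
  define H where "H = Im \<tau>"
  have H: "H > 0" using Imt by (simp add: H_def)
  define n where "n = \<lfloor>(Im z - ay) / H\<rfloor>"
  have n1: "of_int n * H \<le> Im z - ay" using H unfolding n_def
    by (metis floor_divide_lower)
  have n2: "Im z - ay < (of_int n + 1) * H" using H unfolding n_def
    by (metis floor_divide_upper)
  define w1 where "w1 = z - of_int n * \<tau>"
  define m where "m = \<lfloor>Re w1 - ax\<rfloor>"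
  have m1: "of_int m \<le> Re w1 - ax" "Re w1 - ax < of_int m + 1" unfolding m_def by linarith+
  define p where "p = of_int m + of_int n * \<tau>"
  have p: "p \<in> Lat" by (auto simp: p_def lat_iff)
  have "Im (z - p) = Im z - of_int n * H" by (simp add: p_def H_def)
  moreover have "Re (z - p) = Re w1 - of_int m" by (simp add: p_def w1_def)
  ultimately show ?thesis using n1 n2 m1 p by (intro bexI[of _ p]) (auto simp: H_def algebra_simps)
qed

lemma residue_sum_zero:
  assumes g: "good B" and Q: "finite Q" "Q \<subseteq> B"
    and reps: "\<And>b. b \<in> B \<Longrightarrow> \<exists>!q. q \<in> Q \<and> b - q \<in> Lat"
    and h: "f holomorphic_on -B"
    and per: "\<And>z p. z \<notin> B \<Longrightarrow> p \<in> Lat \<Longrightarrow> f (z + p) = f z"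
    and lim: "\<And>q. q \<in> Q \<Longrightarrow> ((\<lambda>z. (z - q) * f z) \<longlongrightarrow> r q) (at q)"
  shows "(\<Sum>q\<in>Q. r q) = 0"
proof -
  define H where "H = Im \<tau>"
  have H: "H > 0" using Imt by (simp add: H_def)
  have cB: "countable B" using g by (simp add: good_def)
  obtain ax where ax: "ax \<notin> Re ` B" using avoid_real[of "Re ` B"] cB by blast
  obtain ay where ay: "ay \<notin> Im ` B" using avoid_real[of "Im ` B"] cB by blast
  have nB1: "z \<notin> B" if "Re z = ax" for z using ax that by auto
  have nB2: "z \<notin> B" if "Re z = ax + 1" for z
  proof
    assume "z \<in> B"
    then have "z + (-1) \<in> B" using good_shift[OF g, of "-1"] by simp
    then show False using nB1[of "z + (-1)"] that by simp
  qed
  have nB3: "z \<notin> B" if "Im z = ay" for z using ay that by auto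
  have nB4: "z \<notin> B" if "Im z = ay + H" for z
  proof
    assume "z \<in> B"
    then have "z + (-\<tau>) \<in> B" using good_shift[OF g, of "-\<tau>"] by simp
    then show False using nB3[of "z + (-\<tau>)"] that by (simp add: H_def)
  qed
  define a1 a3 where "a1 = Complex ax ay" and "a3 = Complex (ax + 1) (ay + H)"
  have le: "Re a1 \<le> Re a3" "Im a1 \<le> Im a3" using H by (auto simp: a1_def a3_def)
  define rep where "rep = (\<lambda>z. SOME w. z - w \<in> Lat \<and> Re w \<in> {ax..<ax+1} \<and> Im w \<in> {ay..<ay + H})"
  have rep: "z - rep z \<in> Lat \<and> Re (rep z) \<in> {ax..<ax+1} \<and> Im (rep z) \<in> {ay..<ay + H}" for z
  proof -
    obtain p where p: "p \<in> Lat" "Re (z - p) \<in> {ax..<ax+1}" "Im (z - p) \<in> {ay..<ay + H}"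
      using rect_rep[of z ax ay] by (auto simp: H_def)
    have "z - (z - p) \<in> Lat \<and> Re (z - p) \<in> {ax..<ax+1} \<and> Im (z - p) \<in> {ay..<ay + H}" using p by simp
    then show ?thesis unfolding rep_def by (rule someI)
  qed
  have repB: "rep z \<in> B" if "z \<in> B" for z
  proof -
    have "rep z + (z - rep z) \<in> B" using that by simp
    then show ?thesis using good_shift[OF g] rep by blast
  qed
  have repbox: "rep z \<in> box a1 a3" if "z \<in> B" for z
  proof -
    have "Re (rep z) \<noteq> ax" using nB1 repB[OF that] by auto
    moreover have "Im (rep z) \<noteq> ay" using nB3 repB[OF that] by auto
    ultimately show ?thesis using rep[of z] by (auto simp: in_box_complex_iff a1_def a3_def)
  qed
  have uniq: "w = w'" if "w \<in> box a1 a3" "w' \<in> box a1 a3" "w - w' \<in> Lat" for w w'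
    by (rule rect_unique[of w ax ay w']) (use that in \<open>auto simp: in_box_complex_iff a1_def a3_def H_def\<close>)
  define pts where "pts = B \<inter> box a1 a3"
  have pts_eq: "pts = rep ` Q"
  proof
    show "rep ` Q \<subseteq> pts" using repB repbox Q(2) by (auto simp: pts_def)
    show "pts \<subseteq> rep ` Q"
    proof
      fix p assume p: "p \<in> pts"
      then obtain q where q: "q \<in> Q" "p - q \<in> Lat" using reps[of p] by (auto simp: pts_def)
      have "rep q - p \<in> Lat"
      proof -
        have "rep q - p = - ((q - rep q) + (p - q))" by simp
        then show ?thesis using rep[of q] q lat_add lat_uminus by metis
      qed
      then have "rep q = p" using uniq[of "rep q" p] repbox[of q] q Q(2) p by (auto simp: pts_def)
      then show "p \<in> rep ` Q" using q by auto
    qed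
  qed
  have inj: "inj_on rep Q"
  proof
    fix q q' assume qq: "q \<in> Q" "q' \<in> Q" "rep q = rep q'"
    have "q - q' = (q - rep q) - (q' - rep q')" using qq(3) by simp
    then have d: "q - q' \<in> Lat" using rep[of q] rep[of q'] lat_diff by metis
    have "q \<in> B" using qq Q(2) by auto
    then show "q = q'" using reps[of q] qq d by auto
  qed
  have fin: "finite pts" using Q(1) pts_eq by simp
  define S where "S = - (B - box a1 a3)"
  have "closed (B - box a1 a3)"
    unfolding Diff_eq by (intro closed_Int closed_Compl open_box good_closed[OF g])
  then have oS: "open S" unfolding S_def by (rule open_Compl)
  have cS: "connected S"
  proof -
    have "connected (UNIV - (B - box a1 a3))"
      by (rule connected_open_diff_countable) (use cB in \<open>auto intro: countable_subset\<close>)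
    then show ?thesis by (simp add: S_def Compl_eq_Diff_UNIV)
  qed
  have Spts: "S - pts = - B" by (auto simp: S_def pts_def)
  have pim: "path_image (rectpath a1 a3) \<subseteq> - B"
  proof
    fix z assume "z \<in> path_image (rectpath a1 a3)"
    then have "Re z = ax \<or> Re z = ax + 1 \<or> Im z = ay \<or> Im z = ay + H"
      unfolding path_image_rectpath[OF le] by (auto simp: a1_def a3_def)
    then show "z \<in> - B" using nB1 nB2 nB3 nB4 by auto
  qed
  have homo: "\<forall>z. z \<notin> S \<longrightarrow> winding_number (rectpath a1 a3) z = 0"
  proof (intro allI impI)
    fix z assume "z \<notin> S"
    then have z: "z \<in> B" "z \<notin> box a1 a3" by (auto simp: S_def)
    have "z \<notin> cbox a1 a3 - box a1 a3" using pim z path_image_rectpath_cbox_minus_box[OF le] by auto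
    then have "z \<notin> cbox a1 a3" using z by auto
    then show "winding_number (rectpath a1 a3) z = 0" by (rule winding_number_rectpath_outside[OF le])
  qed
  have RT: "contour_integral (rectpath a1 a3) f =
      2 * pi * \<i> * (\<Sum>p\<in>pts. winding_number (rectpath a1 a3) p * residue f p)"
    by (rule Residue_theorem[OF oS cS fin _ valid_path_rectpath _ _ homo]) (use h pim Spts in auto)
  have wn: "winding_number (rectpath a1 a3) p = 1" if "p \<in> pts" for p
    using that by (intro winding_number_rectpath) (auto simp: pts_def)
  have res: "residue f (rep q) = r q" if q: "q \<in> Q" for q
  proof -
    define p0 where "p0 = rep q"
    define d where "d = p0 - q"
    have d: "d \<in> Lat" using rep[of q] by (simp add: d_def p0_def lat_uminus_iff[symmetric, of "q - rep q"])
    obtain e where e: "e > 0" "\<forall>w\<in>ball p0 e. w \<noteq> p0 \<longrightarrow> w \<notin> B" using good_ball[OF g] by blast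
    have hol: "f holomorphic_on ball p0 e - {p0}" by (rule holomorphic_on_subset[OF h]) (use e in auto)
    have l1: "((\<lambda>x. (x - q) * f x) \<longlongrightarrow> r q) (at q)" by (rule lim[OF q])
    have ev: "\<forall>\<^sub>F x in at q. (x - q) * f x = f (x + d) * (x + d - p0)"
      using good_ev[OF g, of q] by eventually_elim (use per d in \<open>simp add: d_def\<close>)
    have "((\<lambda>x. f (x + d) * (x + d - p0)) \<longlongrightarrow> r q) (at q)"
      by (rule Lim_transform_eventually[OF l1 ev])
    then have "((\<lambda>w. f w * (w - p0)) \<longlongrightarrow> r q) (filtermap (\<lambda>x. x - (-d)) (at q))"
      by (simp add: filterlim_filtermap)
    then have l2: "((\<lambda>w. f w * (w - p0)) \<longlongrightarrow> r q) (at p0)"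
      unfolding filtermap_at_shift by (simp add: d_def)
    have "residue f p0 = r q"
      by (rule residue_simple'[OF _ _ hol l2]) (use e in auto)
    then show ?thesis by (simp add: p0_def)
  qed
  have "contour_integral (rectpath a1 a3) f = 0"
  proof -
    have "contour_integral (rectpath (Complex ax ay) (Complex (ax + 1) (ay + Im \<tau>))) f = 0"
    proof (rule rect_integral_zero[OF good_open[OF g] h])
      fix z assume z: "z \<in> - B"
      then have "z \<notin> B" by simp
      then show "z + 1 \<in> - B \<and> z + \<tau> \<in> - B \<and> f (z + 1) = f z \<and> f (z + \<tau>) = f z"
        using good_shift[OF g, of 1 z] good_shift[OF g, of \<tau> z] per[of z 1] per[of z \<tau>] by auto
    qed (use nB1 nB2 nB3 nB4 in \<open>auto simp: H_def\<close>)
    then show ?thesis by (simp add: a1_def a3_def H_def)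
  qed
  then have "0 = 2 * pi * \<i> * (\<Sum>p\<in>pts. residue f p)" using RT wn by simp
  then have "(\<Sum>p\<in>pts. residue f p) = 0" by simp
  moreover have "(\<Sum>p\<in>pts. residue f p) = (\<Sum>q\<in>Q. r q)"
    unfolding pts_eq by (simp add: sum.reindex[OF inj] res)
  ultimately show ?thesis by simp
qed

end

lemma log_deriv_residue:
  fixes f h Df :: "complex \<Rightarrow> complex"
  assumes r: "r > 0" and n: "n > 0" and hh: "h holomorphic_on ball q r"
    and hnz: "\<And>w. w \<in> ball q r \<Longrightarrow> h w \<noteq> 0"
    and fe: "\<And>w. w \<in> ball q r \<Longrightarrow> f w = (w - q)^n * h w"
    and Df: "\<And>w. w \<in> ball q r - {q} \<Longrightarrow> (f has_field_derivative Df w) (at w)"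
  shows "((\<lambda>w. (w - q) * (Df w / f w)) \<longlongrightarrow> of_nat n) (at q)"
proof -
  define h' where "h' = deriv h"
  have hd: "(h has_field_derivative h' w) (at w)" if wb: "w \<in> ball q r" for w
    using holomorphic_derivI[OF hh open_ball wb, where T=UNIV] unfolding h'_def by simp
  have h'h: "h' holomorphic_on ball q r" unfolding h'_def by (intro holomorphic_deriv hh) auto
  have eq: "(w - q) * (Df w / f w) = of_nat n + (w - q) * (h' w / h w)" if w: "w \<in> ball q r - {q}" for w
  proof -
    have wb: "w \<in> ball q r" and wq: "w - q \<noteq> 0" using w by auto
    have d1: "((\<lambda>w. (w - q)^n * h w) has_field_derivative
        (of_nat n * (w - q)^(n - 1) * 1) * h w + (w - q)^n * h' w) (at w)"
      by (rule DERIV_cong[OF DERIV_mult[OF DERIV_power[OF DERIV_diff[OF DERIV_ident DERIV_const]] hd[OF wb]]])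
         (simp add: algebra_simps)
    have d2: "(f has_field_derivative (of_nat n * (w - q)^(n - 1) * 1) * h w + (w - q)^n * h' w) (at w)"
      by (rule has_field_derivative_transform_within_open[OF d1 open_ball wb]) (use fe in auto)
    have DfE: "Df w = of_nat n * (w - q)^(n - 1) * h w + (w - q)^n * h' w"
      using DERIV_unique[OF Df[OF w] d2] by simp
    have pw: "(w - q) * (w - q)^(n - 1) = (w - q)^n" using n by (cases n) auto
    have "(w - q) * (Df w / f w) = ((w - q) * Df w) / ((w - q)^n * h w)" using fe[OF wb] by simp
    also have "(w - q) * Df w = of_nat n * (w - q)^n * h w + (w - q) * ((w - q)^n * h' w)"
      unfolding DfE by (simp add: algebra_simps pw[symmetric])
    also have "(of_nat n * (w - q)^n * h w + (w - q) * ((w - q)^n * h' w)) / ((w - q)^n * h w)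
        = of_nat n + (w - q) * (h' w / h w)"
      using wq hnz[OF wb] by (simp add: field_simps)
    finally show ?thesis .
  qed
  have qb: "q \<in> ball q r" using r by simp
  have ch: "isCont h q" using hh qb by (meson continuous_on_eq_continuous_at holomorphic_on_imp_continuous_on open_ball)
  have ch': "isCont h' q" using h'h qb by (meson continuous_on_eq_continuous_at holomorphic_on_imp_continuous_on open_ball)
  have "((\<lambda>w. of_nat n + (w - q) * (h' w / h w)) \<longlongrightarrow> of_nat n + (q - q) * (h' q / h q)) (at q)"
    using ch ch' hnz[OF qb] by (intro tendsto_intros) (auto simp: isCont_def)
  then have "((\<lambda>w. of_nat n + (w - q) * (h' w / h w)) \<longlongrightarrow> of_nat n) (at q)" by simp
  moreover have "\<forall>\<^sub>F w in at q. of_nat n + (w - q) * (h' w / h w) = (w - q) * (Df w / f w)"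
    using eventually_at_ball'[OF r, of q UNIV] by eventually_elim (use eq in auto)
  ultimately show ?thesis by (rule Lim_transform_eventually)
qed

lemma count_two:
  fixes n :: "'a \<Rightarrow> nat"
  assumes T: "finite T" "a \<in> T" "b \<in> T" "a \<noteq> b" and pos: "\<And>x. x \<in> T \<Longrightarrow> n x \<ge> 1"
    and s: "(\<Sum>x\<in>T. n x) = 2"
  shows "T = {a, b}" "n a = 1" "n b = 1"
proof -
  have split: "(\<Sum>x\<in>T. n x) = n a + n b + (\<Sum>x\<in>T - {a, b}. n x)"
  proof -
    have "(\<Sum>x\<in>T. n x) = (\<Sum>x\<in>{a,b}. n x) + (\<Sum>x\<in>T - {a, b}. n x)"
      using T by (subst sum.subset_diff[of "{a,b}" T]) auto
    then show ?thesis using T by simp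
  qed
  have "n a \<ge> 1" "n b \<ge> 1" using pos T by auto
  then have z: "(\<Sum>x\<in>T - {a, b}. n x) = 0" and "n a = 1" "n b = 1" using s split by linarith+
  then show "n a = 1" "n b = 1" by auto
  have "T - {a, b} = {}"
  proof (rule ccontr)
    assume "T - {a, b} \<noteq> {}"
    then obtain x where x: "x \<in> T - {a, b}" by auto
    have "n x = 0" using z x T(1) by (simp add: sum_eq_0_iff)
    moreover have "n x \<ge> 1" using pos x by auto
    ultimately show False by simp
  qed
  then show "T = {a, b}" using T by auto
qed

context ell
begin

lemma lim_shift:
  assumes g: "good B" and per: "\<And>z p. z \<notin> B \<Longrightarrow> p \<in> Lat \<Longrightarrow> f (z + p) = f z"
    and d: "d \<in> Lat" and l: "((\<lambda>w. (w - q)^n * f w) \<longlongrightarrow> c) (at q)"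
  shows "((\<lambda>w. (w - (q + d))^n * f w) \<longlongrightarrow> c) (at (q + d))"
proof -
  have ev: "\<forall>\<^sub>F x in at q. (x - q)^n * f x = (x + d - (q + d))^n * f (x + d)"
    using good_ev[OF g, of q] by eventually_elim (use per d in simp)
  have "((\<lambda>x. (x + d - (q + d))^n * f (x + d)) \<longlongrightarrow> c) (at q)"
    by (rule Lim_transform_eventually[OF l ev])
  then have "((\<lambda>w. (w - (q + d))^n * f w) \<longlongrightarrow> c) (filtermap (\<lambda>x. x - (-d)) (at q))"
    by (simp add: filterlim_filtermap)
  then show ?thesis unfolding filtermap_at_shift by simp
qed

definition F0d :: "complex set" where "F0d = {z. cx z \<in> {0..<1} \<and> cy z \<in> {0..<1}}"

lemma rep0_F: "rep0 z \<in> F0d"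
proof -
  have e: "of_int \<lfloor>cx z\<rfloor> + of_int \<lfloor>cy z\<rfloor> * \<tau> = of_real (of_int \<lfloor>cx z\<rfloor>) + of_real (of_int \<lfloor>cy z\<rfloor>) * \<tau>"
    by simp
  have cxr: "cx (rep0 z) = cx z - of_int \<lfloor>cx z\<rfloor>"
    unfolding rep0_def cx_diff e cx_lin ..
  have cyr: "cy (rep0 z) = cy z - of_int \<lfloor>cy z\<rfloor>"
    unfolding rep0_def cy_diff e cy_lin ..
  have "cx (rep0 z) \<in> {0..<1}" "cy (rep0 z) \<in> {0..<1}" unfolding cxr cyr by (auto; linarith)+
  then show ?thesis by (simp add: F0d_def)
qed

lemma F0d_0: "0 \<in> F0d" by (simp add: F0d_def cx_def cy_def)

lemma F0d_K: "F0d \<subseteq> Kf"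
proof
  fix z assume "z \<in> F0d"
  then show "z \<in> Kf" unfolding F0d_def Kf_def using coords[of z]
    by (intro image_eqI[of _ _ "(cx z, cy z)"]) auto
qed

lemma F0d_unique: "w \<in> F0d \<Longrightarrow> w' \<in> F0d \<Longrightarrow> w - w' \<in> Lat \<Longrightarrow> w = w'"
proof -
  assume w: "w \<in> F0d" "w' \<in> F0d" "w - w' \<in> Lat"
  then obtain m n where mn: "cx (w - w') = of_int m" "cy (w - w') = of_int n"
    by (auto simp: lat_coords elim!: Ints_cases)
  have "of_int m < (1::real)" "-1 < (of_int m::real)" "of_int n < (1::real)" "-1 < (of_int n::real)"
    using w mn by (auto simp: F0d_def cx_diff cy_diff)
  then have "m = 0" "n = 0" by linarith+
  then have "w - w' = 0" using coords[of "w - w'"] mn by simp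
  then show "w = w'" by simp
qed

lemma rep0_in_lat: "z \<in> Lat \<Longrightarrow> rep0 z = 0"
proof -
  assume z: "z \<in> Lat"
  have "rep0 z - 0 \<in> Lat" using z rep0_lat[of z] lat_diff[of z "z - rep0 z"] by simp
  then show ?thesis using F0d_unique[OF rep0_F F0d_0] by simp
qed

end

locale ell2 = ell +
  fixes \<alpha> :: complex
  assumes a1: "\<alpha> \<notin> Lat" and a2: "2 * \<alpha> \<notin> Lat"
begin

definition f0 :: "complex \<Rightarrow> complex" where "f0 w = wp Lat w - wp Lat \<alpha>"
definition gfun :: "complex \<Rightarrow> complex" where "gfun w = D w / f0 w"

lemma f0_holo: "f0 holomorphic_on - Lat"
  unfolding f0_def[abs_def] by (intro holomorphic_intros wp_holo)

lemma f0_deriv: "w \<notin> Lat \<Longrightarrow> (f0 has_field_derivative D w) (at w)"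
  unfolding f0_def[abs_def] using DERIV_diff[OF wp_deriv DERIV_const, of w "wp Lat \<alpha>"] by simp

lemma f0_per: "w \<notin> Lat \<Longrightarrow> p \<in> Lat \<Longrightarrow> f0 (w + p) = f0 w"
  by (simp add: f0_def wp_periodic)

lemma f0_lim0: "((\<lambda>z. z^2 * f0 z) \<longlongrightarrow> 1) (at 0)"
proof -
  have "((\<lambda>z. z^2 * wp Lat z - z^2 * wp Lat \<alpha>) \<longlongrightarrow> 1 - 0^2 * wp Lat \<alpha>) (at 0)"
    by (intro tendsto_intros wp_lim0)
  then show ?thesis by (simp add: f0_def algebra_simps)
qed

lemma lat_ev: "\<forall>\<^sub>F w in at z. w \<notin> Lat"
  using lat_not_limpt islimpt_iff_eventually by blast

lemma f0_ev0: "\<forall>\<^sub>F w in at 0. f0 w \<noteq> 0"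
proof -
  have "\<forall>\<^sub>F w in at 0. w^2 * f0 w \<noteq> 0"
    using tendsto_imp_eventually_ne[OF f0_lim0, of 0] by simp
  then show ?thesis by eventually_elim auto
qed

lemma f0_ev_lat: "p \<in> Lat \<Longrightarrow> \<forall>\<^sub>F w in at p. f0 w \<noteq> 0 \<and> w \<notin> Lat"
proof -
  assume p: "p \<in> Lat"
  have "\<forall>\<^sub>F x in at 0. f0 (x + p) \<noteq> 0 \<and> x + p \<notin> Lat"
    using f0_ev0 lat_ev[of 0]
  proof eventually_elim
    case (elim x)
    then show ?case using f0_per[of x p] p lat_add_iff1 by auto
  qed
  then have "\<forall>\<^sub>F w in filtermap (\<lambda>x. x - (-p)) (at 0). f0 w \<noteq> 0 \<and> w \<notin> Lat"
    by (simp add: eventually_filtermap)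
  then show ?thesis unfolding filtermap_at_shift by simp
qed

lemma f0_nonconst: "\<not> f0 constant_on - Lat"
proof
  assume "f0 constant_on - Lat"
  then obtain c where c: "\<And>w. w \<in> - Lat \<Longrightarrow> f0 w = c" by (auto simp: constant_on_def)
  have "\<forall>\<^sub>F w in at 0. w^2 * c = w^2 * f0 w"
    using lat_ev[of 0] by eventually_elim (use c in auto)
  moreover have "((\<lambda>w. w^2 * c) \<longlongrightarrow> 0^2 * c) (at 0)" by (intro tendsto_intros)
  ultimately have "((\<lambda>w. w^2 * f0 w) \<longlongrightarrow> 0) (at 0)" using Lim_transform_eventually by fastforce
  with f0_lim0 show False using tendsto_unique[of "at (0::complex)"] by fastforce
qed

definition Z0 :: "complex set" where "Z0 = {w. w \<notin> Lat \<and> f0 w = 0}"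
definition Bp :: "complex set" where "Bp = Lat \<union> Z0"

lemma f0_factor:
  assumes "w0 \<in> Z0"
  obtains h r n where "0 < n" "0 < r" "ball w0 r \<subseteq> - Lat" "h holomorphic_on ball w0 r"
    "\<And>w. w \<in> ball w0 r \<Longrightarrow> f0 w = (w - w0)^n * h w" "\<And>w. w \<in> ball w0 r \<Longrightarrow> h w \<noteq> 0"
proof -
  from assms have w: "w0 \<in> - Lat" "f0 w0 = 0" by (auto simp: Z0_def)
  obtain g r n where "0 < n" "0 < r" "ball w0 r \<subseteq> - Lat" "g holomorphic_on ball w0 r"
      "\<And>w. w \<in> ball w0 r \<Longrightarrow> f0 w = (w - w0)^n * g w" "\<And>w. w \<in> ball w0 r \<Longrightarrow> g w \<noteq> 0"
    by (rule holomorphic_factor_zero_nonconstant[OF f0_holo open_nlat connected_nlat w f0_nonconst]) blast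
  then show ?thesis by (rule that)
qed

lemma Bp_ev: "\<forall>\<^sub>F w in at z. w \<notin> Bp"
proof (cases "z \<in> Lat")
  case True
  show ?thesis using f0_ev_lat[OF True] by eventually_elim (auto simp: Bp_def Z0_def)
next
  case False
  show ?thesis
  proof (cases "f0 z = 0")
    case True
    then have "z \<in> Z0" using False by (simp add: Z0_def)
    then obtain h r n where hr: "0 < n" "0 < r" "ball z r \<subseteq> - Lat" "h holomorphic_on ball z r"
      "\<And>w. w \<in> ball z r \<Longrightarrow> f0 w = (w - z)^n * h w" "\<And>w. w \<in> ball z r \<Longrightarrow> h w \<noteq> 0"
      by (rule f0_factor) blast
    show ?thesis using eventually_at_ball'[OF hr(2), of z UNIV]
      by eventually_elim (use hr in \<open>auto simp: Bp_def Z0_def\<close>)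
  next
    case nz: False
    have "isCont f0 z" using f0_holo open_nlat False
      by (meson ComplI continuous_on_eq_continuous_at holomorphic_on_imp_continuous_on)
    then have "\<forall>\<^sub>F w in at z. f0 w \<noteq> 0"
      using nz by (metis isCont_def tendsto_imp_eventually_ne)
    then show ?thesis using lat_ev[of z] by eventually_elim (auto simp: Bp_def Z0_def)
  qed
qed

lemma Bp_inv: "z \<in> Bp \<Longrightarrow> p \<in> Lat \<Longrightarrow> z + p \<in> Bp"
  using lat_add f0_per lat_add_iff1 by (auto simp: Bp_def Z0_def)

lemma Bp_fin: "finite (Kf \<inter> Bp)"
  by (rule finite_not_islimpt_in_compact[OF Kf_compact]) (use Bp_ev islimpt_iff_eventually in blast)

lemma Bp_good: "good Bp"
proof -
  have "Bp \<subseteq> (\<lambda>(a, p). a + p) ` ((Kf \<inter> Bp) \<times> Lat)"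
  proof
    fix b assume b: "b \<in> Bp"
    have "- (b - rep0 b) \<in> Lat" using rep0_lat[of b] by (rule lat_uminus)
    then have "b + - (b - rep0 b) \<in> Bp" by (rule Bp_inv[OF b])
    then have "rep0 b \<in> Bp" by simp
    then show "b \<in> (\<lambda>(a, p). a + p) ` ((Kf \<inter> Bp) \<times> Lat)"
      using rep0_K[of b] rep0_lat[of b] by (intro image_eqI[of _ _ "(rep0 b, b - rep0 b)"]) auto
  qed
  moreover have "countable ((\<lambda>(a, p). a + p) ` ((Kf \<inter> Bp) \<times> Lat))"
    using Bp_fin countable_lat by (intro countable_image countable_SIGMA) (auto intro: countable_finite)
  ultimately have "countable Bp" by (rule countable_subset)
  then show ?thesis unfolding good_def using Bp_ev Bp_inv islimpt_iff_eventually by blast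
qed

definition Qp :: "complex set" where "Qp = insert 0 (Z0 \<inter> F0d)"

lemma Qp_fin: "finite Qp"
proof -
  have "Z0 \<inter> F0d \<subseteq> Kf \<inter> Bp" using F0d_K by (auto simp: Bp_def)
  then have "finite (Z0 \<inter> F0d)" by (rule finite_subset[OF _ Bp_fin])
  then show ?thesis by (simp add: Qp_def)
qed

lemma Qp_sub: "Qp \<subseteq> Bp" by (auto simp: Qp_def Bp_def)

lemma Qp_reps: "b \<in> Bp \<Longrightarrow> \<exists>!q. q \<in> Qp \<and> b - q \<in> Lat"
proof -
  assume b: "b \<in> Bp"
  have ex: "rep0 b \<in> Qp"
  proof (cases "b \<in> Lat")
    case True then show ?thesis by (simp add: rep0_in_lat Qp_def)
  next
    case False
    then have bZ: "b \<in> Z0" using b by (simp add: Bp_def)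
    have d: "- (b - rep0 b) \<in> Lat" using rep0_lat by (rule lat_uminus)
    have e: "b + - (b - rep0 b) = rep0 b" by simp
    have "rep0 b \<notin> Lat" using lat_add_iff1[OF d, of b] bZ unfolding e by (simp add: Z0_def)
    moreover have "f0 (rep0 b) = 0" using f0_per[OF _ d, of b] bZ unfolding e by (simp add: Z0_def)
    ultimately have "rep0 b \<in> Z0" by (simp add: Z0_def)
    then show ?thesis using rep0_F by (simp add: Qp_def)
  qed
  have QF: "Qp \<subseteq> F0d" using F0d_0 by (auto simp: Qp_def)
  show ?thesis
  proof (rule ex1I[of _ "rep0 b"])
    show "rep0 b \<in> Qp \<and> b - rep0 b \<in> Lat" using ex rep0_lat by simp
    fix q assume q: "q \<in> Qp \<and> b - q \<in> Lat"
    have "q - rep0 b = (b - rep0 b) - (b - q)" by simp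
    then have "q - rep0 b \<in> Lat" using q rep0_lat[of b] lat_diff by metis
    then show "q = rep0 b" using F0d_unique[of q "rep0 b"] q QF rep0_F by auto
  qed
qed

lemma gfun_holo: "gfun holomorphic_on - Bp"
proof -
  have "(\<lambda>w. D w / f0 w) holomorphic_on - Bp"
    by (intro holomorphic_on_divide holomorphic_on_subset[OF D_holo] holomorphic_on_subset[OF f0_holo])
       (auto simp: Bp_def Z0_def)
  then show ?thesis by (simp add: gfun_def[abs_def])
qed

lemma gfun_per: "z \<notin> Bp \<Longrightarrow> p \<in> Lat \<Longrightarrow> gfun (z + p) = gfun z"
  by (simp add: gfun_def D_periodic f0_per Bp_def)

lemma gfun_lim0: "((\<lambda>w. (w - 0) * gfun w) \<longlongrightarrow> -2) (at 0)"
proof -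
  have "((\<lambda>w. (w^3 * D w) / (w^2 * f0 w)) \<longlongrightarrow> -2 / 1) (at 0)"
    by (intro tendsto_intros D_lim0 f0_lim0) simp
  moreover have "\<forall>\<^sub>F w in at 0. (w^3 * D w) / (w^2 * f0 w) = (w - 0) * gfun w"
    using ev_ne0[of 0] by eventually_elim (simp add: gfun_def power2_eq_square power3_eq_cube field_simps)
  ultimately show ?thesis using Lim_transform_eventually by fastforce
qed

lemma gfun_limZ:
  assumes q: "q \<in> Z0"
  shows "\<exists>n>0. ((\<lambda>w. (w - q) * gfun w) \<longlongrightarrow> of_nat n) (at q)"
proof -
  obtain h r n where hr: "0 < n" "0 < r" "ball q r \<subseteq> - Lat" "h holomorphic_on ball q r"
      "\<And>w. w \<in> ball q r \<Longrightarrow> f0 w = (w - q)^n * h w" "\<And>w. w \<in> ball q r \<Longrightarrow> h w \<noteq> 0"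
    by (rule f0_factor[OF q]) blast
  have "((\<lambda>w. (w - q) * (D w / f0 w)) \<longlongrightarrow> of_nat n) (at q)"
    by (rule log_deriv_residue[OF hr(2,1,4,6,5)]) (use hr(3) f0_deriv in auto)
  then show ?thesis using hr(1) by (auto simp: gfun_def)
qed

end

lemma tendsto_shift_at:
  fixes f :: "complex \<Rightarrow> complex"
  assumes "((\<lambda>w. (w - p) * f w) \<longlongrightarrow> c) (at p)"
  shows "((\<lambda>z. (z - (p + d)) * f (z - d)) \<longlongrightarrow> c) (at (p + d))"
proof -
  have "((\<lambda>x. (x + d - (p + d)) * f (x + d - d)) \<longlongrightarrow> c) (at p)" using assms by simp
  then have "((\<lambda>z. (z - (p + d)) * f (z - d)) \<longlongrightarrow> c) (filtermap (\<lambda>x. x - (-d)) (at p))"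
    by (simp add: filterlim_filtermap)
  then show ?thesis unfolding filtermap_at_shift by simp
qed

context ell2
begin

lemma rep0_Z0: "z \<in> Z0 \<Longrightarrow> rep0 z \<in> Z0"
proof -
  assume bZ: "z \<in> Z0"
  have d: "- (z - rep0 z) \<in> Lat" using rep0_lat by (rule lat_uminus)
  have e: "z + - (z - rep0 z) = rep0 z" by simp
  have "rep0 z \<notin> Lat" using lat_add_iff1[OF d, of z] bZ unfolding e by (simp add: Z0_def)
  moreover have "f0 (rep0 z) = 0" using f0_per[OF _ d, of z] bZ unfolding e by (simp add: Z0_def)
  ultimately show "rep0 z \<in> Z0" by (simp add: Z0_def)
qed

definition ordz :: "complex \<Rightarrow> nat" where
  "ordz q = (SOME n. n > 0 \<and> ((\<lambda>w. (w - q) * gfun w) \<longlongrightarrow> of_nat n) (at q))"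

lemma ordz: "q \<in> Z0 \<Longrightarrow> ordz q > 0 \<and> ((\<lambda>w. (w - q) * gfun w) \<longlongrightarrow> of_nat (ordz q)) (at q)"
  unfolding ordz_def by (rule someI_ex) (rule gfun_limZ)

definition rr :: "complex \<Rightarrow> complex" where "rr q = (if q = 0 then -2 else of_nat (ordz q))"

lemma alpha_Z0: "\<alpha> \<in> Z0" using a1 by (simp add: Z0_def f0_def)
lemma malpha_Z0: "- \<alpha> \<in> Z0" using a1 by (simp add: Z0_def f0_def wp_even)

lemma zero_count: "Z0 \<inter> F0d = {rep0 \<alpha>, rep0 (-\<alpha>)} \<and> ordz (rep0 \<alpha>) = 1 \<and> ordz (rep0 (-\<alpha>)) = 1"
proof -
  have z0: "0 \<notin> Z0" by (simp add: Z0_def)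
  have RS: "(\<Sum>q\<in>Qp. rr q) = 0"
  proof (rule residue_sum_zero[OF Bp_good Qp_fin Qp_sub Qp_reps gfun_holo gfun_per])
    fix q assume q: "q \<in> Qp"
    show "((\<lambda>z. (z - q) * gfun z) \<longlongrightarrow> rr q) (at q)"
    proof (cases "q = 0")
      case True then show ?thesis using gfun_lim0 by (simp add: rr_def)
    next
      case False
      then have "q \<in> Z0" using q by (simp add: Qp_def)
      then show ?thesis using ordz[of q] False by (simp add: rr_def)
    qed
  qed
  have fin: "finite (Z0 \<inter> F0d)" using Qp_fin by (simp add: Qp_def)
  have "(\<Sum>q\<in>Qp. rr q) = rr 0 + (\<Sum>q\<in>Z0 \<inter> F0d. rr q)"
    unfolding Qp_def using fin z0 by (subst sum.insert) auto
  also have "(\<Sum>q\<in>Z0 \<inter> F0d. rr q) = (\<Sum>q\<in>Z0 \<inter> F0d. of_nat (ordz q))"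
    using z0 by (intro sum.cong) (auto simp: rr_def)
  also have "\<dots> = of_nat (\<Sum>q\<in>Z0 \<inter> F0d. ordz q)" by simp
  finally have "-2 + (of_nat (\<Sum>q\<in>Z0 \<inter> F0d. ordz q) :: complex) = 0" using RS by (simp add: rr_def)
  then have "(of_nat (\<Sum>q\<in>Z0 \<inter> F0d. ordz q) :: complex) = of_nat 2" by (simp add: algebra_simps)
  then have s2: "(\<Sum>q\<in>Z0 \<inter> F0d. ordz q) = 2" by (simp only: of_nat_eq_iff)
  have aZ: "rep0 \<alpha> \<in> Z0 \<inter> F0d" using rep0_Z0[OF alpha_Z0] rep0_F by simp
  have bZ: "rep0 (-\<alpha>) \<in> Z0 \<inter> F0d" using rep0_Z0[OF malpha_Z0] rep0_F by simp
  have ne: "rep0 \<alpha> \<noteq> rep0 (-\<alpha>)"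
  proof
    assume eq: "rep0 \<alpha> = rep0 (-\<alpha>)"
    have "2 * \<alpha> = (\<alpha> - rep0 \<alpha>) - (- \<alpha> - rep0 (-\<alpha>))" using eq by simp
    then have "2 * \<alpha> \<in> Lat" using rep0_lat[of \<alpha>] rep0_lat[of "-\<alpha>"] lat_diff by metis
    then show False using a2 by simp
  qed
  have pos: "\<And>x. x \<in> Z0 \<inter> F0d \<Longrightarrow> ordz x \<ge> 1" using ordz by (simp add: Suc_le_eq)
  from count_two[OF fin aZ bZ ne pos s2] show ?thesis by simp
qed

lemma f0_zero: "w \<notin> Lat \<Longrightarrow> f0 w = 0 \<Longrightarrow> w - \<alpha> \<in> Lat \<or> w + \<alpha> \<in> Lat"
proof -
  assume w: "w \<notin> Lat" "f0 w = 0"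
  then have "w \<in> Z0" by (simp add: Z0_def)
  then have "rep0 w \<in> Z0 \<inter> F0d" using rep0_Z0 rep0_F by simp
  then have "rep0 w = rep0 \<alpha> \<or> rep0 w = rep0 (-\<alpha>)" using zero_count by blast
  then show ?thesis
  proof
    assume "rep0 w = rep0 \<alpha>"
    then have "w - \<alpha> = (w - rep0 w) - (\<alpha> - rep0 \<alpha>)" by simp
    then show ?thesis using rep0_lat[of w] rep0_lat[of \<alpha>] lat_diff by metis
  next
    assume "rep0 w = rep0 (-\<alpha>)"
    then have "w + \<alpha> = (w - rep0 w) - (-\<alpha> - rep0 (-\<alpha>))" by simp
    then show ?thesis using rep0_lat[of w] rep0_lat[of "-\<alpha>"] lat_diff by metis
  qed
qed

lemma Bp_char: "z \<in> Bp \<longleftrightarrow> z \<in> Lat \<or> z - \<alpha> \<in> Lat \<or> z + \<alpha> \<in> Lat"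
proof
  assume "z \<in> Bp"
  then show "z \<in> Lat \<or> z - \<alpha> \<in> Lat \<or> z + \<alpha> \<in> Lat" using f0_zero by (auto simp: Bp_def Z0_def)
next
  assume z: "z \<in> Lat \<or> z - \<alpha> \<in> Lat \<or> z + \<alpha> \<in> Lat"
  show "z \<in> Bp"
  proof (cases "z \<in> Lat")
    case True then show ?thesis by (simp add: Bp_def)
  next
    case False
    then have c: "z - \<alpha> \<in> Lat \<or> z + \<alpha> \<in> Lat" using z by simp
    then show ?thesis
    proof
      assume d: "z - \<alpha> \<in> Lat"
      have "f0 (\<alpha> + (z - \<alpha>)) = f0 \<alpha>" by (rule f0_per[OF a1 d])
      then have "f0 z = 0" by (simp add: f0_def)
      then show ?thesis using False by (simp add: Bp_def Z0_def)
    next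
      assume d: "z + \<alpha> \<in> Lat"
      have "f0 (- \<alpha> + (z + \<alpha>)) = f0 (-\<alpha>)" by (rule f0_per[OF _ d]) (use a1 in simp)
      then have "f0 z = 0" by (simp add: f0_def wp_even)
      then show ?thesis using False by (simp add: Bp_def Z0_def)
    qed
  qed
qed

definition rho :: "complex \<Rightarrow> complex" where
  "rho p = (if p \<in> Lat then -2 else if p - \<alpha> \<in> Lat then 1 else if p + \<alpha> \<in> Lat then 1 else 0)"

lemma gfun_rho: "((\<lambda>w. (w - p) * gfun w) \<longlongrightarrow> rho p) (at p)"
proof -
  have per: "\<And>z p. z \<notin> Bp \<Longrightarrow> p \<in> Lat \<Longrightarrow> gfun (z + p) = gfun z" by (rule gfun_per)
  have L0: "((\<lambda>w. (w - 0)^1 * gfun w) \<longlongrightarrow> -2) (at 0)" using gfun_lim0 by simp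
  have La: "((\<lambda>w. (w - rep0 \<alpha>)^1 * gfun w) \<longlongrightarrow> 1) (at (rep0 \<alpha>))"
    using ordz[of "rep0 \<alpha>"] zero_count rep0_Z0[OF alpha_Z0] by simp
  have Lb: "((\<lambda>w. (w - rep0 (-\<alpha>))^1 * gfun w) \<longlongrightarrow> 1) (at (rep0 (-\<alpha>)))"
    using ordz[of "rep0 (-\<alpha>)"] zero_count rep0_Z0[OF malpha_Z0] by simp
  show ?thesis
  proof (cases "p \<in> Lat")
    case True
    have "((\<lambda>w. (w - (0 + p))^1 * gfun w) \<longlongrightarrow> -2) (at (0 + p))"
      by (rule lim_shift[OF Bp_good per True L0])
    then show ?thesis using True by (simp add: rho_def)
  next
    case nl: False
    show ?thesis
    proof (cases "p - \<alpha> \<in> Lat")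
      case True
      have d: "p - rep0 \<alpha> \<in> Lat"
      proof -
        have "p - rep0 \<alpha> = (p - \<alpha>) + (\<alpha> - rep0 \<alpha>)" by simp
        then show ?thesis using True rep0_lat[of \<alpha>] lat_add by metis
      qed
      have "((\<lambda>w. (w - (rep0 \<alpha> + (p - rep0 \<alpha>)))^1 * gfun w) \<longlongrightarrow> 1) (at (rep0 \<alpha> + (p - rep0 \<alpha>)))"
        by (rule lim_shift[OF Bp_good per d La])
      then show ?thesis using True nl by (simp add: rho_def)
    next
      case nl2: False
      show ?thesis
      proof (cases "p + \<alpha> \<in> Lat")
        case True
        have d: "p - rep0 (-\<alpha>) \<in> Lat"
        proof -
          have "p - rep0 (-\<alpha>) = (p + \<alpha>) + (-\<alpha> - rep0 (-\<alpha>))" by simp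
          then show ?thesis using True rep0_lat[of "-\<alpha>"] lat_add by metis
        qed
        have "((\<lambda>w. (w - (rep0 (-\<alpha>) + (p - rep0 (-\<alpha>))))^1 * gfun w) \<longlongrightarrow> 1) (at (rep0 (-\<alpha>) + (p - rep0 (-\<alpha>))))"
          by (rule lim_shift[OF Bp_good per d Lb])
        then show ?thesis using True nl nl2 by (simp add: rho_def)
      next
        case False
        then have pB: "p \<notin> Bp" using nl nl2 Bp_char by blast
        have "isCont gfun p" using gfun_holo good_open[OF Bp_good] pB
          by (meson ComplI continuous_on_eq_continuous_at holomorphic_on_imp_continuous_on)
        then have "((\<lambda>w. (w - p) * gfun w) \<longlongrightarrow> (p - p) * gfun p) (at p)"
          by (intro tendsto_intros) (auto simp: isCont_def)
        then show ?thesis using False nl nl2 by (simp add: rho_def)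
      qed
    qed
  qed
qed

lemma gfun_odd: "gfun (- w) = - gfun w"
  by (simp add: gfun_def f0_def D_odd wp_even)

end

lemma sum_shift_periodic:
  fixes \<phi> :: "nat \<Rightarrow> 'a::ab_group_add"
  assumes "\<phi> N = \<phi> 0"
  shows "(\<Sum>k<N. \<phi> (Suc k)) = (\<Sum>k<N. \<phi> k)"
proof -
  have "(\<Sum>k<Suc N. \<phi> k) = \<phi> 0 + (\<Sum>k<N. \<phi> (Suc k))" by (rule sum.lessThan_Suc_shift)
  moreover have "(\<Sum>k<Suc N. \<phi> k) = (\<Sum>k<N. \<phi> k) + \<phi> N" by simp
  ultimately show ?thesis using assms by (simp add: algebra_simps)
qed

locale ellN = ell +
  fixes \<alpha> :: complex and N :: nat
  assumes eo: "exact_order \<tau> \<alpha> N" and N3: "N \<ge> 3"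
begin

lemma Npos: "N > 0" using N3 by simp

lemma Nalpha: "of_nat N * \<alpha> \<in> Lat" using eo by (simp add: exact_order_def)

lemma small_alpha: "0 < k \<Longrightarrow> k < N \<Longrightarrow> of_nat k * \<alpha> \<notin> Lat"
  using eo by (simp add: exact_order_def)

lemma alpha_nl: "\<alpha> \<notin> Lat" using small_alpha[of 1] N3 by simp
lemma alpha2_nl: "2 * \<alpha> \<notin> Lat" using small_alpha[of 2] N3 by simp

sublocale ell2 \<tau> \<alpha>
  by unfold_locales (rule alpha_nl, rule alpha2_nl)

lemma nat_alpha_lat: "of_nat k * \<alpha> \<in> Lat \<longleftrightarrow> N dvd k"
proof -
  have e: "of_nat k * \<alpha> = of_nat (k div N) * (of_nat N * \<alpha>) + of_nat (k mod N) * \<alpha>"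
  proof -
    have "k = (k div N) * N + k mod N" by simp
    then have "(of_nat k :: complex) = of_nat (k div N) * of_nat N + of_nat (k mod N)"
      by (metis of_nat_add of_nat_mult)
    then show ?thesis by (simp add: algebra_simps)
  qed
  have l: "of_nat (k div N) * (of_nat N * \<alpha>) \<in> Lat" by (rule lat_of_nat_mult[OF Nalpha])
  have "of_nat k * \<alpha> \<in> Lat \<longleftrightarrow> of_nat (k mod N) * \<alpha> \<in> Lat"
    unfolding e using lat_add_iff1[of "of_nat (k div N) * (of_nat N * \<alpha>)" "of_nat (k mod N) * \<alpha>"] l
    by (simp add: add.commute)
  also have "\<dots> \<longleftrightarrow> k mod N = 0"
  proof
    assume "of_nat (k mod N) * \<alpha> \<in> Lat"
    then show "k mod N = 0" using small_alpha[of "k mod N"] Npos by (metis mod_less_divisor neq0_conv)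
  qed simp
  finally show ?thesis by (simp add: dvd_eq_mod_eq_0)
qed

lemma int_alpha_lat: "of_int k * \<alpha> \<in> Lat \<longleftrightarrow> int N dvd k"
proof (cases "k \<ge> 0")
  case True
  then obtain n where "k = int n" using nonneg_int_cases by blast
  then show ?thesis using nat_alpha_lat[of n] by simp
next
  case False
  then obtain n where k: "k = - int n" by (intro that[of "nat (-k)"]) simp
  have "of_int k * \<alpha> = - (of_nat n * \<alpha>)" by (simp add: k)
  then show ?thesis using nat_alpha_lat[of n] by (simp add: k)
qed

definition Bs :: "complex set" where "Bs = {z. \<exists>k<N. z - of_nat k * \<alpha> \<in> Lat}"

lemma Bs_punct: "Bs = - punctured \<tau> \<alpha> N" by (auto simp: Bs_def punctured_def)

lemma Bs_int: "z \<in> Bs \<longleftrightarrow> (\<exists>k::int. z - of_int k * \<alpha> \<in> Lat)"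
proof
  assume "z \<in> Bs"
  then obtain k where "k < N" "z - of_nat k * \<alpha> \<in> Lat" by (auto simp: Bs_def)
  then show "\<exists>k::int. z - of_int k * \<alpha> \<in> Lat" by (intro exI[of _ "int k"]) simp
next
  assume "\<exists>k::int. z - of_int k * \<alpha> \<in> Lat"
  then obtain k :: int where k: "z - of_int k * \<alpha> \<in> Lat" by blast
  define r where "r = k mod int N"
  have r: "0 \<le> r" "r < int N" using Npos by (auto simp: r_def)
  have "of_int (k - r) * \<alpha> \<in> Lat" by (subst int_alpha_lat) (simp add: r_def mod_eq_dvd_iff)
  then have "(z - of_int k * \<alpha>) + of_int (k - r) * \<alpha> \<in> Lat" using k lat_add by blast
  then have "z - of_nat (nat r) * \<alpha> \<in> Lat" using r by (simp add: algebra_simps)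
  then show "z \<in> Bs" using r unfolding Bs_def by (intro CollectI exI[of _ "nat r"]) auto
qed

lemma Bs_shift_alpha: "z \<in> Bs \<longleftrightarrow> z - of_int k * \<alpha> \<in> Bs"
proof
  assume "z \<in> Bs"
  then obtain m :: int where "z - of_int m * \<alpha> \<in> Lat" by (auto simp: Bs_int)
  then have "(z - of_int k * \<alpha>) - of_int (m - k) * \<alpha> \<in> Lat" by (simp add: algebra_simps)
  then show "z - of_int k * \<alpha> \<in> Bs" unfolding Bs_int by blast
next
  assume "z - of_int k * \<alpha> \<in> Bs"
  then obtain m :: int where "z - of_int k * \<alpha> - of_int m * \<alpha> \<in> Lat" by (auto simp: Bs_int)
  then have "z - of_int (k + m) * \<alpha> \<in> Lat" by (simp add: algebra_simps)
  then show "z \<in> Bs" unfolding Bs_int by blast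
qed

lemma Bs_lat: "p \<in> Lat \<Longrightarrow> z + p \<in> Bs \<longleftrightarrow> z \<in> Bs"
proof -
  assume p: "p \<in> Lat"
  have "(z + p) - of_nat k * \<alpha> \<in> Lat \<longleftrightarrow> z - of_nat k * \<alpha> \<in> Lat" for k
    using lat_add_iff1[OF p, of "z - of_nat k * \<alpha>"] by (simp add: algebra_simps)
  then show ?thesis by (simp add: Bs_def)
qed

lemma Bs_N: "z \<in> Bs \<Longrightarrow> of_nat N * z \<in> Lat"
proof -
  assume "z \<in> Bs"
  then obtain k where k: "z - of_nat k * \<alpha> \<in> Lat" by (auto simp: Bs_def)
  have "of_nat N * z = of_nat N * (z - of_nat k * \<alpha>) + of_nat k * (of_nat N * \<alpha>)"
    by (simp add: algebra_simps)
  then show ?thesis using lat_of_nat_mult[OF k, of N] lat_of_nat_mult[OF Nalpha, of k] lat_add by metis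
qed

lemma Bs_good: "good Bs"
proof -
  have nl: "\<not> z islimpt Bs" for z
  proof
    assume "z islimpt Bs"
    then have inf: "infinite (Bs \<inter> cball z 1)" by (auto simp: islimpt_eq_infinite_cball)
    have inj: "inj_on (\<lambda>w. of_nat N * w) (Bs \<inter> cball z 1)" using Npos by (auto simp: inj_on_def)
    have sub: "(\<lambda>w. of_nat N * w) ` (Bs \<inter> cball z 1) \<subseteq> {\<omega>\<in>Lat. norm \<omega> \<le> real N * (norm z + 1)}"
    proof
      fix y assume "y \<in> (\<lambda>w. of_nat N * w) ` (Bs \<inter> cball z 1)"
      then obtain w where w: "w \<in> Bs" "dist z w \<le> 1" "y = of_nat N * w" by auto
      have "norm w \<le> norm z + 1" using w(2) norm_triangle_ineq2[of w z] by (simp add: dist_norm norm_minus_commute)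
      then have "norm y \<le> real N * (norm z + 1)" using w(3) by (simp add: norm_mult mult_left_mono)
      then show "y \<in> {\<omega>\<in>Lat. norm \<omega> \<le> real N * (norm z + 1)}" using Bs_N[OF w(1)] w(3) by simp
    qed
    have "finite ((\<lambda>w. of_nat N * w) ` (Bs \<inter> cball z 1))" by (rule finite_subset[OF sub lat_ball_finite])
    then have "finite (Bs \<inter> cball z 1)" using inj by (rule finite_imageD)
    then show False using inf by simp
  qed
  have "Bs \<subseteq> (\<lambda>(p, k). p + of_nat k * \<alpha>) ` (Lat \<times> (UNIV::nat set))"
  proof
    fix x assume "x \<in> Bs"
    then obtain k where "x - of_nat k * \<alpha> \<in> Lat" by (auto simp: Bs_def)
    then show "x \<in> (\<lambda>(p, k). p + of_nat k * \<alpha>) ` (Lat \<times> (UNIV::nat set))"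
      by (intro image_eqI[of _ _ "(x - of_nat k * \<alpha>, k)"]) auto
  qed
  moreover have "countable ((\<lambda>(p, k). p + of_nat k * \<alpha>) ` (Lat \<times> (UNIV::nat set)))"
    using countable_lat by (intro countable_image countable_SIGMA) auto
  ultimately have "countable Bs" by (rule countable_subset)
  moreover have "\<forall>z\<in>Bs. \<forall>p\<in>Lat. z + p \<in> Bs" using Bs_lat by blast
  ultimately show ?thesis using nl by (simp add: good_def)
qed

definition pm :: "nat \<Rightarrow> complex" where "pm k = of_nat k * \<alpha>"

lemma pm_Bs: "pm k \<in> Bs" if "k < N" for k
  using that by (auto simp: Bs_def pm_def intro!: exI[of _ k])

lemma pm_diff_lat: "k < N \<Longrightarrow> k' < N \<Longrightarrow> pm k - pm k' \<in> Lat \<Longrightarrow> k = k'"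
proof -
  assume k: "k < N" "k' < N" "pm k - pm k' \<in> Lat"
  then have "of_int (int k - int k') * \<alpha> \<in> Lat" by (simp add: pm_def algebra_simps)
  then have d: "int N dvd (int k - int k')" using int_alpha_lat by blast
  have lt: "\<bar>int k - int k'\<bar> < int N" using k by auto
  show "k = k'"
  proof (rule ccontr)
    assume "k \<noteq> k'"
    then have "int k - int k' \<noteq> 0" by simp
    from dvd_imp_le_int[OF this d] have "\<bar>int N\<bar> \<le> \<bar>int k - int k'\<bar>" .
    then show False using lt by simp
  qed
qed

lemma pm_inj: "inj_on pm {..<N}"
proof
  fix k k' assume k: "k \<in> {..<N}" "k' \<in> {..<N}" "pm k = pm k'"
  then show "k = k'" using pm_diff_lat[of k k'] by simp
qed

lemma Q_reps: "b \<in> Bs \<Longrightarrow> \<exists>!q. q \<in> pm ` {..<N} \<and> b - q \<in> Lat"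
proof -
  assume "b \<in> Bs"
  then obtain k where k: "k < N" "b - pm k \<in> Lat" by (auto simp: Bs_def pm_def)
  show ?thesis
  proof (rule ex1I[of _ "pm k"])
    show "pm k \<in> pm ` {..<N} \<and> b - pm k \<in> Lat" using k by auto
    fix q assume q: "q \<in> pm ` {..<N} \<and> b - q \<in> Lat"
    then obtain k' where k': "k' < N" "q = pm k'" by auto
    have "pm k - pm k' = (b - pm k') - (b - pm k)" by simp
    then have "pm k - pm k' \<in> Lat" using q k k' lat_diff by metis
    then have "k = k'" using pm_diff_lat k k' by blast
    then show "q = pm k" using k' by simp
  qed
qed

lemma RS_N:
  assumes h: "f holomorphic_on - Bs" and per: "\<And>z p. z \<notin> Bs \<Longrightarrow> p \<in> Lat \<Longrightarrow> f (z + p) = f z"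
    and lim: "\<And>m. m < N \<Longrightarrow> ((\<lambda>z. (z - pm m) * f z) \<longlongrightarrow> v m) (at (pm m))"
  shows "(\<Sum>m<N. v m) = 0"
proof -
  define r where "r = (\<lambda>q. v (the_inv_into {..<N} pm q))"
  have rq: "r (pm m) = v m" if "m < N" for m
    using that pm_inj by (simp add: r_def the_inv_into_f_f)
  have "(\<Sum>q\<in>pm ` {..<N}. r q) = 0"
  proof (rule residue_sum_zero[OF Bs_good _ _ Q_reps h per])
    show "finite (pm ` {..<N})" by simp
    show "pm ` {..<N} \<subseteq> Bs" using pm_Bs by auto
    fix q assume "q \<in> pm ` {..<N}"
    then obtain m where m: "m < N" "q = pm m" by auto
    then show "((\<lambda>z. (z - q) * f z) \<longlongrightarrow> r q) (at q)" using lim[OF m(1)] rq[OF m(1)] by simp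
  qed (auto)
  then show ?thesis using pm_inj by (simp add: sum.reindex rq)
qed

end

context ellN
begin

abbreviation "om \<equiv> root_unity N"

lemma om_powi: "om powi a = exp (of_int a * (2 * of_real pi * \<i> / of_nat N))"
  by (simp add: root_unity_def exp_power_int)

lemma om_nz: "om powi a \<noteq> 0" by (simp add: om_powi)

lemma om_ne0: "om \<noteq> 0" by (simp add: root_unity_def)

lemma om_one_iff: "om powi a = 1 \<longleftrightarrow> int N dvd a"
proof -
  have "om powi a = 1 \<longleftrightarrow> (\<exists>n::int. real_of_int a * (2 * pi) / real N = 2 * real_of_int n * pi)"
    unfolding om_powi exp_eq_1 by simp
  also have "\<dots> \<longleftrightarrow> (\<exists>n::int. (of_int a :: real) = of_int (n * int N))"
  proof -
    have "real_of_int a * (2 * pi) / real N = 2 * real_of_int n * pi \<longleftrightarrow> (of_int a :: real) = of_int (n * int N)" for n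
    proof -
      have "real_of_int a * (2 * pi) / real N = 2 * real_of_int n * pi \<longleftrightarrow>
          real_of_int a * (2 * pi) = (real_of_int n * real N) * (2 * pi)"
        using Npos by (simp add: divide_eq_eq algebra_simps)
      also have "\<dots> \<longleftrightarrow> real_of_int a = real_of_int n * real N" using pi_gt_zero by simp
      finally show ?thesis by simp
    qed
    then show ?thesis by simp
  qed
  also have "\<dots> \<longleftrightarrow> int N dvd a" by (auto simp: dvd_def mult.commute simp del: of_int_mult)
  finally show ?thesis .
qed

lemma om_add: "om powi (a + b) = om powi a * om powi b"
  using om_ne0 by (simp add: power_int_add)

lemma om_cong: "a mod int N = b mod int N \<Longrightarrow> om powi a = om powi b"
proof -
  assume e: "a mod int N = b mod int N"
  have "int N dvd (a - b)" using e by (simp add: mod_eq_dvd_iff)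
  then have "om powi (a - b) = 1" by (simp add: om_one_iff)
  have "om powi a = om powi ((a - b) + b)" by simp
  also have "\<dots> = om powi (a - b) * om powi b" by (rule om_add)
  finally show ?thesis using \<open>om powi (a - b) = 1\<close> by simp
qed

lemma om_minus: "om powi (- a) = inverse (om powi a)" by (rule power_int_minus)

lemma om_orth: "(\<Sum>s<N. om powi (int s * a)) = (if int N dvd a then of_nat N else 0)"
proof (cases "int N dvd a")
  case True
  then have "om powi (int s * a) = 1" for s by (simp add: om_one_iff)
  then show ?thesis using True by simp
next
  case False
  define x where "x = om powi a"
  have x1: "x \<noteq> 1" using False by (simp add: x_def om_one_iff)
  have "om powi (int s * a) = x ^ s" for s
    by (simp add: x_def power_int_mult mult.commute[of "int s"] power_int_of_nat[symmetric] om_ne0 del: power_int_of_nat)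
  then have "(\<Sum>s<N. om powi (int s * a)) = (\<Sum>s<N. x ^ s)" by simp
  also have "\<dots> = (x ^ N - 1) / (x - 1)" by (rule geometric_sum[OF x1])
  also have "x ^ N = om powi (a * int N)"
    by (simp add: x_def power_int_mult power_int_of_nat[symmetric] om_ne0 del: power_int_of_nat)
  also have "\<dots> = 1" by (simp add: om_one_iff)
  finally show ?thesis using False by simp
qed

definition cj :: "int \<Rightarrow> complex" where "cj j = om powi j + om powi (- j) - 2"

lemma cj_neg: "cj (- j) = cj j" by (simp add: cj_def)

lemma cj_nz: "\<not> int N dvd j \<Longrightarrow> cj j \<noteq> 0"
proof -
  assume nd: "\<not> int N dvd j"
  define x where "x = om powi j"
  have x0: "x \<noteq> 0" unfolding x_def by (rule om_nz)
  have x1: "x \<noteq> 1" using nd by (simp add: x_def om_one_iff)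
  have "cj j = (x - 1)^2 / x" using x0 by (simp add: cj_def x_def[symmetric] om_minus field_simps power2_eq_square)
  then show ?thesis using x0 x1 by simp
qed

lemma notBs_shift: "z \<notin> Bs \<Longrightarrow> z - of_nat k * \<alpha> \<notin> Bp"
proof
  assume z: "z \<notin> Bs" and b: "z - of_nat k * \<alpha> \<in> Bp"
  have "z - of_int (int k) * \<alpha> \<in> Lat \<or> z - of_int (int k + 1) * \<alpha> \<in> Lat \<or> z - of_int (int k - 1) * \<alpha> \<in> Lat"
    using b unfolding Bp_char by (simp add: algebra_simps)
  then show False using z Bs_int by blast
qed

lemma notBs_shift_lat: "z \<notin> Bs \<Longrightarrow> z - of_nat k * \<alpha> \<notin> Lat"
  using notBs_shift Bp_def by blast

definition Pf :: "int \<Rightarrow> complex \<Rightarrow> complex" where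
  "Pf j z = (\<Sum>k<N. om powi (- (int k * j)) * gfun (z - of_nat k * \<alpha>))"

lemma P_eq: "z \<notin> Bs \<Longrightarrow> P \<tau> \<alpha> N j z = Pf j z"
proof -
  assume z: "z \<notin> Bs"
  have "deriv (wp Lat) (z - of_nat k * \<alpha>) / (om powi (int k * j) * (wp Lat (z - of_nat k * \<alpha>) - wp Lat \<alpha>))
      = om powi (- (int k * j)) * gfun (z - of_nat k * \<alpha>)" for k
    using notBs_shift_lat[OF z, of k]
    by (simp add: deriv_wp gfun_def f0_def om_minus divide_inverse inverse_mult_distrib mult_ac)
  then show ?thesis by (simp add: P_def Pf_def)
qed

lemma gfun_shift_holo: "(\<lambda>z. gfun (z - c)) holomorphic_on S" if "\<And>z. z \<in> S \<Longrightarrow> z - c \<notin> Bp" for c S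
proof -
  have "(gfun \<circ> (\<lambda>z. z - c)) holomorphic_on S"
    by (rule holomorphic_on_compose_gen[OF _ gfun_holo]) (use that in \<open>auto intro!: holomorphic_intros\<close>)
  then show ?thesis by (simp add: o_def)
qed

lemma Pf_holo: "Pf j holomorphic_on - Bs"
  unfolding Pf_def[abs_def]
  by (intro holomorphic_intros gfun_shift_holo) (use notBs_shift in auto)

lemma Pf_per: "z \<notin> Bs \<Longrightarrow> p \<in> Lat \<Longrightarrow> Pf j (z + p) = Pf j z"
proof -
  assume z: "z \<notin> Bs" and p: "p \<in> Lat"
  have "gfun (z + p - of_nat k * \<alpha>) = gfun (z - of_nat k * \<alpha>)" for k
    using gfun_per[OF notBs_shift[OF z, of k] p] by (simp add: algebra_simps)
  then show ?thesis by (simp add: Pf_def)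
qed

lemma om_shift_cong:
  assumes "int k mod int N = (int m + d) mod int N"
  shows "om powi (- (int k * j)) = om powi (- (int m * j)) * om powi (- (d * j))"
proof -
  have "(- (int k * j)) mod int N = (- ((int m + d) * j)) mod int N"
    by (intro mod_minus_cong mod_mult_cong assms refl)
  then have "om powi (- (int k * j)) = om powi (- ((int m + d) * j))" by (rule om_cong)
  also have "- ((int m + d) * j) = - (int m * j) + - (d * j)" by (simp add: algebra_simps)
  finally show ?thesis using om_add[of "- (int m * j)" "- (d * j)"] by simp
qed

lemma sum_three:
  fixes f :: "nat \<Rightarrow> complex"
  assumes "a < N" "b < N" "c < N" "a \<noteq> b" "a \<noteq> c" "b \<noteq> c"
  shows "(\<Sum>k<N. f k * (if k = a then A else if k = b then B' else if k = c then C else 0))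
       = f a * A + f b * B' + f c * C"
proof -
  have "(\<Sum>k<N. f k * (if k = a then A else if k = b then B' else if k = c then C else 0))
      = (\<Sum>k<N. (if k = a then f k * A else 0) + (if k = b then f k * B' else 0) + (if k = c then f k * C else 0))"
    using assms by (intro sum.cong) auto
  also have "\<dots> = f a * A + f b * B' + f c * C"
    using assms by (simp add: sum.distrib)
  finally show ?thesis .
qed

lemma rho_pm:
  assumes m: "m < N" and k: "k < N"
  shows "rho (pm m - of_nat k * \<alpha>) =
    (if k = m then -2 else if k = (m + N - 1) mod N then 1 else if k = (m + 1) mod N then 1 else 0)"
proof -
  have e1: "pm m - of_nat k * \<alpha> = of_int (int m - int k) * \<alpha>" by (simp add: pm_def algebra_simps)
  have e2: "pm m - of_nat k * \<alpha> - \<alpha> = of_int (int m - int k - 1) * \<alpha>" by (simp add: pm_def algebra_simps)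
  have e3: "pm m - of_nat k * \<alpha> + \<alpha> = of_int (int m - int k + 1) * \<alpha>" by (simp add: pm_def algebra_simps)
  have c1: "int N dvd (int m - int k) \<longleftrightarrow> k = m"
  proof
    assume "int N dvd (int m - int k)"
    then have "of_int (int m - int k) * \<alpha> \<in> Lat" using int_alpha_lat by blast
    then have "pm m - pm k \<in> Lat" by (simp add: pm_def algebra_simps)
    then show "k = m" using pm_diff_lat[OF m k] by simp
  qed simp
  have c2: "int N dvd (int m - int k - 1) \<longleftrightarrow> k = (m + N - 1) mod N"
  proof -
    have "int N dvd (int m - int k - 1) \<longleftrightarrow> int N dvd (int (m + N - 1) - int k)"
    proof -
      have "int (m + N - 1) - int k = (int m - int k - 1) + int N" using Npos by simp
      then show ?thesis by (metis dvd_add_left_iff dvd_refl)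
    qed
    also have "\<dots> \<longleftrightarrow> int (m + N - 1) mod int N = int k mod int N"
      by (simp add: mod_eq_dvd_iff)
    also have "\<dots> \<longleftrightarrow> (m + N - 1) mod N = k"
    proof -
      have "int ((m + N - 1) mod N) = int (m + N - 1) mod int N" by (rule zmod_int)
      moreover have "int k mod int N = int k" using k by simp
      ultimately show ?thesis by (metis of_nat_eq_iff)
    qed
    finally show ?thesis by auto
  qed
  have c3: "int N dvd (int m - int k + 1) \<longleftrightarrow> k = (m + 1) mod N"
  proof -
    have "int N dvd (int m - int k + 1) \<longleftrightarrow> int N dvd (int (m + 1) - int k)" by (simp add: algebra_simps)
    also have "\<dots> \<longleftrightarrow> int (m + 1) mod int N = int k mod int N"
      by (simp add: mod_eq_dvd_iff)
    also have "\<dots> \<longleftrightarrow> (m + 1) mod N = k"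
    proof -
      have "int ((m + 1) mod N) = int (m + 1) mod int N" by (rule zmod_int)
      moreover have "int k mod int N = int k" using k by simp
      ultimately show ?thesis by (metis of_nat_eq_iff)
    qed
    finally show ?thesis by auto
  qed
  define x where "x = pm m - of_nat k * \<alpha>"
  have L1: "x \<in> Lat \<longleftrightarrow> k = m" unfolding x_def e1 int_alpha_lat c1 ..
  have L2: "x - \<alpha> \<in> Lat \<longleftrightarrow> k = (m + N - 1) mod N" unfolding x_def e2 int_alpha_lat c2 ..
  have L3: "x + \<alpha> \<in> Lat \<longleftrightarrow> k = (m + 1) mod N" unfolding x_def e3 int_alpha_lat c3 ..
  show ?thesis unfolding x_def[symmetric] rho_def L1 L2 L3 by simp
qed

lemma km_int: "int ((m + N - 1) mod N) = (int m - 1) mod int N"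
proof -
  have "int ((m + N - 1) mod N) = int (m + N - 1) mod int N" by (rule zmod_int)
  also have "int (m + N - 1) = (int m - 1) + int N" using Npos by simp
  also have "((int m - 1) + int N) mod int N = (int m - 1) mod int N" by simp
  finally show ?thesis .
qed

lemma Pf_res:
  assumes m: "m < N"
  shows "((\<lambda>z. (z - pm m) * Pf j z) \<longlongrightarrow> om powi (- (int m * j)) * cj j) (at (pm m))"
proof -
  define km where "km = (m + N - 1) mod N"
  define kp where "kp = (m + 1) mod N"
  have kmN: "km < N" "kp < N" using Npos by (auto simp: km_def kp_def)
  have dist: "m \<noteq> km" "m \<noteq> kp" "km \<noteq> kp"
  proof -
    show "m \<noteq> km"
    proof
      assume "m = km"
      then have "int m = int km" by simp
      also have "int km = (int m - 1) mod int N" using km_int by (simp add: km_def)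
      finally have "int m mod int N = (int m - 1) mod int N" using m by simp
      then have "int N dvd 1" by (simp add: mod_eq_dvd_iff)
      then show False using N3 by simp
    qed
    show "m \<noteq> kp"
    proof
      assume "m = kp"
      then have "int m = int kp" by simp
      also have "int kp = (int m + 1) mod int N" by (simp add: kp_def zmod_int add.commute)
      finally have "int m mod int N = (int m + 1) mod int N" using m by simp
      then have "int N dvd 1" by (simp add: mod_eq_dvd_iff)
      then show False using N3 by simp
    qed
    show "km \<noteq> kp"
    proof
      assume "km = kp"
      have "(int m - 1) mod int N = int km" using km_int by (simp add: km_def)
      also have "\<dots> = int kp" using \<open>km = kp\<close> by simp
      also have "\<dots> = (int m + 1) mod int N" by (simp add: kp_def zmod_int add.commute)
      finally have "(int m - 1) mod int N = (int m + 1) mod int N" .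
      then have "int N dvd 2" by (simp add: mod_eq_dvd_iff)
      then show False using N3 by (simp add: zdvd_not_zless)
    qed
  qed
  have lim_k: "((\<lambda>z. (z - pm m) * gfun (z - of_nat k * \<alpha>)) \<longlongrightarrow> rho (pm m - of_nat k * \<alpha>)) (at (pm m))" for k
    using tendsto_shift_at[OF gfun_rho, of "pm m - of_nat k * \<alpha>" "of_nat k * \<alpha>"] by simp
  have "((\<lambda>z. \<Sum>k<N. om powi (- (int k * j)) * ((z - pm m) * gfun (z - of_nat k * \<alpha>)))
      \<longlongrightarrow> (\<Sum>k<N. om powi (- (int k * j)) * rho (pm m - of_nat k * \<alpha>))) (at (pm m))"
    by (intro tendsto_sum tendsto_mult tendsto_const lim_k)
  moreover have "(\<lambda>z. \<Sum>k<N. om powi (- (int k * j)) * ((z - pm m) * gfun (z - of_nat k * \<alpha>)))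
      = (\<lambda>z. (z - pm m) * Pf j z)"
    by (simp add: Pf_def sum_distrib_left mult_ac)
  moreover have "(\<Sum>k<N. om powi (- (int k * j)) * rho (pm m - of_nat k * \<alpha>)) = om powi (- (int m * j)) * cj j"
  proof -
    have "(\<Sum>k<N. om powi (- (int k * j)) * rho (pm m - of_nat k * \<alpha>))
        = (\<Sum>k<N. om powi (- (int k * j)) * (if k = m then -2 else if k = km then 1 else if k = kp then 1 else 0))"
      using m by (intro sum.cong refl) (simp add: rho_pm km_def kp_def)
    also have "\<dots> = om powi (- (int m * j)) * (-2) + om powi (- (int km * j)) * 1 + om powi (- (int kp * j)) * 1"
      by (rule sum_three) (use m kmN dist in auto)
    also have "om powi (- (int km * j)) = om powi (- (int m * j)) * om powi (- ((-1) * j))"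
    proof (rule om_shift_cong)
      show "int km mod int N = (int m + -1) mod int N" using km_int by (simp add: km_def)
    qed
    also have "om powi (- (int kp * j)) = om powi (- (int m * j)) * om powi (- (1 * j))"
      by (rule om_shift_cong) (simp add: kp_def zmod_int add.commute)
    finally show ?thesis by (simp add: cj_def algebra_simps)
  qed
  ultimately show ?thesis by simp
qed

lemma Pf_alpha: "z \<notin> Bs \<Longrightarrow> Pf j z = om powi (- j) * Pf j (z - \<alpha>)"
proof -
  assume z: "z \<notin> Bs"
  define \<phi> where "\<phi> = (\<lambda>k. om powi (- (int k * j)) * gfun (z - of_nat k * \<alpha>))"
  have "\<phi> N = \<phi> 0"
  proof -
    have "om powi (- (int N * j)) = 1" by (simp add: om_one_iff)
    moreover have "gfun (z - of_nat N * \<alpha>) = gfun z"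
      using gfun_per[OF notBs_shift[OF z, of N] Nalpha] by simp
    ultimately show ?thesis by (simp add: \<phi>_def)
  qed
  then have "(\<Sum>k<N. \<phi> (Suc k)) = (\<Sum>k<N. \<phi> k)" by (rule sum_shift_periodic)
  moreover have "\<phi> (Suc k) = om powi (- j) * (om powi (- (int k * j)) * gfun ((z - \<alpha>) - of_nat k * \<alpha>))" for k
  proof -
    have "om powi (- (int (Suc k) * j)) = om powi (- j) * om powi (- (int k * j))"
      by (simp add: om_add[symmetric] algebra_simps)
    then show ?thesis by (simp add: \<phi>_def algebra_simps)
  qed
  ultimately show ?thesis by (simp add: Pf_def \<phi>_def sum_distrib_left)
qed

end

definition ordle :: "(complex \<Rightarrow> complex) \<Rightarrow> complex \<Rightarrow> nat \<Rightarrow> complex \<Rightarrow> bool" where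
  "ordle f b n c \<longleftrightarrow> ((\<lambda>w. (w - b)^n * f w) \<longlongrightarrow> c) (at b)"

lemma ordle_cong: "(\<forall>\<^sub>F w in at b. f w = g w) \<Longrightarrow> ordle f b n c \<Longrightarrow> ordle g b n c"
  unfolding ordle_def by (rule Lim_transform_eventually) (auto elim: eventually_mono)

lemma ordle_const: "ordle (\<lambda>_. a) b 0 a"
  by (simp add: ordle_def)

lemma ordle_suc: "ordle f b n c \<Longrightarrow> ordle f b (Suc n) 0"
proof -
  assume "ordle f b n c"
  then have "((\<lambda>w. (w - b) * ((w - b)^n * f w)) \<longlongrightarrow> (b - b) * c) (at b)"
    unfolding ordle_def by (intro tendsto_intros) auto
  then show ?thesis by (simp add: ordle_def mult_ac)
qed

lemma ordle_raise: "ordle f b n c \<Longrightarrow> n \<le> k \<Longrightarrow> \<exists>c'. ordle f b k c'"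
proof (induction k)
  case 0 then show ?case by auto
next
  case (Suc k)
  show ?case
  proof (cases "n = Suc k")
    case True then show ?thesis using Suc by auto
  next
    case False
    then obtain c' where "ordle f b k c'" using Suc by auto
    then show ?thesis using ordle_suc by blast
  qed
qed

lemma ordle_add: "ordle f b n c \<Longrightarrow> ordle g b n d \<Longrightarrow> ordle (\<lambda>z. f z + g z) b n (c + d)"
  unfolding ordle_def by (drule (1) tendsto_add) (simp add: distrib_left)

lemma ordle_diff: "ordle f b n c \<Longrightarrow> ordle g b n d \<Longrightarrow> ordle (\<lambda>z. f z - g z) b n (c - d)"
  unfolding ordle_def by (drule (1) tendsto_diff) (simp add: right_diff_distrib)

lemma ordle_mult: "ordle f b n c \<Longrightarrow> ordle g b m d \<Longrightarrow> ordle (\<lambda>z. f z * g z) b (n + m) (c * d)"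
  unfolding ordle_def by (drule (1) tendsto_mult) (simp add: power_add mult_ac)

lemma ordle_cmult: "ordle f b n c \<Longrightarrow> ordle (\<lambda>z. a * f z) b n (a * c)"
  unfolding ordle_def by (drule tendsto_mult[OF tendsto_const, of _ _ _ a]) (simp add: mult_ac)

lemma ordle_sum: "finite T \<Longrightarrow> (\<And>t. t \<in> T \<Longrightarrow> ordle (f t) b n (c t)) \<Longrightarrow>
    ordle (\<lambda>z. \<Sum>t\<in>T. f t z) b n (\<Sum>t\<in>T. c t)"
  unfolding ordle_def by (drule tendsto_sum[of T]) (auto simp: sum_distrib_left)

lemma ordle_power: "ordle f b n c \<Longrightarrow> ordle (\<lambda>z. f z ^ k) b (n * k) (c ^ k)"
proof (induction k)
  case 0 then show ?case by (simp add: ordle_def)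
next
  case (Suc k)
  have "ordle (\<lambda>z. f z * f z ^ k) b (n + n * k) (c * c ^ k)" by (rule ordle_mult[OF Suc.prems Suc.IH[OF Suc.prems]])
  then show ?case by simp
qed

lemma ordle_remove:
  assumes r: "r > 0" and h: "f holomorphic_on ball b r - {b}" and o: "ordle f b (Suc n) 0"
  shows "\<exists>c. ordle f b n c"
proof -
  define G where "G = (\<lambda>w. if w = b then 0 else (w - b)^Suc n * f w)"
  have lim: "(G \<longlongrightarrow> 0) (at b)"
  proof -
    have "((\<lambda>w. (w - b)^Suc n * f w) \<longlongrightarrow> 0) (at b)" using o by (simp add: ordle_def)
    moreover have "\<forall>\<^sub>F w in at b. (w - b)^Suc n * f w = G w" by (simp add: G_def eventually_at_filter)
    ultimately show ?thesis by (rule Lim_transform_eventually)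
  qed
  have hG: "G holomorphic_on ball b r - {b}"
  proof -
    have "(\<lambda>w. (w - b)^Suc n * f w) holomorphic_on ball b r - {b}" by (intro holomorphic_intros h)
    then show ?thesis by (rule holomorphic_transform) (auto simp: G_def)
  qed
  have cG: "continuous_on (ball b r) G"
  proof -
    have "isCont G w" if w: "w \<in> ball b r" for w
    proof (cases "w = b")
      case True then show ?thesis using lim by (simp add: isCont_def G_def)
    next
      case False
      then have "w \<in> ball b r - {b}" using w by auto
      moreover have "open (ball b r - {b})" by auto
      ultimately show ?thesis using hG
        by (meson continuous_on_eq_continuous_at holomorphic_on_imp_continuous_on)
    qed
    then show ?thesis by (intro continuous_at_imp_continuous_on) auto
  qed
  have "G holomorphic_on ball b r" by (rule no_isolated_singularity[OF cG hG]) auto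
  then have "(G has_field_derivative deriv G b) (at b)"
    using r by (intro holomorphic_derivI) auto
  then have "((\<lambda>w. (G w - G b) / (w - b)) \<longlongrightarrow> deriv G b) (at b)"
    by (simp add: has_field_derivative_iff)
  moreover have "\<forall>\<^sub>F w in at b. (G w - G b) / (w - b) = (w - b)^n * f w"
    by (auto simp: G_def eventually_at_filter)
  ultimately have "ordle f b n (deriv G b)" unfolding ordle_def by (rule Lim_transform_eventually)
  then show ?thesis by blast
qed

lemma ordle_mero:
  assumes r: "r > 0" and h: "f holomorphic_on ball b r - {b}" and o: "ordle f b n c"
  shows "isolated_singularity_at f b \<and> not_essential f b"
proof
  show iso: "isolated_singularity_at f b"
    by (rule isolated_singularity_at_holomorphic[OF h]) (use r in auto)
  have ne1: "not_essential (\<lambda>w. (w - b)^n * f w) b"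
    using o unfolding ordle_def not_essential_def by blast
  have iso1: "isolated_singularity_at (\<lambda>w. (w - b)^n * f w) b"
    by (rule isolated_singularity_at_holomorphic[of _ "ball b r"]) (use r h in \<open>auto intro!: holomorphic_intros\<close>)
  have iso2: "isolated_singularity_at (\<lambda>w. (w - b)^n) b"
    by (rule isolated_singularity_at_holomorphic[of _ "ball b r"]) (use r in \<open>auto intro!: holomorphic_intros\<close>)
  have ne2: "not_essential (\<lambda>w. (w - b)^n) b"
    by (rule not_essential_holomorphic[of _ UNIV]) (auto intro!: holomorphic_intros)
  have "not_essential (\<lambda>w. ((w - b)^n * f w) / (w - b)^n) b"
    by (rule not_essential_divide[OF ne1 ne2 iso1 iso2])
  moreover have ev: "\<forall>\<^sub>F w in at b. ((w - b)^n * f w) / (w - b)^n = f w"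
    by (auto simp: eventually_at_filter)
  ultimately show "not_essential f b" using not_essential_cong[OF ev refl] by blast
qed

lemma mero_ordle:
  assumes r: "r > 0" and h: "f holomorphic_on ball b r - {b}" and ne: "not_essential f b"
  shows "\<exists>n c. ordle f b n c"
proof (cases "is_pole f b")
  case False
  then obtain x where "(f \<longlongrightarrow> x) (at b)" using ne by (auto simp: not_essential_def)
  then have "ordle f b 0 x" by (simp add: ordle_def)
  then show ?thesis by blast
next
  case True
  define n where "n = zorder f b"
  define g where "g = zor_poly f b"
  obtain r' where r': "r' > 0" "cball b r' \<subseteq> ball b r" "g holomorphic_on cball b r'"
      "\<forall>w\<in>cball b r' - {b}. f w = g w / (w - b) ^ nat (- n) \<and> g w \<noteq> 0"
    using zorder_exist_pole[OF h _ _ True] r unfolding n_def g_def by auto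
  have "isCont g b"
  proof -
    have "g holomorphic_on ball b r'" using r'(3) by (rule holomorphic_on_subset) auto
    then show ?thesis using r'(1)
      by (meson centre_in_ball continuous_on_eq_continuous_at holomorphic_on_imp_continuous_on open_ball)
  qed
  then have "(g \<longlongrightarrow> g b) (at b)" by (simp add: isCont_def)
  moreover have "\<forall>\<^sub>F w in at b. g w = (w - b) ^ nat (- n) * f w"
    using eventually_at_ball'[OF r'(1), of b UNIV]
    by eventually_elim (use r'(4) in \<open>auto simp: field_simps\<close>)
  ultimately have "ordle f b (nat (- n)) (g b)" unfolding ordle_def by (rule Lim_transform_eventually)
  then show ?thesis by blast
qed

context ellN
begin

lemma ordle_shift: "(\<And>z p. z \<notin> Bs \<Longrightarrow> p \<in> Lat \<Longrightarrow> f (z + p) = f z) \<Longrightarrow> d \<in> Lat \<Longrightarrow>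
    ordle f q n c \<Longrightarrow> ordle f (q + d) n c"
  unfolding ordle_def by (rule lim_shift[OF Bs_good])

lemma Bs_holo_ball: "f holomorphic_on - Bs \<Longrightarrow> \<exists>r>0. f holomorphic_on ball b r - {b}"
proof -
  assume h: "f holomorphic_on - Bs"
  obtain r where r: "r > 0" "\<forall>w\<in>ball b r. w \<noteq> b \<longrightarrow> w \<notin> Bs" using good_ball[OF Bs_good] by blast
  have "f holomorphic_on ball b r - {b}" by (rule holomorphic_on_subset[OF h]) (use r in auto)
  then show ?thesis using r by blast
qed

definition CL :: "(complex \<Rightarrow> complex) set" where
  "CL = {f. f holomorphic_on - Bs \<and> (\<forall>z p. z \<notin> Bs \<longrightarrow> p \<in> Lat \<longrightarrow> f (z + p) = f z) \<and>
          (\<forall>b\<in>Bs. \<exists>n c. ordle f b n c)}"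

lemma CL_const: "(\<lambda>_. a) \<in> CL"
  by (auto simp: CL_def intro!: ordle_const)

lemma CL_add: "f \<in> CL \<Longrightarrow> g \<in> CL \<Longrightarrow> (\<lambda>z. f z + g z) \<in> CL"
proof -
  assume f: "f \<in> CL" and g: "g \<in> CL"
  have "\<exists>n c. ordle (\<lambda>z. f z + g z) b n c" if b: "b \<in> Bs" for b
  proof -
    have "\<exists>n c. ordle f b n c" "\<exists>n c. ordle g b n c" using f g b by (simp_all add: CL_def)
    then obtain n c m d where o: "ordle f b n c" "ordle g b m d" by blast
    obtain c' where c': "ordle f b (n + m) c'" using ordle_raise[OF o(1), of "n + m"] by auto
    obtain d' where d': "ordle g b (n + m) d'" using ordle_raise[OF o(2), of "n + m"] by auto
    show ?thesis using ordle_add[OF c' d'] by blast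
  qed
  then show ?thesis using f g by (auto simp: CL_def intro!: holomorphic_intros)
qed

lemma CL_mult: "f \<in> CL \<Longrightarrow> g \<in> CL \<Longrightarrow> (\<lambda>z. f z * g z) \<in> CL"
proof -
  assume f: "f \<in> CL" and g: "g \<in> CL"
  have "\<exists>n c. ordle (\<lambda>z. f z * g z) b n c" if b: "b \<in> Bs" for b
  proof -
    have "\<exists>n c. ordle f b n c" "\<exists>n c. ordle g b n c" using f g b by (simp_all add: CL_def)
    then obtain n c m d where o: "ordle f b n c" "ordle g b m d" by blast
    show ?thesis using ordle_mult[OF o] by blast
  qed
  then show ?thesis using f g by (auto simp: CL_def intro!: holomorphic_intros)
qed

lemma CL_mero: "f \<in> CL \<Longrightarrow> f meromorphic_on UNIV"
proof -
  assume f: "f \<in> CL"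
  have "isolated_singularity_at f z \<and> not_essential f z" for z
  proof (cases "z \<in> Bs")
    case True
    have "\<exists>n c. ordle f z n c" using f True by (simp add: CL_def)
    then obtain n c where o: "ordle f z n c" by blast
    have hf: "f holomorphic_on - Bs" using f by (simp add: CL_def)
    obtain r where r: "r > 0" "f holomorphic_on ball z r - {z}" using Bs_holo_ball[OF hf] by blast
    show ?thesis by (rule ordle_mero[OF r o])
  next
    case False
    have h: "f holomorphic_on - Bs" using f by (simp add: CL_def)
    have o: "open (- Bs)" by (rule good_open[OF Bs_good])
    show ?thesis
    proof
      show "isolated_singularity_at f z"
        by (rule isolated_singularity_at_holomorphic[OF holomorphic_on_subset[OF h] o]) (use False in auto)
      show "not_essential f z" by (rule not_essential_holomorphic[OF h]) (use False o in auto)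
    qed
  qed
  then show ?thesis by (simp add: meromorphic_on_altdef)
qed

lemma Pf_ordle: "m < N \<Longrightarrow> ordle (Pf j) (pm m) 1 (om powi (- (int m * j)) * cj j)"
  using Pf_res by (simp add: ordle_def)

lemma P_ev: "\<forall>\<^sub>F w in at b. Pf j w = P \<tau> \<alpha> N j w"
  using good_ev[OF Bs_good, of b] by eventually_elim (simp add: P_eq)

lemma P_ordle: "m < N \<Longrightarrow> ordle (P \<tau> \<alpha> N j) (pm m) 1 (om powi (- (int m * j)) * cj j)"
  by (rule ordle_cong[OF P_ev Pf_ordle])

lemma P_holo: "P \<tau> \<alpha> N j holomorphic_on - Bs"
  by (rule holomorphic_transform[OF Pf_holo]) (simp add: P_eq)

lemma P_per: "z \<notin> Bs \<Longrightarrow> p \<in> Lat \<Longrightarrow> P \<tau> \<alpha> N j (z + p) = P \<tau> \<alpha> N j z"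
  using Pf_per P_eq Bs_lat by simp

lemma P_CL: "P \<tau> \<alpha> N j \<in> CL"
proof -
  have "\<exists>n c. ordle (P \<tau> \<alpha> N j) b n c" if b: "b \<in> Bs" for b
  proof -
    obtain m where m: "m < N" "b - pm m \<in> Lat" using b by (auto simp: Bs_def pm_def)
    have "ordle (P \<tau> \<alpha> N j) (pm m + (b - pm m)) 1 (om powi (- (int m * j)) * cj j)"
      by (rule ordle_shift[OF P_per m(2) P_ordle[OF m(1)]])
    then show ?thesis by auto
  qed
  then show ?thesis using P_holo P_per by (auto simp: CL_def)
qed

lemma gen_CL: "f \<in> gen_alg G \<Longrightarrow> G \<subseteq> CL \<Longrightarrow> f \<in> CL"
  by (induction rule: gen_alg.induct) (auto intro: CL_const CL_add CL_mult)

lemma CL_OT: "f \<in> CL \<Longrightarrow> f \<in> O_T \<tau> \<alpha> N"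
  using CL_mero by (auto simp: CL_def O_T_def Bs_punct)

lemma OT_ordle: "f \<in> O_T \<tau> \<alpha> N \<Longrightarrow> b \<in> Bs \<Longrightarrow> \<exists>n c. ordle f b n c"
proof -
  assume f: "f \<in> O_T \<tau> \<alpha> N" and b: "b \<in> Bs"
  have h: "f holomorphic_on - Bs" using f by (simp add: O_T_def Bs_punct)
  obtain r where r: "r > 0" "f holomorphic_on ball b r - {b}" using Bs_holo_ball[OF h] by auto
  have "not_essential f b" using f by (auto simp: O_T_def meromorphic_on_altdef)
  then show ?thesis by (rule mero_ordle[OF r])
qed

end

context ellN
begin

abbreviation "PS \<equiv> {P \<tau> \<alpha> N j | j. 1 \<le> j \<and> j \<le> int N - 1}"
abbreviation "GA \<equiv> gen_alg PS"

lemma GA_sum: "finite T \<Longrightarrow> (\<And>t. t \<in> T \<Longrightarrow> f t \<in> GA) \<Longrightarrow> (\<lambda>z. \<Sum>t\<in>T. f t z) \<in> GA"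
proof (induction T rule: finite_induct)
  case empty
  then show ?case using gen_alg.const[of 0] by simp
next
  case (insert x F)
  then have "(\<lambda>z. f x z + (\<Sum>t\<in>F. f t z)) \<in> GA" by (intro gen_alg.add) auto
  then show ?case using insert by simp
qed

lemma GA_cmult: "f \<in> GA \<Longrightarrow> (\<lambda>z. a * f z) \<in> GA"
  by (rule gen_alg.mult[OF gen_alg.const])

lemma GA_pow: "f \<in> GA \<Longrightarrow> (\<lambda>z. f z ^ k) \<in> GA"
proof (induction k)
  case 0 then show ?case using gen_alg.const[of 1] by simp
next
  case (Suc k)
  then show ?case using gen_alg.mult[OF Suc.prems Suc.IH[OF Suc.prems]] by simp
qed

lemma P_GA: "1 \<le> j \<Longrightarrow> j \<le> int N - 1 \<Longrightarrow> P \<tau> \<alpha> N j \<in> GA"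
  by (rule gen_alg.gen) blast

lemma GA_CL: "f \<in> GA \<Longrightarrow> f \<in> CL"
  by (rule gen_CL) (auto intro: P_CL)

lemma dvd_small: "m < N \<Longrightarrow> m' < N \<Longrightarrow> int N dvd (int m' - int m) \<longleftrightarrow> m' = m"
proof
  assume m: "m < N" "m' < N" and d: "int N dvd (int m' - int m)"
  have lt: "\<bar>int m' - int m\<bar> < int N" using m by auto
  show "m' = m"
  proof (rule ccontr)
    assume "m' \<noteq> m"
    then have "int m' - int m \<noteq> 0" by simp
    from dvd_imp_le_int[OF this d] have "\<bar>int N\<bar> \<le> \<bar>int m' - int m\<bar>" .
    then show False using lt by simp
  qed
qed simp

lemma dft_inv:
  assumes m: "m < N"
  shows "(\<Sum>t<N. (\<Sum>m'<N. v m' * om powi (int m' * int t)) * om powi (- (int m * int t))) = of_nat N * v m"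
proof -
  have "(\<Sum>t<N. (\<Sum>m'<N. v m' * om powi (int m' * int t)) * om powi (- (int m * int t)))
      = (\<Sum>t<N. \<Sum>m'<N. v m' * om powi (int t * (int m' - int m)))"
  proof (intro sum.cong refl)
    fix t
    have "om powi (int m' * int t) * om powi (- (int m * int t)) = om powi (int t * (int m' - int m))" for m'
      by (simp add: om_add[symmetric] algebra_simps)
    then show "(\<Sum>m'<N. v m' * om powi (int m' * int t)) * om powi (- (int m * int t))
        = (\<Sum>m'<N. v m' * om powi (int t * (int m' - int m)))"
      by (simp add: sum_distrib_right mult.assoc)
  qed
  also have "\<dots> = (\<Sum>m'<N. v m' * (\<Sum>t<N. om powi (int t * (int m' - int m))))"
    by (subst sum.swap) (simp add: sum_distrib_left)
  also have "\<dots> = (\<Sum>m'<N. v m' * (if m' = m then of_nat N else 0))"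
    by (intro sum.cong refl) (simp add: om_orth dvd_small[OF m])
  also have "\<dots> = (\<Sum>m'<N. if m' = m then v m' * of_nat N else 0)" by (intro sum.cong) auto
  also have "\<dots> = of_nat N * v m" using m by (simp add: mult.commute)
  finally show ?thesis .
qed

lemma construct:
  assumes M: "\<And>t. t < N \<Longrightarrow> M t \<in> GA"
    and ord: "\<And>t m. t < N \<Longrightarrow> m < N \<Longrightarrow> ordle (M t) (pm m) n (C t * om powi (- (int m * int t)))"
    and zero: "\<And>t. t < N \<Longrightarrow> C t = 0 \<Longrightarrow> (\<Sum>m<N. v m * om powi (int m * int t)) = 0"
  shows "\<exists>G\<in>GA. \<forall>m<N. ordle G (pm m) n (v m)"
proof -
  define S where "S = (\<lambda>t. \<Sum>m'<N. v m' * om powi (int m' * int t))"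
  define a where "a = (\<lambda>t. S t / (of_nat N * C t))"
  define G where "G = (\<lambda>z. \<Sum>t<N. a t * M t z)"
  have GA: "G \<in> GA" unfolding G_def by (intro GA_sum GA_cmult M) auto
  have "ordle G (pm m) n (v m)" if m: "m < N" for m
  proof -
    have "ordle G (pm m) n (\<Sum>t<N. a t * (C t * om powi (- (int m * int t))))"
      unfolding G_def by (intro ordle_sum ordle_cmult ord m) auto
    also have "(\<Sum>t<N. a t * (C t * om powi (- (int m * int t))))
        = (\<Sum>t<N. S t * om powi (- (int m * int t))) / of_nat N"
    proof -
      have "a t * (C t * om powi (- (int m * int t))) = S t * om powi (- (int m * int t)) / of_nat N" if t: "t < N" for t
      proof (cases "C t = 0")
        case True then show ?thesis using zero[OF t] by (simp add: a_def S_def)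
      next
        case False then show ?thesis using Npos by (simp add: a_def field_simps)
      qed
      then show ?thesis by (simp add: sum_divide_distrib)
    qed
    also have "\<dots> = v m" using dft_inv[OF m, of v] Npos by (simp add: S_def)
    finally show ?thesis .
  qed
  then show ?thesis using GA by blast
qed

lemma om_powi_pow: "(om powi a) ^ k = om powi (a * int k)"
  by (simp add: power_int_mult power_int_of_nat[symmetric] del: power_int_of_nat)

lemma monos_ex:
  assumes n: "n \<ge> 1" and s: "n = 1 \<Longrightarrow> (\<Sum>m<N. v m) = 0"
  shows "\<exists>G\<in>GA. \<forall>m<N. ordle G (pm m) n (v m)"
proof (cases "n = 1")
  case True
  define M where "M = (\<lambda>t::nat. if t = 0 then (\<lambda>_. 0) else P \<tau> \<alpha> N (int t))"
  define C where "C = (\<lambda>t::nat. if t = 0 then 0 else cj (int t))"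
  have "\<exists>G\<in>GA. \<forall>m<N. ordle G (pm m) 1 (v m)"
  proof (rule construct[where M=M and C=C])
    fix t assume t: "t < N"
    show "M t \<in> GA"
    proof (cases "t = 0")
      case True
      have "(\<lambda>_. 0) \<in> GA" by (rule gen_alg.const)
      then show ?thesis using True by (simp add: M_def)
    next
      case False
      have "P \<tau> \<alpha> N (int t) \<in> GA" by (rule P_GA) (use t False in auto)
      then show ?thesis using False by (simp add: M_def)
    qed
  next
    fix t m assume t: "t < N" and m: "m < N"
    show "ordle (M t) (pm m) 1 (C t * om powi (- (int m * int t)))"
    proof (cases "t = 0")
      case True then show ?thesis using ordle_suc[OF ordle_const[of 0 "pm m"]] by (simp add: M_def C_def)
    next
      case False then show ?thesis using P_ordle[OF m, of "int t"] by (simp add: M_def C_def mult.commute)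
    qed
  next
    fix t assume t: "t < N" and C0: "C t = 0"
    have "t = 0"
    proof (rule ccontr)
      assume "t \<noteq> 0"
      then have "\<not> int N dvd int t" using t by (auto dest: zdvd_imp_le)
      then have "cj (int t) \<noteq> 0" by (rule cj_nz)
      then show False using C0 \<open>t \<noteq> 0\<close> by (simp add: C_def)
    qed
    then show "(\<Sum>m<N. v m * om powi (int m * int t)) = 0" using s True by simp
  qed
  then show ?thesis using True by simp
next
  case False
  then obtain k where k: "n = Suc (Suc k)" using n by (metis Suc_le_D le_antisym not_less_eq_eq One_nat_def)
  define u where "u = (\<lambda>t::nat. (int t - int k) mod int N)"
  define i1 where "i1 = (\<lambda>t. if u t = 1 then int N - 1 else 1)"
  define i2 where "i2 = (\<lambda>t. if u t = 1 then 2 else (u t - 1) mod int N)"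
  define M where "M = (\<lambda>t z. P \<tau> \<alpha> N (i1 t) z * P \<tau> \<alpha> N (i2 t) z * P \<tau> \<alpha> N 1 z ^ k)"
  define C where "C = (\<lambda>t. cj (i1 t) * cj (i2 t) * cj 1 ^ k)"
  have u: "0 \<le> u t" "u t < int N" for t using Npos by (auto simp: u_def)
  have i1r: "1 \<le> i1 t" "i1 t \<le> int N - 1" for t using N3 by (auto simp: i1_def)
  have i2r: "1 \<le> i2 t \<and> i2 t \<le> int N - 1" for t
  proof (cases "u t = 1")
    case True then show ?thesis using N3 by (simp add: i2_def)
  next
    case False
    have "(u t - 1) mod int N \<noteq> 0"
    proof
      assume "(u t - 1) mod int N = 0"
      then have d: "int N dvd (u t - 1)" by (simp add: dvd_eq_mod_eq_0)
      show False
      proof (cases "u t = 0")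
        case True then show False using d N3 by (simp add: zdvd_not_zless)
      next
        case False
        then have "0 < u t - 1" using \<open>u t \<noteq> 1\<close> u[of t] by simp
        then have "int N \<le> u t - 1" by (rule zdvd_imp_le[OF d])
        then show False using u[of t] by simp
      qed
    qed
    moreover have "0 \<le> (u t - 1) mod int N" "(u t - 1) mod int N < int N" using Npos by auto
    moreover have "i2 t = (u t - 1) mod int N" using False by (simp add: i2_def)
    ultimately show ?thesis by linarith
  qed
  have cong: "(i1 t + i2 t + int k) mod int N = int t mod int N" for t
  proof -
    have "int t - int k - u t = int N * ((int t - int k) div int N)" unfolding u_def by (rule minus_mod_eq_mult_div)
    then have "int N dvd (int t - int k - u t)" by simp
    moreover have "int N dvd (i1 t + i2 t - u t)"
    proof (cases "u t = 1")
      case True then show ?thesis by (simp add: i1_def i2_def)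
    next
      case False
      have "(u t - 1) - (u t - 1) mod int N = int N * ((u t - 1) div int N)" by (rule minus_mod_eq_mult_div)
      then have "int N dvd ((u t - 1) - (u t - 1) mod int N)" by simp
      then have d: "int N dvd (- ((u t - 1) - (u t - 1) mod int N))" by (simp only: dvd_minus_iff)
      have "i1 t + i2 t - u t = - ((u t - 1) - (u t - 1) mod int N)" using False by (simp add: i1_def i2_def)
      then show ?thesis using d by (simp only:)
    qed
    ultimately have "int N dvd ((i1 t + i2 t - u t) - (int t - int k - u t))" by (rule dvd_diff[rotated])
    then show ?thesis by (simp add: mod_eq_dvd_iff algebra_simps)
  qed
  have "\<exists>G\<in>GA. \<forall>m<N. ordle G (pm m) n (v m)"
  proof (rule construct[where M=M and C=C])
    fix t assume t: "t < N"
    show "M t \<in> GA" unfolding M_def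
      by (intro gen_alg.mult GA_pow P_GA i1r) (use i2r[of t] N3 in auto)
  next
    fix t m assume t: "t < N" and m: "m < N"
    have o: "ordle (M t) (pm m) ((1 + 1) + 1 * k)
        (((om powi (- (int m * i1 t)) * cj (i1 t)) * (om powi (- (int m * i2 t)) * cj (i2 t))) *
         (om powi (- (int m * 1)) * cj 1) ^ k)"
      unfolding M_def by (intro ordle_mult ordle_power P_ordle m)
    have e: "om powi (- (int m * i1 t)) * om powi (- (int m * i2 t)) * (om powi (- (int m * 1))) ^ k
        = om powi (- (int m * int t))"
    proof -
      have "om powi (- (int m * i1 t)) * om powi (- (int m * i2 t)) * (om powi (- (int m * 1))) ^ k
          = om powi (- (int m * (i1 t + i2 t + int k)))"
        by (simp add: om_powi_pow om_add[symmetric] algebra_simps)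
      also have "\<dots> = om powi (- (int m * int t))"
        by (intro om_cong mod_minus_cong mod_mult_cong refl cong)
      finally show ?thesis .
    qed
    have eqX: "((om powi (- (int m * i1 t)) * cj (i1 t)) * (om powi (- (int m * i2 t)) * cj (i2 t))) *
         (om powi (- (int m * 1)) * cj 1) ^ k
        = C t * (om powi (- (int m * i1 t)) * om powi (- (int m * i2 t)) * (om powi (- (int m * 1))) ^ k)"
      by (simp add: C_def power_mult_distrib mult_ac)
    have nn: "(1 + 1) + 1 * k = n" using k by simp
    show "ordle (M t) (pm m) n (C t * om powi (- (int m * int t)))"
      using o unfolding nn eqX e .
  next
    fix t assume t: "t < N" and C0: "C t = 0"
    have "\<not> int N dvd i1 t" "\<not> int N dvd i2 t" "\<not> int N dvd 1"
      using i1r[of t] i2r[of t] N3 by (auto dest: zdvd_imp_le)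
    then have "C t \<noteq> 0" by (simp add: C_def cj_nz)
    then show "(\<Sum>m<N. v m * om powi (int m * int t)) = 0" using C0 by simp
  qed
  then show ?thesis .
qed

lemma gen_main:
  "\<forall>f. f holomorphic_on - Bs \<and> (\<forall>z p. z \<notin> Bs \<longrightarrow> p \<in> Lat \<longrightarrow> f (z + p) = f z) \<and>
      (\<forall>m<N. \<exists>c. ordle f (pm m) n c) \<longrightarrow> (\<exists>h\<in>GA. \<forall>z. z \<notin> Bs \<longrightarrow> f z = h z)"
proof (induction n)
  case 0
  show ?case
  proof (intro allI impI, elim conjE)
    fix f assume h: "f holomorphic_on - Bs" and per: "\<forall>z p. z \<notin> Bs \<longrightarrow> p \<in> Lat \<longrightarrow> f (z + p) = f z"
      and o: "\<forall>m<N. \<exists>c. ordle f (pm m) 0 c"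
    have "\<exists>c. \<forall>z. z \<notin> Bs \<longrightarrow> f z = c"
    proof (rule per_const[OF Bs_good h])
      show "\<And>z p. z \<notin> Bs \<Longrightarrow> p \<in> Lat \<Longrightarrow> f (z + p) = f z" using per by blast
      fix b assume b: "b \<in> Bs"
      obtain m where m: "m < N" "b - pm m \<in> Lat" using b by (auto simp: Bs_def pm_def)
      obtain c where c: "ordle f (pm m) 0 c" using o m by blast
      have "ordle f (pm m + (b - pm m)) 0 c" by (rule ordle_shift[OF _ m(2) c]) (use per in blast)
      then show "\<exists>c. (f \<longlongrightarrow> c) (at b)" by (auto simp: ordle_def)
    qed
    then obtain c where "\<forall>z. z \<notin> Bs \<longrightarrow> f z = c" by blast
    moreover have "(\<lambda>_. c) \<in> GA" by (rule gen_alg.const)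
    ultimately show "\<exists>h\<in>GA. \<forall>z. z \<notin> Bs \<longrightarrow> f z = h z" by (intro bexI[of _ "\<lambda>_. c"]) auto
  qed
next
  case (Suc n)
  show ?case
  proof (intro allI impI, elim conjE)
    fix f assume h: "f holomorphic_on - Bs" and per: "\<forall>z p. z \<notin> Bs \<longrightarrow> p \<in> Lat \<longrightarrow> f (z + p) = f z"
      and o: "\<forall>m<N. \<exists>c. ordle f (pm m) (Suc n) c"
    obtain v where v: "\<And>m. m < N \<Longrightarrow> ordle f (pm m) (Suc n) (v m)"
      using o by metis
    have s: "(\<Sum>m<N. v m) = 0" if n0: "Suc n = 1"
    proof (rule RS_N[OF h])
      show "\<And>z p. z \<notin> Bs \<Longrightarrow> p \<in> Lat \<Longrightarrow> f (z + p) = f z" using per by blast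
      fix m assume "m < N"
      then show "((\<lambda>z. (z - pm m) * f z) \<longlongrightarrow> v m) (at (pm m))" using v n0 by (simp add: ordle_def)
    qed
    obtain G where G: "G \<in> GA" "\<And>m. m < N \<Longrightarrow> ordle G (pm m) (Suc n) (v m)"
      using monos_ex[of "Suc n" v] s by auto
    have GCL: "G \<in> CL" by (rule GA_CL[OF G(1)])
    define f1 where "f1 = (\<lambda>z. f z - G z)"
    have h1: "f1 holomorphic_on - Bs" unfolding f1_def using h GCL by (intro holomorphic_intros) (auto simp: CL_def)
    have per1: "\<forall>z p. z \<notin> Bs \<longrightarrow> p \<in> Lat \<longrightarrow> f1 (z + p) = f1 z" using per GCL by (auto simp: f1_def CL_def)
    have o1: "\<forall>m<N. \<exists>c. ordle f1 (pm m) n c"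
    proof (intro allI impI)
      fix m assume m: "m < N"
      have z: "ordle f1 (pm m) (Suc n) 0" unfolding f1_def using ordle_diff[OF v[OF m] G(2)[OF m]] by simp
      obtain r where r: "r > 0" "f1 holomorphic_on ball (pm m) r - {pm m}" using Bs_holo_ball[OF h1] by blast
      show "\<exists>c. ordle f1 (pm m) n c" by (rule ordle_remove[OF r z])
    qed
    obtain h' where h': "h' \<in> GA" "\<And>z. z \<notin> Bs \<Longrightarrow> f1 z = h' z" using Suc.IH h1 per1 o1 by blast
    have "(\<lambda>z. h' z + G z) \<in> GA" by (rule gen_alg.add[OF h'(1) G(1)])
    moreover have "\<forall>z. z \<notin> Bs \<longrightarrow> f z = h' z + G z"
    proof (intro allI impI)
      fix z assume "z \<notin> Bs"
      then have "f z - G z = h' z" using h'(2) by (simp add: f1_def)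
      then show "f z = h' z + G z" by (simp add: algebra_simps)
    qed
    ultimately show "\<exists>h\<in>GA. \<forall>z. z \<notin> Bs \<longrightarrow> f z = h z" by (intro bexI[of _ "\<lambda>z. h' z + G z"])
  qed
qed

theorem part1: "eq_on_sets (punctured \<tau> \<alpha> N) (O_T \<tau> \<alpha> N) GA"
  unfolding eq_on_sets_def
proof (intro conjI ballI)
  fix f assume f: "f \<in> O_T \<tau> \<alpha> N"
  have h: "f holomorphic_on - Bs" using f by (simp add: O_T_def Bs_punct)
  have per: "\<forall>z p. z \<notin> Bs \<longrightarrow> p \<in> Lat \<longrightarrow> f (z + p) = f z" using f by (auto simp: O_T_def Bs_punct)
  have "\<forall>m<N. \<exists>n c. ordle f (pm m) n c" using OT_ordle[OF f] pm_Bs by blast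
  then obtain nn cc where nc: "\<And>m. m < N \<Longrightarrow> ordle f (pm m) (nn m) (cc m)" by metis
  define n0 where "n0 = (\<Sum>m<N. nn m)"
  have "\<forall>m<N. \<exists>c. ordle f (pm m) n0 c"
  proof (intro allI impI)
    fix m assume m: "m < N"
    have "nn m \<le> n0" unfolding n0_def using m by (intro member_le_sum) auto
    then show "\<exists>c. ordle f (pm m) n0 c" using ordle_raise[OF nc[OF m]] by blast
  qed
  then obtain g where "g \<in> GA" "\<forall>z. z \<notin> Bs \<longrightarrow> f z = g z" using gen_main h per by blast
  then show "\<exists>g\<in>GA. \<forall>z\<in>punctured \<tau> \<alpha> N. f z = g z" by (auto simp: Bs_punct)
next
  fix g assume "g \<in> GA"
  then have "g \<in> O_T \<tau> \<alpha> N" by (intro CL_OT GA_CL)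
  then show "\<exists>f\<in>O_T \<tau> \<alpha> N. \<forall>z\<in>punctured \<tau> \<alpha> N. f z = g z" by blast
qed

end

lemma infsum_diff':
  fixes f g :: "'a \<Rightarrow> complex"
  assumes "f summable_on A" "g summable_on A"
  shows "infsum (\<lambda>x. f x - g x) A = infsum f A - infsum g A"
proof -
  have "(\<lambda>x. - g x) summable_on A" using assms(2) by (simp add: summable_on_uminus)
  then have "infsum (\<lambda>x. f x + - g x) A = infsum f A + infsum (\<lambda>x. - g x) A"
    by (rule infsum_add[OF assms(1)])
  then show ?thesis by (simp add: infsum_uminus)
qed

lemma ordle_shift_ev:
  assumes ev: "\<forall>\<^sub>F x in at q. f (x + d) = f x" and o: "ordle f q n c"
  shows "ordle f (q + d) n c"
proof -
  have e2: "\<forall>\<^sub>F x in at q. (x - q)^n * f x = (x + d - (q + d))^n * f (x + d)"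
    using ev by eventually_elim simp
  have "((\<lambda>x. (x + d - (q + d))^n * f (x + d)) \<longlongrightarrow> c) (at q)"
    using o unfolding ordle_def by (rule Lim_transform_eventually[OF _ e2])
  then have "((\<lambda>w. (w - (q + d))^n * f w) \<longlongrightarrow> c) (filtermap (\<lambda>x. x - (-d)) (at q))"
    by (simp add: filterlim_filtermap)
  then show ?thesis unfolding filtermap_at_shift ordle_def by simp
qed

lemma alg_transfer:
  assumes f: "f \<in> gen_alg {g}" and eq: "\<And>z. z \<in> U \<Longrightarrow> g z = a * h z + b"
  shows "\<exists>f'\<in>gen_alg {h}. \<forall>z\<in>U. f z = f' z"
  using f
proof (induction rule: gen_alg.induct)
  case (const c)
  then show ?case by (intro bexI[of _ "\<lambda>_. c"] gen_alg.const) auto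
next
  case (gen g')
  then have g': "g' = g" by simp
  have "(\<lambda>z. (\<lambda>_. a) z * h z + (\<lambda>_. b) z) \<in> gen_alg {h}"
    by (intro gen_alg.add gen_alg.mult gen_alg.const gen_alg.gen) auto
  then show ?case using eq g' by (intro bexI[of _ "\<lambda>z. a * h z + b"]) auto
next
  case (add f g)
  then obtain f' g' where "f' \<in> gen_alg {h}" "\<forall>z\<in>U. f z = f' z" "g' \<in> gen_alg {h}" "\<forall>z\<in>U. g z = g' z" by blast
  then show ?case by (intro bexI[of _ "\<lambda>z. f' z + g' z"] gen_alg.add) auto
next
  case (mult f g)
  then obtain f' g' where "f' \<in> gen_alg {h}" "\<forall>z\<in>U. f z = f' z" "g' \<in> gen_alg {h}" "\<forall>z\<in>U. g z = g' z" by blast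
  then show ?case by (intro bexI[of _ "\<lambda>z. f' z * g' z"] gen_alg.mult) auto
qed

context ellN
begin

abbreviation "LA \<equiv> lattice_alpha \<tau> \<alpha>"

definition piece :: "nat \<Rightarrow> complex set" where "piece k = (\<lambda>p. p + of_nat k * \<alpha>) ` Lat"

lemma LA_union: "LA = (\<Union>k\<in>{..<N}. piece k)"
proof
  show "LA \<subseteq> (\<Union>k\<in>{..<N}. piece k)"
  proof
    fix w assume "w \<in> LA"
    then obtain m n k :: int where w: "w = of_int m + of_int n * \<alpha> + of_int k * \<tau>"
      by (auto simp: lattice_alpha_def)
    define r where "r = n mod int N"
    define q where "q = n div int N"
    have r: "0 \<le> r" "r < int N" using Npos by (auto simp: r_def)
    have nq: "n = q * int N + r" by (simp add: q_def r_def)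
    have "w = (of_int m + of_int k * \<tau> + of_int q * (of_nat N * \<alpha>)) + of_nat (nat r) * \<alpha>"
      using r by (simp add: w nq algebra_simps)
    moreover have "of_int m + of_int k * \<tau> + of_int q * (of_nat N * \<alpha>) \<in> Lat"
    proof -
      have "of_int m + of_int k * \<tau> \<in> Lat" unfolding lat_iff by blast
      then show ?thesis using lat_of_int_mult[OF Nalpha, of q] lat_add by blast
    qed
    ultimately show "w \<in> (\<Union>k\<in>{..<N}. piece k)" using r unfolding piece_def
      by (intro UN_I[of "nat r"]) auto
  qed
  show "(\<Union>k\<in>{..<N}. piece k) \<subseteq> LA"
  proof
    fix w assume "w \<in> (\<Union>k\<in>{..<N}. piece k)"
    then obtain k p where "w = p + of_nat k * \<alpha>" "p \<in> Lat" by (auto simp: piece_def)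
    then obtain m n :: int where "w = of_int m + of_int n * \<tau> + of_nat k * \<alpha>" by (auto simp: lat_iff)
    then have "w = of_int m + of_int (int k) * \<alpha> + of_int n * \<tau>" by simp
    then show "w \<in> LA" unfolding lattice_alpha_def by blast
  qed
qed

lemma piece_disj: "k < N \<Longrightarrow> k' < N \<Longrightarrow> k \<noteq> k' \<Longrightarrow> piece k \<inter> piece k' = {}"
proof (rule ccontr)
  assume k: "k < N" "k' < N" "k \<noteq> k'" and "piece k \<inter> piece k' \<noteq> {}"
  then obtain p p' where "p \<in> Lat" "p' \<in> Lat" "p + of_nat k * \<alpha> = p' + of_nat k' * \<alpha>"
    by (auto simp: piece_def)
  then have "pm k - pm k' = p' - p" by (simp add: pm_def algebra_simps)
  then have "pm k - pm k' \<in> Lat" using \<open>p \<in> Lat\<close> \<open>p' \<in> Lat\<close> lat_diff by metis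
  then show False using pm_diff_lat k by blast
qed

lemma piece_fun: fixes z c :: complex shows "(\<lambda>p. 1/(z - (p + c))^2 - 1/(p + c)^2) = (\<lambda>p. 1/((z - c) - p)^2 - 1/((- c) - p)^2)"
proof (rule ext)
  fix p :: complex
  have e1: "z - (p + c) = (z - c) - p" by simp
  have e2: "(p + c)^2 = ((- c) - p)^2" by (simp add: power2_eq_square algebra_simps)
  show "1/(z - (p + c))^2 - 1/(p + c)^2 = 1/((z - c) - p)^2 - 1/((- c) - p)^2" by (simp only: e1 e2)
qed

lemma piece_summable: "(\<lambda>w. 1/(z-w)^2 - 1/w^2) summable_on piece k"
proof -
  have "((\<lambda>w. 1/(z-w)^2 - 1/w^2) \<circ> (\<lambda>p. p + of_nat k * \<alpha>)) summable_on Lat"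
    unfolding o_def piece_fun by (rule T_summable)
  then show ?thesis unfolding piece_def by (subst summable_on_reindex) (auto simp: inj_on_def)
qed

lemma piece_infsum: "(\<Sum>\<^sub>\<infinity>w\<in>piece k. 1/(z-w)^2 - 1/w^2) = wp Lat (z - of_nat k * \<alpha>) - wp Lat (- (of_nat k * \<alpha>))"
proof -
  have "(\<Sum>\<^sub>\<infinity>w\<in>piece k. 1/(z-w)^2 - 1/w^2) = (\<Sum>\<^sub>\<infinity>p\<in>Lat. 1/((z - of_nat k * \<alpha>) - p)^2 - 1/((- (of_nat k * \<alpha>)) - p)^2)"
    unfolding piece_def by (subst infsum_reindex) (auto simp: inj_on_def o_def piece_fun)
  also have "\<dots> = (\<Sum>\<^sub>\<infinity>p\<in>Lat. (1/((z - of_nat k * \<alpha>) - p)^2 - 1/p^2) - (1/((- (of_nat k * \<alpha>)) - p)^2 - 1/p^2))"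
    by simp
  also have "\<dots> = wp Lat (z - of_nat k * \<alpha>) - wp Lat (- (of_nat k * \<alpha>))"
    by (subst infsum_diff'[OF wpT_summable wpT_summable]) (simp add: wp_all)
  finally show ?thesis .
qed

lemma W_decomp: "wp LA z = (\<Sum>k<N. wp Lat (z - of_nat k * \<alpha>) - wp Lat (- (of_nat k * \<alpha>)))"
proof -
  define T where "T = (\<lambda>w. 1/(z-w)^2 - 1/w^2)"
  have sLA: "T summable_on LA" unfolding LA_union T_def
  proof (rule summable_on_finite_union_disjoint)
    show "\<And>a. a \<in> {..<N} \<Longrightarrow> (\<lambda>w. 1 / (z - w)\<^sup>2 - 1 / w\<^sup>2) summable_on piece a" by (rule piece_summable)
    show "\<And>a a'. a \<in> {..<N} \<Longrightarrow> a' \<in> {..<N} \<Longrightarrow> a \<noteq> a' \<Longrightarrow> piece a \<inter> piece a' = {}"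
      by (rule piece_disj) auto
  qed simp
  have z0: "0 \<in> LA" unfolding lattice_alpha_def by (auto intro!: exI[of _ 0])
  have s0: "T summable_on (LA - {0})" using sLA by (rule summable_on_subset) auto
  have "wp LA z = T 0 + infsum T (LA - {0})" by (simp add: wp_def T_def)
  also have "\<dots> = infsum T (insert 0 (LA - {0}))" by (rule infsum_insert[OF s0, symmetric]) auto
  also have "insert 0 (LA - {0}) = LA" using z0 by auto
  also have "infsum T LA = (\<Sum>k<N. infsum T (piece k))" unfolding LA_union
  proof (rule sum_infsum[symmetric])
    show "\<And>a. a \<in> {..<N} \<Longrightarrow> T summable_on piece a" unfolding T_def by (rule piece_summable)
    show "\<And>a a'. a \<in> {..<N} \<Longrightarrow> a' \<in> {..<N} \<Longrightarrow> a \<noteq> a' \<Longrightarrow> piece a \<inter> piece a' = {}"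
      by (rule piece_disj) auto
  qed simp
  finally show ?thesis by (simp add: T_def piece_infsum)
qed

definition Sf :: "complex \<Rightarrow> complex" where "Sf z = (\<Sum>k<N. wp Lat (z - of_nat k * \<alpha>))"

lemma Sf_holo: "Sf holomorphic_on - Bs"
proof -
  have "(\<lambda>z. wp Lat (z - of_nat k * \<alpha>)) holomorphic_on - Bs" for k
  proof -
    have "(wp Lat \<circ> (\<lambda>z. z - of_nat k * \<alpha>)) holomorphic_on - Bs"
      by (rule holomorphic_on_compose_gen[OF _ wp_holo]) (use notBs_shift_lat in \<open>auto intro!: holomorphic_intros\<close>)
    then show ?thesis by (simp add: o_def)
  qed
  then show ?thesis unfolding Sf_def[abs_def] by (intro holomorphic_intros)
qed

lemma Sf_per: "z \<notin> Bs \<Longrightarrow> p \<in> Lat \<Longrightarrow> Sf (z + p) = Sf z"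
proof -
  assume z: "z \<notin> Bs" and p: "p \<in> Lat"
  have "wp Lat (z + p - of_nat k * \<alpha>) = wp Lat (z - of_nat k * \<alpha>)" for k
    using wp_periodic[OF p notBs_shift_lat[OF z, of k]] by (simp add: algebra_simps)
  then show ?thesis by (simp add: Sf_def)
qed

lemma Sf_alpha: "z \<notin> Bs \<Longrightarrow> Sf (z - \<alpha>) = Sf z"
proof -
  assume z: "z \<notin> Bs"
  define \<phi> where "\<phi> = (\<lambda>k. wp Lat (z - of_nat k * \<alpha>))"
  have "\<phi> N = \<phi> 0"
    using wp_periodic[OF Nalpha notBs_shift_lat[OF z, of N]] by (simp add: \<phi>_def)
  then have "(\<Sum>k<N. \<phi> (Suc k)) = (\<Sum>k<N. \<phi> k)" by (rule sum_shift_periodic)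
  then show ?thesis by (simp add: \<phi>_def Sf_def algebra_simps)
qed

lemma Sf_ordle: "ordle Sf 0 2 1"
proof -
  define R where "R = (\<lambda>z. \<Sum>k\<in>{1..<N}. wp Lat (z - of_nat k * \<alpha>))"
  have SR: "Sf z = wp Lat z + R z" for z
  proof -
    have "{..<N} = insert 0 {1..<N}" using Npos by auto
    then show ?thesis by (simp add: Sf_def R_def)
  qed
  have "isCont R 0"
  proof -
    have "isCont (\<lambda>z. wp Lat (z - of_nat k * \<alpha>)) 0" if k: "k \<in> {1..<N}" for k
    proof -
      have nl: "0 - of_nat k * \<alpha> \<notin> Lat" using small_alpha[of k] k by auto
      have cw: "isCont (wp Lat) (0 - of_nat k * \<alpha>)"
        using wp_holo open_nlat nl by (meson ComplI continuous_on_eq_continuous_at holomorphic_on_imp_continuous_on)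
      have "isCont (\<lambda>z. z - of_nat k * \<alpha>) 0" by simp
      from continuous_at_compose[OF this] cw have "isCont (wp Lat \<circ> (\<lambda>z. z - of_nat k * \<alpha>)) 0" by simp
      then show ?thesis by (simp add: o_def)
    qed
    then show ?thesis unfolding R_def by (intro isCont_sum) auto
  qed
  then have "(R \<longlongrightarrow> R 0) (at 0)" by (simp add: isCont_def)
  then have "((\<lambda>z. z^2 * wp Lat z + z^2 * R z) \<longlongrightarrow> 1 + 0^2 * R 0) (at 0)"
    by (intro tendsto_intros wp_lim0)
  then show ?thesis by (simp add: ordle_def SR algebra_simps)
qed

definition Hf :: "int \<Rightarrow> complex \<Rightarrow> complex" where "Hf j z = Pf (- j) z * Pf j z"

lemma Hf_alpha: "z \<notin> Bs \<Longrightarrow> Hf j (z - \<alpha>) = Hf j z"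
proof -
  assume z: "z \<notin> Bs"
  have "Hf j z = (om powi (- (- j)) * om powi (- j)) * Hf j (z - \<alpha>)"
    using Pf_alpha[OF z, of j] Pf_alpha[OF z, of "-j"] by (simp add: Hf_def mult_ac)
  also have "om powi (- (- j)) * om powi (- j) = 1" by (simp add: om_add[symmetric])
  finally show ?thesis by simp
qed

theorem part2:
  assumes j: "\<not> int N dvd j"
  shows "eq_on_sets (punctured \<tau> \<alpha> N) (gen_alg {wp LA}) (gen_alg {\<lambda>z. P \<tau> \<alpha> N (- j) z * P \<tau> \<alpha> N j z})"
proof -
  define c where "c = cj (- j) * cj j"
  have c0: "c \<noteq> 0" using cj_nz[OF j] by (simp add: c_def cj_neg)
  define E where "E = (\<lambda>z. Hf j z - c * Sf z)"
  have hE: "E holomorphic_on - Bs"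
    unfolding E_def Hf_def[abs_def] by (intro holomorphic_intros Pf_holo Sf_holo)
  have perE: "\<And>z p. z \<notin> Bs \<Longrightarrow> p \<in> Lat \<Longrightarrow> E (z + p) = E z"
    by (simp add: E_def Hf_def Pf_per Sf_per)
  have alE: "\<forall>\<^sub>F x in at q. E (x + \<alpha>) = E x" for q
    using good_ev[OF Bs_good, of q]
  proof eventually_elim
    case (elim x)
    have "x + \<alpha> \<notin> Bs" using elim Bs_shift_alpha[of "x + \<alpha>" 1] by simp
    then show ?case using Hf_alpha[of "x + \<alpha>" j] Sf_alpha[of "x + \<alpha>"] by (simp add: E_def)
  qed
  have pm0: "pm 0 = 0" by (simp add: pm_def)
  have oH: "ordle (Hf j) 0 2 c"
  proof -
    have "ordle (Hf j) 0 (1 + 1) (cj (- j) * cj j)"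
      unfolding Hf_def using ordle_mult[OF Pf_ordle[of 0 "-j"] Pf_ordle[of 0 j]] Npos by (simp add: pm0)
    then show ?thesis by (simp add: c_def numeral_2_eq_2)
  qed
  have oE2: "ordle E 0 (Suc 1) 0"
    using ordle_diff[OF oH ordle_cmult[OF Sf_ordle, of c]] by (simp add: E_def numeral_2_eq_2)
  obtain r where r: "r > 0" "E holomorphic_on ball 0 r - {0}" using Bs_holo_ball[OF hE] by blast
  obtain c1 where oE1: "ordle E 0 1 c1" using ordle_remove[OF r oE2] by blast
  have oEm: "ordle E (pm m) n c'" if "ordle E 0 n c'" for m n c'
  proof (induction m)
    case 0 then show ?case using that by (simp add: pm0)
  next
    case (Suc m)
    have "ordle E (pm m + \<alpha>) n c'" by (rule ordle_shift_ev[OF alE Suc.IH])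
    then show ?case by (simp add: pm_def algebra_simps)
  qed
  have "(\<Sum>m<N. c1) = 0"
  proof (rule RS_N[OF hE perE])
    fix m assume "m < N"
    show "((\<lambda>z. (z - pm m) * E z) \<longlongrightarrow> c1) (at (pm m))" using oEm[OF oE1, of m] unfolding ordle_def by simp
  qed
  then have "c1 = 0" using Npos by simp
  then obtain c2 where oE0: "ordle E 0 0 c2" using ordle_remove[OF r, of 0] oE1 by auto
  have "\<exists>e. \<forall>z. z \<notin> Bs \<longrightarrow> E z = e"
  proof (rule per_const[OF Bs_good hE perE])
    fix b assume b: "b \<in> Bs"
    obtain m where m: "m < N" "b - pm m \<in> Lat" using b by (auto simp: Bs_def pm_def)
    have "ordle E (pm m + (b - pm m)) 0 c2" by (rule ordle_shift[OF perE m(2) oEm[OF oE0]])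
    then show "\<exists>c. (E \<longlongrightarrow> c) (at b)" by (auto simp: ordle_def)
  qed
  then obtain e where e: "\<And>z. z \<notin> Bs \<Longrightarrow> E z = e" by blast
  define K where "K = (\<Sum>k<N. wp Lat (- (of_nat k * \<alpha>)))"
  have W: "wp LA z = Sf z - K" for z by (simp add: W_decomp Sf_def K_def sum_subtractf)
  have H: "P \<tau> \<alpha> N (- j) z * P \<tau> \<alpha> N j z = c * Sf z + e" if z: "z \<notin> Bs" for z
    using e[OF z] P_eq[OF z] by (simp add: E_def Hf_def algebra_simps)
  have U: "z \<in> punctured \<tau> \<alpha> N \<longleftrightarrow> z \<notin> Bs" for z by (simp add: Bs_punct)
  show ?thesis unfolding eq_on_sets_def
  proof (intro conjI)
    have "\<forall>f\<in>gen_alg {wp LA}. \<exists>f'\<in>gen_alg {\<lambda>z. P \<tau> \<alpha> N (- j) z * P \<tau> \<alpha> N j z}. \<forall>z\<in>punctured \<tau> \<alpha> N. f z = f' z"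
    proof
      fix f assume "f \<in> gen_alg {wp LA}"
      then show "\<exists>f'\<in>gen_alg {\<lambda>z. P \<tau> \<alpha> N (- j) z * P \<tau> \<alpha> N j z}. \<forall>z\<in>punctured \<tau> \<alpha> N. f z = f' z"
      proof (rule alg_transfer[where a = "1 / c" and b = "- e / c - K"])
        fix z assume "z \<in> punctured \<tau> \<alpha> N"
        then have z: "z \<notin> Bs" using U by simp
        show "wp LA z = 1 / c * (P \<tau> \<alpha> N (- j) z * P \<tau> \<alpha> N j z) + (- e / c - K)"
          unfolding W H[OF z] using c0 by (simp add: field_simps)
      qed
    qed
    then show "\<forall>f\<in>gen_alg {wp LA}. \<exists>g\<in>gen_alg {\<lambda>z. P \<tau> \<alpha> N (- j) z * P \<tau> \<alpha> N j z}. \<forall>z\<in>punctured \<tau> \<alpha> N. f z = g z" .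
    have "\<forall>g\<in>gen_alg {\<lambda>z. P \<tau> \<alpha> N (- j) z * P \<tau> \<alpha> N j z}. \<exists>f'\<in>gen_alg {wp LA}. \<forall>z\<in>punctured \<tau> \<alpha> N. g z = f' z"
    proof
      fix g assume "g \<in> gen_alg {\<lambda>z. P \<tau> \<alpha> N (- j) z * P \<tau> \<alpha> N j z}"
      then show "\<exists>f'\<in>gen_alg {wp LA}. \<forall>z\<in>punctured \<tau> \<alpha> N. g z = f' z"
      proof (rule alg_transfer[where a = c and b = "c * K + e"])
        fix z assume "z \<in> punctured \<tau> \<alpha> N"
        then have z: "z \<notin> Bs" using U by simp
        show "P \<tau> \<alpha> N (- j) z * P \<tau> \<alpha> N j z = c * wp LA z + (c * K + e)"
          unfolding W H[OF z] by (simp add: algebra_simps)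
      qed
    qed
    then show "\<forall>g\<in>gen_alg {\<lambda>z. P \<tau> \<alpha> N (- j) z * P \<tau> \<alpha> N j z}. \<exists>f\<in>gen_alg {wp LA}. \<forall>z\<in>punctured \<tau> \<alpha> N. f z = g z"
      by metis
  qed
qed

end

theorem proposition5p6:
  fixes \<tau> \<alpha> :: complex and N :: nat
  assumes "Im \<tau> > 0" and "N \<ge> 3" and "exact_order \<tau> \<alpha> N"
  shows "eq_on_sets (punctured \<tau> \<alpha> N) (O_T \<tau> \<alpha> N)
           (gen_alg {P \<tau> \<alpha> N j | j. 1 \<le> j \<and> j \<le> int N - 1})
       \<and> (\<forall>j::int. \<not> (int N dvd j) \<longrightarrow>
           eq_on_sets (punctured \<tau> \<alpha> N) (gen_alg {wp (lattice_alpha \<tau> \<alpha>)})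
             (gen_alg {\<lambda>z. P \<tau> \<alpha> N (- j) z * P \<tau> \<alpha> N j z}))"
proof -
  interpret ellN \<tau> \<alpha> N
    by unfold_locales (use assms in auto)
  show ?thesis using part1 part2 by blast
qed

end
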